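(* Let $R$ be a commutative ring and let $U$ be an Abelian monoid object in the category of (cocommutative, counital) coalgebras over $R$, with addition map $\sigma\colon U\otimes_R U\to U$. Suppose that $U$ admits a good filtration $\{F_sU\}$ such that the zero (unit) of the monoid is the good basepoint associated to this filtration and $\sigma(F_sU\otimes F_tU)\subseteq F_{s+t}U$ for all $s,t\ge0$. Then $U$ is an Abelian group object in the category of coalgebras over $R$.
   Context: In the category of coalgebras over $R$, the product of $U$ and $V$ is $U\otimes_RV$ (with the evident coalgebra structure) and the terminal object is $R$. A good filtration of a coalgebra $U$ (counit $\epsilon$, coproduct $\psi$) is a sequence of submodules $F_sU$, $s\ge0$, such that: (a) $\epsilon\colon F_0U\to R$ is an isomorphism; (b) for $s>0$, $F_sU/F_{s-1}U$ is a finitely generated free $R$-module; (c) $\bigcup_sF_sU=U$; (d) $\psi(F_sU)\subseteq\sum_{s=t+u}F_tU\otimes F_uU$. The associated good basepoint is the coalgebra map $\eta\colon R\xrightarrow{\epsilon^{-1}}F_0U\hookrightarrow U$. *)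

theory Defs
  imports "HOL-Algebra.Module"
begin

definition ring_as_module :: "'r ring \<Rightarrow> ('r, 'r) module" where
  "ring_as_module R = \<lparr>carrier = carrier R, mult = mult R, one = one R,
      zero = zero R, add = add R, smult = mult R\<rparr>"

definition linear_map :: "'r ring \<Rightarrow> ('r, 'm) module \<Rightarrow> ('r, 'n) module \<Rightarrow> ('m \<Rightarrow> 'n) \<Rightarrow> bool" where
  "linear_map R M N f \<longleftrightarrow> f \<in> carrier M \<rightarrow> carrier N \<and>
     (\<forall>x\<in>carrier M. \<forall>y\<in>carrier M. f (x \<oplus>\<^bsub>M\<^esub> y) = f x \<oplus>\<^bsub>N\<^esub> f y) \<and>
     (\<forall>a\<in>carrier R. \<forall>x\<in>carrier M. f (a \<odot>\<^bsub>M\<^esub> x) = a \<odot>\<^bsub>N\<^esub> f x)"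

definition rep :: "'a set \<Rightarrow> 'a" where
  "rep A = (SOME x. x \<in> A)"

definition mcoset :: "('r, 'm) module \<Rightarrow> 'm set \<Rightarrow> 'm \<Rightarrow> 'm set" where
  "mcoset M B x = {x \<oplus>\<^bsub>M\<^esub> b | b. b \<in> B}"

definition quot_mod :: "'r ring \<Rightarrow> ('r, 'm) module \<Rightarrow> 'm set \<Rightarrow> 'm set \<Rightarrow> ('r, 'm set) module" where
  "quot_mod R M A B = \<lparr>carrier = mcoset M B ` A, mult = (\<lambda>_ _. undefined), one = undefined,
      zero = B,
      add = (\<lambda>X Y. mcoset M B (rep X \<oplus>\<^bsub>M\<^esub> rep Y)),
      smult = (\<lambda>a X. mcoset M B (a \<odot>\<^bsub>M\<^esub> rep X))\<rparr>"

definition lincomb :: "('r, 'm) module \<Rightarrow> 'r list \<Rightarrow> 'm list \<Rightarrow> 'm" where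
  "lincomb N cs bs = finsum N (\<lambda>i. cs ! i \<odot>\<^bsub>N\<^esub> bs ! i) {..<length bs}"

definition fg_free :: "'r ring \<Rightarrow> ('r, 'm) module \<Rightarrow> bool" where
  "fg_free R N \<longleftrightarrow> (\<exists>bs. set bs \<subseteq> carrier N \<and>
     (\<forall>x\<in>carrier N. \<exists>cs. length cs = length bs \<and> set cs \<subseteq> carrier R \<and> x = lincomb N cs bs) \<and>
     (\<forall>cs. length cs = length bs \<and> set cs \<subseteq> carrier R \<and> lincomb N cs bs = \<zero>\<^bsub>N\<^esub>
            \<longrightarrow> set cs \<subseteq> {\<zero>\<^bsub>R\<^esub>}))"

text \<open>Free module on M \<times> N: finitely supported coefficient functions.\<close>
definition fsupp :: "'r ring \<Rightarrow> ('p \<Rightarrow> 'r) \<Rightarrow> 'p set" where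
  "fsupp R f = {p. f p \<noteq> \<zero>\<^bsub>R\<^esub>}"

definition free_sums :: "'r ring \<Rightarrow> ('r, 'm) module \<Rightarrow> ('r, 'n) module \<Rightarrow> ('m \<times> 'n \<Rightarrow> 'r) set" where
  "free_sums R M N = {f. finite (fsupp R f) \<and> (\<forall>p. f p \<in> carrier R) \<and>
                         fsupp R f \<subseteq> carrier M \<times> carrier N}"

definition fs_delta :: "'r ring \<Rightarrow> 'm \<Rightarrow> 'n \<Rightarrow> ('m \<times> 'n \<Rightarrow> 'r)" where
  "fs_delta R m n = (\<lambda>p. if p = (m, n) then \<one>\<^bsub>R\<^esub> else \<zero>\<^bsub>R\<^esub>)"

inductive_set tensor_rel :: "'r ring \<Rightarrow> ('r, 'm) module \<Rightarrow> ('r, 'n) module \<Rightarrow> ('m \<times> 'n \<Rightarrow> 'r) set"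
  for R M N where
  rel_zero: "(\<lambda>p. \<zero>\<^bsub>R\<^esub>) \<in> tensor_rel R M N"
| rel_add: "f \<in> tensor_rel R M N \<Longrightarrow> g \<in> tensor_rel R M N \<Longrightarrow>
     (\<lambda>p. f p \<oplus>\<^bsub>R\<^esub> g p) \<in> tensor_rel R M N"
| rel_smult: "a \<in> carrier R \<Longrightarrow> f \<in> tensor_rel R M N \<Longrightarrow>
     (\<lambda>p. a \<otimes>\<^bsub>R\<^esub> f p) \<in> tensor_rel R M N"
| rel_add_l: "m \<in> carrier M \<Longrightarrow> m' \<in> carrier M \<Longrightarrow> n \<in> carrier N \<Longrightarrow>
     (\<lambda>p. fs_delta R (m \<oplus>\<^bsub>M\<^esub> m') n p \<ominus>\<^bsub>R\<^esub> fs_delta R m n p \<ominus>\<^bsub>R\<^esub> fs_delta R m' n p)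
       \<in> tensor_rel R M N"
| rel_add_r: "m \<in> carrier M \<Longrightarrow> n \<in> carrier N \<Longrightarrow> n' \<in> carrier N \<Longrightarrow>
     (\<lambda>p. fs_delta R m (n \<oplus>\<^bsub>N\<^esub> n') p \<ominus>\<^bsub>R\<^esub> fs_delta R m n p \<ominus>\<^bsub>R\<^esub> fs_delta R m n' p)
       \<in> tensor_rel R M N"
| rel_smult_l: "a \<in> carrier R \<Longrightarrow> m \<in> carrier M \<Longrightarrow> n \<in> carrier N \<Longrightarrow>
     (\<lambda>p. fs_delta R (a \<odot>\<^bsub>M\<^esub> m) n p \<ominus>\<^bsub>R\<^esub> a \<otimes>\<^bsub>R\<^esub> fs_delta R m n p) \<in> tensor_rel R M N"
| rel_smult_r: "a \<in> carrier R \<Longrightarrow> m \<in> carrier M \<Longrightarrow> n \<in> carrier N \<Longrightarrow>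
     (\<lambda>p. fs_delta R m (a \<odot>\<^bsub>N\<^esub> n) p \<ominus>\<^bsub>R\<^esub> a \<otimes>\<^bsub>R\<^esub> fs_delta R m n p) \<in> tensor_rel R M N"

definition tensor_class :: "'r ring \<Rightarrow> ('r, 'm) module \<Rightarrow> ('r, 'n) module \<Rightarrow>
    ('m \<times> 'n \<Rightarrow> 'r) \<Rightarrow> ('m \<times> 'n \<Rightarrow> 'r) set" where
  "tensor_class R M N f = {g \<in> free_sums R M N. (\<lambda>p. g p \<ominus>\<^bsub>R\<^esub> f p) \<in> tensor_rel R M N}"

text \<open>The tensor product module M \<otimes>_R N (free module modulo bilinearity relations).\<close>
definition tensor :: "'r ring \<Rightarrow> ('r, 'm) module \<Rightarrow> ('r, 'n) module \<Rightarrow> ('r, ('m \<times> 'n \<Rightarrow> 'r) set) module" where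
  "tensor R M N = \<lparr>carrier = tensor_class R M N ` free_sums R M N,
      mult = (\<lambda>_ _. undefined), one = undefined,
      zero = tensor_class R M N (\<lambda>p. \<zero>\<^bsub>R\<^esub>),
      add = (\<lambda>A B. tensor_class R M N (\<lambda>p. rep A p \<oplus>\<^bsub>R\<^esub> rep B p)),
      smult = (\<lambda>a A. tensor_class R M N (\<lambda>p. a \<otimes>\<^bsub>R\<^esub> rep A p))\<rparr>"

definition tens :: "'r ring \<Rightarrow> ('r, 'm) module \<Rightarrow> ('r, 'n) module \<Rightarrow> 'm \<Rightarrow> 'n \<Rightarrow> ('m \<times> 'n \<Rightarrow> 'r) set" where
  "tens R M N m n = tensor_class R M N (fs_delta R m n)"

text \<open>The linear map M \<otimes> N \<rightarrow> P induced by a bilinear map \<phi> : M \<times> N \<rightarrow> P.\<close>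
definition tlift :: "'r ring \<Rightarrow> ('r, 'm) module \<Rightarrow> ('r, 'n) module \<Rightarrow> ('r, 'p) module \<Rightarrow>
    ('m \<times> 'n \<Rightarrow> 'p) \<Rightarrow> ('m \<times> 'n \<Rightarrow> 'r) set \<Rightarrow> 'p" where
  "tlift R M N P \<phi> A = finsum P (\<lambda>q. rep A q \<odot>\<^bsub>P\<^esub> \<phi> q) (fsupp R (rep A))"

definition tmap :: "'r ring \<Rightarrow> ('r, 'm) module \<Rightarrow> ('r, 'n) module \<Rightarrow> ('r, 'm2) module \<Rightarrow> ('r, 'n2) module \<Rightarrow>
    ('m \<Rightarrow> 'm2) \<Rightarrow> ('n \<Rightarrow> 'n2) \<Rightarrow> ('m \<times> 'n \<Rightarrow> 'r) set \<Rightarrow> ('m2 \<times> 'n2 \<Rightarrow> 'r) set" where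
  "tmap R M N M' N' f g = tlift R M N (tensor R M' N') (\<lambda>(m, n). tens R M' N' (f m) (g n))"

definition tassoc :: "'r ring \<Rightarrow> ('r, 'a) module \<Rightarrow> ('r, 'b) module \<Rightarrow> ('r, 'c) module \<Rightarrow>
    ((('a \<times> 'b \<Rightarrow> 'r) set) \<times> 'c \<Rightarrow> 'r) set \<Rightarrow> ('a \<times> (('b \<times> 'c \<Rightarrow> 'r) set) \<Rightarrow> 'r) set" where
  "tassoc R A B C = tlift R (tensor R A B) C (tensor R A (tensor R B C))
     (\<lambda>(X, c). tlift R A B (tensor R A (tensor R B C))
        (\<lambda>(a, b). tens R A (tensor R B C) a (tens R B C b c)) X)"

definition tswap :: "'r ring \<Rightarrow> ('r, 'a) module \<Rightarrow> ('r, 'b) module \<Rightarrow>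
    ('a \<times> 'b \<Rightarrow> 'r) set \<Rightarrow> ('b \<times> 'a \<Rightarrow> 'r) set" where
  "tswap R A B = tlift R A B (tensor R B A) (\<lambda>(a, b). tens R B A b a)"

definition coalgebra :: "'r ring \<Rightarrow> ('r, 'c) module \<Rightarrow> ('c \<Rightarrow> 'r) \<Rightarrow> ('c \<Rightarrow> ('c \<times> 'c \<Rightarrow> 'r) set) \<Rightarrow> bool" where
  "coalgebra R C eps psi \<longleftrightarrow> module R C \<and>
     linear_map R C (ring_as_module R) eps \<and>
     linear_map R C (tensor R C C) psi \<and>
     (\<forall>c\<in>carrier C. tlift R C C C (\<lambda>(a, b). eps a \<odot>\<^bsub>C\<^esub> b) (psi c) = c) \<and>
     (\<forall>c\<in>carrier C. tlift R C C C (\<lambda>(a, b). eps b \<odot>\<^bsub>C\<^esub> a) (psi c) = c) \<and>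
     (\<forall>c\<in>carrier C. tassoc R C C C (tmap R C C (tensor R C C) C psi (\<lambda>x. x) (psi c))
                     = tmap R C C C (tensor R C C) (\<lambda>x. x) psi (psi c)) \<and>
     (\<forall>c\<in>carrier C. tswap R C C (psi c) = psi c)"

text \<open>Coalgebra structure on R (terminal object).\<close>
definition ring_coprod :: "'r ring \<Rightarrow> 'r \<Rightarrow> ('r \<times> 'r \<Rightarrow> 'r) set" where
  "ring_coprod R r = r \<odot>\<^bsub>tensor R (ring_as_module R) (ring_as_module R)\<^esub>
      tens R (ring_as_module R) (ring_as_module R) \<one>\<^bsub>R\<^esub> \<one>\<^bsub>R\<^esub>"

text \<open>The evident coalgebra structure on U \<otimes> V (the categorical product).\<close>
definition tensor_counit :: "'r ring \<Rightarrow> ('r, 'u) module \<Rightarrow> ('r, 'v) module \<Rightarrow>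
    ('u \<Rightarrow> 'r) \<Rightarrow> ('v \<Rightarrow> 'r) \<Rightarrow> ('u \<times> 'v \<Rightarrow> 'r) set \<Rightarrow> 'r" where
  "tensor_counit R U V eU eV = tlift R U V (ring_as_module R) (\<lambda>(u, v). eU u \<otimes>\<^bsub>R\<^esub> eV v)"

definition tmiddle :: "'r ring \<Rightarrow> ('r, 'u) module \<Rightarrow> ('r, 'v) module \<Rightarrow>
    ((('u \<times> 'u \<Rightarrow> 'r) set) \<times> (('v \<times> 'v \<Rightarrow> 'r) set) \<Rightarrow> 'r) set \<Rightarrow>
    ((('u \<times> 'v \<Rightarrow> 'r) set) \<times> (('u \<times> 'v \<Rightarrow> 'r) set) \<Rightarrow> 'r) set" where
  "tmiddle R U V =
     (let T = tensor R (tensor R U V) (tensor R U V) in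
      tlift R (tensor R U U) (tensor R V V) T
        (\<lambda>(X, Y). tlift R U U T (\<lambda>(a, a'). tlift R V V T
            (\<lambda>(b, b'). tens R (tensor R U V) (tensor R U V) (tens R U V a b) (tens R U V a' b')) Y) X))"

definition tensor_coprod :: "'r ring \<Rightarrow> ('r, 'u) module \<Rightarrow> ('r, 'v) module \<Rightarrow>
    ('u \<Rightarrow> ('u \<times> 'u \<Rightarrow> 'r) set) \<Rightarrow> ('v \<Rightarrow> ('v \<times> 'v \<Rightarrow> 'r) set) \<Rightarrow>
    ('u \<times> 'v \<Rightarrow> 'r) set \<Rightarrow> ((('u \<times> 'v \<Rightarrow> 'r) set) \<times> (('u \<times> 'v \<Rightarrow> 'r) set) \<Rightarrow> 'r) set" where
  "tensor_coprod R U V pU pV x =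
     tmiddle R U V (tmap R U V (tensor R U U) (tensor R V V) pU pV x)"

definition coalg_map :: "'r ring \<Rightarrow> ('r, 'c) module \<Rightarrow> ('c \<Rightarrow> 'r) \<Rightarrow> ('c \<Rightarrow> ('c \<times> 'c \<Rightarrow> 'r) set) \<Rightarrow>
    ('r, 'd) module \<Rightarrow> ('d \<Rightarrow> 'r) \<Rightarrow> ('d \<Rightarrow> ('d \<times> 'd \<Rightarrow> 'r) set) \<Rightarrow> ('c \<Rightarrow> 'd) \<Rightarrow> bool" where
  "coalg_map R C eC pC D eD pD f \<longleftrightarrow> linear_map R C D f \<and>
     (\<forall>c\<in>carrier C. eD (f c) = eC c) \<and>
     (\<forall>c\<in>carrier C. pD (f c) = tmap R C C D D f f (pC c))"

text \<open>Abelian monoid object (U, \<sigma>, \<eta>) in coalgebras; product is \<otimes>, terminal object is R.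
  The axioms are stated on elementary tensors, which generate.\<close>
definition coalg_ab_monoid :: "'r ring \<Rightarrow> ('r, 'u) module \<Rightarrow> ('u \<Rightarrow> 'r) \<Rightarrow> ('u \<Rightarrow> ('u \<times> 'u \<Rightarrow> 'r) set) \<Rightarrow>
    (('u \<times> 'u \<Rightarrow> 'r) set \<Rightarrow> 'u) \<Rightarrow> ('r \<Rightarrow> 'u) \<Rightarrow> bool" where
  "coalg_ab_monoid R U eps psi sigma eta \<longleftrightarrow>
     coalgebra R U eps psi \<and>
     coalg_map R (tensor R U U) (tensor_counit R U U eps eps) (tensor_coprod R U U psi psi)
               U eps psi sigma \<and>
     coalg_map R (ring_as_module R) (\<lambda>r. r) (ring_coprod R) U eps psi eta \<and>
     (\<forall>a\<in>carrier U. \<forall>b\<in>carrier U. \<forall>c\<in>carrier U.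
        sigma (tens R U U (sigma (tens R U U a b)) c) = sigma (tens R U U a (sigma (tens R U U b c)))) \<and>
     (\<forall>r\<in>carrier R. \<forall>u\<in>carrier U. sigma (tens R U U (eta r) u) = r \<odot>\<^bsub>U\<^esub> u) \<and>
     (\<forall>r\<in>carrier R. \<forall>u\<in>carrier U. sigma (tens R U U u (eta r)) = r \<odot>\<^bsub>U\<^esub> u) \<and>
     (\<forall>a\<in>carrier U. \<forall>b\<in>carrier U. sigma (tens R U U a b) = sigma (tens R U U b a))"

text \<open>An Abelian monoid object is an Abelian group object if it has an inverse morphism \<chi>
  with \<sigma> \<circ> (1 \<times> \<chi>) \<circ> \<Delta> = \<eta> \<circ> ! and \<sigma> \<circ> (\<chi> \<times> 1) \<circ> \<Delta> = \<eta> \<circ> ! (here \<Delta> = \<psi>, ! = \<epsilon>).\<close>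
definition coalg_ab_group :: "'r ring \<Rightarrow> ('r, 'u) module \<Rightarrow> ('u \<Rightarrow> 'r) \<Rightarrow> ('u \<Rightarrow> ('u \<times> 'u \<Rightarrow> 'r) set) \<Rightarrow>
    (('u \<times> 'u \<Rightarrow> 'r) set \<Rightarrow> 'u) \<Rightarrow> ('r \<Rightarrow> 'u) \<Rightarrow> bool" where
  "coalg_ab_group R U eps psi sigma eta \<longleftrightarrow>
     coalg_ab_monoid R U eps psi sigma eta \<and>
     (\<exists>chi. coalg_map R U eps psi U eps psi chi \<and>
        (\<forall>u\<in>carrier U. sigma (tmap R U U U U (\<lambda>x. x) chi (psi u)) = eta (eps u)) \<and>
        (\<forall>u\<in>carrier U. sigma (tmap R U U U U chi (\<lambda>x. x) (psi u)) = eta (eps u)))"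

inductive_set tspan :: "'r ring \<Rightarrow> ('r, 'm) module \<Rightarrow> ('r, 'n) module \<Rightarrow> ('m \<times> 'n) set \<Rightarrow>
    ('m \<times> 'n \<Rightarrow> 'r) set set" for R M N S where
  tspan_zero: "\<zero>\<^bsub>tensor R M N\<^esub> \<in> tspan R M N S"
| tspan_gen: "(a, b) \<in> S \<Longrightarrow> tens R M N a b \<in> tspan R M N S"
| tspan_add: "x \<in> tspan R M N S \<Longrightarrow> y \<in> tspan R M N S \<Longrightarrow> x \<oplus>\<^bsub>tensor R M N\<^esub> y \<in> tspan R M N S"
| tspan_smult: "r \<in> carrier R \<Longrightarrow> x \<in> tspan R M N S \<Longrightarrow> r \<odot>\<^bsub>tensor R M N\<^esub> x \<in> tspan R M N S"

definition good_filtration :: "'r ring \<Rightarrow> ('r, 'u) module \<Rightarrow> ('u \<Rightarrow> 'r) \<Rightarrow> ('u \<Rightarrow> ('u \<times> 'u \<Rightarrow> 'r) set) \<Rightarrow>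
    (nat \<Rightarrow> 'u set) \<Rightarrow> bool" where
  "good_filtration R U eps psi F \<longleftrightarrow>
     (\<forall>s. submodule (F s) R U) \<and>
     (\<forall>s. F s \<subseteq> F (Suc s)) \<and>
     bij_betw eps (F 0) (carrier R) \<and>
     (\<forall>s>0. fg_free R (quot_mod R U (F s) (F (s - 1)))) \<and>
     (\<Union>s. F s) = carrier U \<and>
     (\<forall>s. psi ` F s \<subseteq> tspan R U U {(a, b) | a b t u. t + u = s \<and> a \<in> F t \<and> b \<in> F u})"

definition good_basepoint :: "'r ring \<Rightarrow> ('u \<Rightarrow> 'r) \<Rightarrow> (nat \<Rightarrow> 'u set) \<Rightarrow> ('r \<Rightarrow> 'u) \<Rightarrow> bool" where
  "good_basepoint R eps F eta \<longleftrightarrow> (\<forall>r\<in>carrier R. eta r \<in> F 0 \<and> eps (eta r) = r)"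

end

theory Submission
  imports Defs
begin

section \<open>Linear maps\<close>

lemma lin_closed: "linear_map R M N f \<Longrightarrow> x \<in> carrier M \<Longrightarrow> f x \<in> carrier N"
  unfolding linear_map_def by auto
lemma lin_add: "linear_map R M N f \<Longrightarrow> x \<in> carrier M \<Longrightarrow> y \<in> carrier M \<Longrightarrow>
   f (x \<oplus>\<^bsub>M\<^esub> y) = f x \<oplus>\<^bsub>N\<^esub> f y"
  unfolding linear_map_def by auto
lemma lin_smult: "linear_map R M N f \<Longrightarrow> a \<in> carrier R \<Longrightarrow> x \<in> carrier M \<Longrightarrow>
   f (a \<odot>\<^bsub>M\<^esub> x) = a \<odot>\<^bsub>N\<^esub> f x"
  unfolding linear_map_def by auto

lemma lin_zero: assumes "module R M" "module R N" "linear_map R M N f"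
  shows "f \<zero>\<^bsub>M\<^esub> = \<zero>\<^bsub>N\<^esub>"
proof -
  interpret M: module R M by fact
  interpret N: module R N by fact
  have "f \<zero>\<^bsub>M\<^esub> = f (\<zero>\<^bsub>M\<^esub> \<oplus>\<^bsub>M\<^esub> \<zero>\<^bsub>M\<^esub>)" by simp
  also have "\<dots> = f \<zero>\<^bsub>M\<^esub> \<oplus>\<^bsub>N\<^esub> f \<zero>\<^bsub>M\<^esub>" using lin_add[OF assms(3), of "\<zero>\<^bsub>M\<^esub>" "\<zero>\<^bsub>M\<^esub>"] by simp
  finally show ?thesis using lin_closed[OF assms(3)]
    by (metis M.zero_closed N.add.r_cancel_one')
qed

lemma lin_neg: assumes "module R M" "module R N" "linear_map R M N f" "x \<in> carrier M"
  shows "f (\<ominus>\<^bsub>M\<^esub> x) = \<ominus>\<^bsub>N\<^esub> f x"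
proof -
  interpret M: module R M by fact
  interpret N: module R N by fact
  have "f (\<ominus>\<^bsub>M\<^esub> x) = f ((\<ominus>\<^bsub>R\<^esub> \<one>\<^bsub>R\<^esub>) \<odot>\<^bsub>M\<^esub> x)"
    using assms(4) by (simp add: M.smult_l_minus)
  also have "\<dots> = (\<ominus>\<^bsub>R\<^esub> \<one>\<^bsub>R\<^esub>) \<odot>\<^bsub>N\<^esub> f x"
    using lin_smult[OF assms(3)] assms(4) by simp
  also have "\<dots> = \<ominus>\<^bsub>N\<^esub> f x" using lin_closed[OF assms(3) assms(4)]
    by (simp add: N.smult_l_minus)
  finally show ?thesis .
qed

lemma lin_minus: assumes "module R M" "module R N" "linear_map R M N f" "x \<in> carrier M" "y \<in> carrier M"
  shows "f (x \<ominus>\<^bsub>M\<^esub> y) = f x \<ominus>\<^bsub>N\<^esub> f y"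
proof -
  interpret M: module R M by fact
  interpret N: module R N by fact
  show ?thesis using assms lin_neg[OF assms(1-3)] lin_add[OF assms(3)]
    by (simp add: M.minus_eq N.minus_eq)
qed

lemma lin_comp: "linear_map R M N f \<Longrightarrow> linear_map R N P g \<Longrightarrow> linear_map R M P (\<lambda>x. g (f x))"
  unfolding linear_map_def by (auto simp: Pi_def)

lemma lin_id: "module R M \<Longrightarrow> linear_map R M M (\<lambda>x. x)"
  unfolding linear_map_def by auto

lemma lin_cong: "linear_map R M N f \<Longrightarrow> (\<And>x. x \<in> carrier M \<Longrightarrow> f x = g x) \<Longrightarrow> module R M \<Longrightarrow> linear_map R M N g"
  unfolding linear_map_def by (auto simp: Pi_def module.smult_closed abelian_monoid.a_closed abelian_group.axioms(1) module.axioms(2))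

lemma lin_cong2: assumes "\<And>x. x \<in> carrier M \<Longrightarrow> f x = g x" "module R M"
  shows "linear_map R M N f = linear_map R M N g"
  using lin_cong assms by metis

lemma lin_plus: assumes "module R M" "module R N" "linear_map R M N f" "linear_map R M N g"
  shows "linear_map R M N (\<lambda>x. f x \<oplus>\<^bsub>N\<^esub> g x)"
proof -
  interpret M: module R M by fact
  interpret N: module R N by fact
  show ?thesis using assms(3,4) unfolding linear_map_def
    by (auto simp: Pi_def N.smult_r_distr N.a_ac)
qed

lemma lin_sm: assumes "module R M" "module R N" "linear_map R M N f" "c \<in> carrier R"
  shows "linear_map R M N (\<lambda>x. c \<odot>\<^bsub>N\<^esub> f x)"
proof -
  interpret M: module R M by fact
  interpret N: module R N by fact
  show ?thesis using assms(3,4) unfolding linear_map_def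
    by (auto simp: Pi_def N.smult_r_distr N.smult_assoc1[symmetric] M.m_comm)
qed

lemma lin_minusf: assumes "module R M" "module R N" "linear_map R M N f" "linear_map R M N g"
  shows "linear_map R M N (\<lambda>x. f x \<ominus>\<^bsub>N\<^esub> g x)"
proof -
  interpret M: module R M by fact
  interpret N: module R N by fact
  have "linear_map R M N (\<lambda>x. f x \<oplus>\<^bsub>N\<^esub> ((\<ominus>\<^bsub>R\<^esub> \<one>\<^bsub>R\<^esub>) \<odot>\<^bsub>N\<^esub> g x))"
    by (rule lin_plus[OF assms(1,2,3)], rule lin_sm[OF assms(1,2,4)]) simp
  then show ?thesis
    by (rule lin_cong) (use lin_closed[OF assms(4)] assms(1) in \<open>simp_all add: N.smult_l_minus N.minus_eq\<close>)
qed

lemma lin_const0: assumes "module R M" "module R N"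
  shows "linear_map R M N (\<lambda>x. \<zero>\<^bsub>N\<^esub>)"
proof -
  interpret M: module R M by fact
  interpret N: module R N by fact
  show ?thesis unfolding linear_map_def by auto
qed

lemma lin_finsum: assumes "module R M" "module R N" "linear_map R M N h" "finite A"
   "g \<in> A \<rightarrow> carrier M"
  shows "h (finsum M g A) = finsum N (\<lambda>i. h (g i)) A"
  using assms(4,5)
proof (induction A rule: finite_induct)
  interpret M: module R M by fact
  interpret N: module R N by fact
  case empty
  then show ?case using lin_zero[OF assms(1-3)] by simp
next
  interpret M: module R M by fact
  interpret N: module R N by fact
  case (insert x A)
  from insert show ?case
    using lin_add[OF assms(3)] lin_closed[OF assms(3)]
    by (simp add: Pi_def M.finsum_insert N.finsum_insert)
qed

section \<open>Bilinear maps\<close>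

definition bil :: "'r ring \<Rightarrow> ('r,'m) module \<Rightarrow> ('r,'n) module \<Rightarrow> ('r,'p) module \<Rightarrow> ('m \<times> 'n \<Rightarrow> 'p) \<Rightarrow> bool" where
  "bil R M N P \<phi> \<longleftrightarrow> (\<forall>b\<in>carrier N. linear_map R M P (\<lambda>a. \<phi> (a, b))) \<and>
                        (\<forall>a\<in>carrier M. linear_map R N P (\<lambda>b. \<phi> (a, b)))"

lemma bilI: "(\<And>b. b\<in>carrier N \<Longrightarrow> linear_map R M P (\<lambda>a. \<phi> (a, b))) \<Longrightarrow>
   (\<And>a. a\<in>carrier M \<Longrightarrow> linear_map R N P (\<lambda>b. \<phi> (a, b))) \<Longrightarrow> bil R M N P \<phi>"
  unfolding bil_def by auto

lemma bil_l: "bil R M N P \<phi> \<Longrightarrow> b\<in>carrier N \<Longrightarrow> linear_map R M P (\<lambda>a. \<phi> (a, b))"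
  unfolding bil_def by auto
lemma bil_r: "bil R M N P \<phi> \<Longrightarrow> a\<in>carrier M \<Longrightarrow> linear_map R N P (\<lambda>b. \<phi> (a, b))"
  unfolding bil_def by auto
lemma bil_closed: "bil R M N P \<phi> \<Longrightarrow> a\<in>carrier M \<Longrightarrow> b\<in>carrier N \<Longrightarrow> \<phi> (a, b) \<in> carrier P"
  using bil_r lin_closed by metis


lemma fsupp_add: "fsupp R (\<lambda>p. f p \<oplus>\<^bsub>R\<^esub> g p) \<subseteq> fsupp R f \<union> fsupp R g" if "cring R"
proof -
  interpret cring R by fact
  show ?thesis unfolding fsupp_def by auto
qed

lemma fsupp_smult: "a \<in> carrier R \<Longrightarrow> fsupp R (\<lambda>p. a \<otimes>\<^bsub>R\<^esub> f p) \<subseteq> fsupp R f" if "cring R"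
proof -
  interpret cring R by fact
  show "a \<in> carrier R \<Longrightarrow> ?thesis" unfolding fsupp_def by auto
qed

lemma fsupp_minus: "fsupp R (\<lambda>p. f p \<ominus>\<^bsub>R\<^esub> g p) \<subseteq> fsupp R f \<union> fsupp R g" if "cring R"
proof -
  interpret cring R by fact
  show ?thesis unfolding fsupp_def by (auto simp: minus_eq)
qed

lemma fsupp_delta: "fsupp R (fs_delta R m n) \<subseteq> {(m, n)}"
  unfolding fsupp_def fs_delta_def by auto

locale t2 = R: cring R + M: module R M + N: module R N
  for R :: "'r ring" and M :: "('r, 'm) module" and N :: "('r, 'n) module"
begin

abbreviation "FS \<equiv> free_sums R M N"
abbreviation "REL \<equiv> tensor_rel R M N"
abbreviation "cls \<equiv> tensor_class R M N"
abbreviation "T \<equiv> tensor R M N"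

lemma FS_iff: "f \<in> FS \<longleftrightarrow> finite (fsupp R f) \<and> (\<forall>p. f p \<in> carrier R) \<and> fsupp R f \<subseteq> carrier M \<times> carrier N"
  unfolding free_sums_def by auto

lemma FS_D: assumes "f \<in> FS" shows "finite (fsupp R f)" "f p \<in> carrier R" "fsupp R f \<subseteq> carrier M \<times> carrier N"
  using assms unfolding free_sums_def by blast+

lemma delta_closed: "fs_delta R m n p \<in> carrier R"
  unfolding fs_delta_def by auto

lemma delta_FS: "m \<in> carrier M \<Longrightarrow> n \<in> carrier N \<Longrightarrow> fs_delta R m n \<in> FS"
  unfolding FS_iff using fsupp_delta[of R m n] delta_closed by (auto intro: finite_subset)

lemma FS_add: "f \<in> FS \<Longrightarrow> g \<in> FS \<Longrightarrow> (\<lambda>p. f p \<oplus>\<^bsub>R\<^esub> g p) \<in> FS"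
  unfolding FS_iff using fsupp_add[OF R.is_cring, of f g] by (auto intro: finite_subset)

lemma FS_smult: "a \<in> carrier R \<Longrightarrow> f \<in> FS \<Longrightarrow> (\<lambda>p. a \<otimes>\<^bsub>R\<^esub> f p) \<in> FS"
  unfolding FS_iff using fsupp_smult[OF R.is_cring, of a f] by (auto intro: finite_subset)

lemma FS_minus: "f \<in> FS \<Longrightarrow> g \<in> FS \<Longrightarrow> (\<lambda>p. f p \<ominus>\<^bsub>R\<^esub> g p) \<in> FS"
  unfolding FS_iff using fsupp_minus[OF R.is_cring, of f g] by (auto intro: finite_subset)

lemma FS_zero: "(\<lambda>p. \<zero>\<^bsub>R\<^esub>) \<in> FS"
  unfolding FS_iff fsupp_def by auto

lemma rel_FS: "f \<in> REL \<Longrightarrow> f \<in> FS"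
proof (induction rule: tensor_rel.induct)
  case rel_zero
  then show ?case by (rule FS_zero)
next
  case (rel_add f g)
  then show ?case by (blast intro: FS_add)
next
  case (rel_smult a f)
  then show ?case by (blast intro: FS_smult)
next
  case (rel_add_l m m' n)
  then show ?case by (intro FS_minus delta_FS) auto
next
  case (rel_add_r m n n')
  then show ?case by (intro FS_minus delta_FS) auto
next
  case (rel_smult_l a m n)
  then show ?case by (intro FS_minus FS_smult delta_FS) auto
next
  case (rel_smult_r a m n)
  then show ?case by (intro FS_minus FS_smult delta_FS) auto
qed

lemma rel_minus: assumes "f \<in> REL" "g \<in> REL" shows "(\<lambda>p. f p \<ominus>\<^bsub>R\<^esub> g p) \<in> REL"
proof -
  have "(\<lambda>p. f p \<oplus>\<^bsub>R\<^esub> (\<ominus>\<^bsub>R\<^esub> \<one>\<^bsub>R\<^esub> \<otimes>\<^bsub>R\<^esub> g p)) \<in> REL"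
    using assms by (intro tensor_rel.rel_add tensor_rel.rel_smult) auto
  moreover have "(\<lambda>p. f p \<oplus>\<^bsub>R\<^esub> (\<ominus>\<^bsub>R\<^esub> \<one>\<^bsub>R\<^esub> \<otimes>\<^bsub>R\<^esub> g p)) = (\<lambda>p. f p \<ominus>\<^bsub>R\<^esub> g p)"
  proof
    fix p
    have "f p \<in> carrier R" "g p \<in> carrier R" using rel_FS[OF assms(1)] rel_FS[OF assms(2)] FS_D by auto
    then show "f p \<oplus>\<^bsub>R\<^esub> (\<ominus>\<^bsub>R\<^esub> \<one>\<^bsub>R\<^esub> \<otimes>\<^bsub>R\<^esub> g p) = f p \<ominus>\<^bsub>R\<^esub> g p" by algebra
  qed
  ultimately show ?thesis by simp
qed

lemma cls_mem: assumes "f \<in> FS" shows "f \<in> cls f"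
proof -
  have "(\<lambda>p. f p \<ominus>\<^bsub>R\<^esub> f p) = (\<lambda>p. \<zero>\<^bsub>R\<^esub>)" using FS_D[OF assms] by (auto simp: R.r_neg R.minus_eq)
  then show ?thesis unfolding tensor_class_def using assms tensor_rel.rel_zero by auto
qed

lemma cls_eq: assumes "f \<in> FS" "g \<in> FS" "(\<lambda>p. f p \<ominus>\<^bsub>R\<^esub> g p) \<in> REL" shows "cls f = cls g"
proof -
  have 1: "(\<lambda>p. h p \<ominus>\<^bsub>R\<^esub> g p) \<in> REL" if "h \<in> FS" "(\<lambda>p. h p \<ominus>\<^bsub>R\<^esub> f p) \<in> REL" for h
  proof -
    have "(\<lambda>p. (h p \<ominus>\<^bsub>R\<^esub> f p) \<oplus>\<^bsub>R\<^esub> (f p \<ominus>\<^bsub>R\<^esub> g p)) \<in> REL"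
      by (rule tensor_rel.rel_add[OF that(2) assms(3)])
    moreover have "(\<lambda>p. (h p \<ominus>\<^bsub>R\<^esub> f p) \<oplus>\<^bsub>R\<^esub> (f p \<ominus>\<^bsub>R\<^esub> g p)) = (\<lambda>p. h p \<ominus>\<^bsub>R\<^esub> g p)"
    proof
      fix p
      have "f p \<in> carrier R" "g p \<in> carrier R" "h p \<in> carrier R" using assms that FS_D by auto
      then show "(h p \<ominus>\<^bsub>R\<^esub> f p) \<oplus>\<^bsub>R\<^esub> (f p \<ominus>\<^bsub>R\<^esub> g p) = h p \<ominus>\<^bsub>R\<^esub> g p" by algebra
    qed
    ultimately show ?thesis by simp
  qed
  have 2: "(\<lambda>p. h p \<ominus>\<^bsub>R\<^esub> f p) \<in> REL" if "h \<in> FS" "(\<lambda>p. h p \<ominus>\<^bsub>R\<^esub> g p) \<in> REL" for h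
  proof -
    have "(\<lambda>p. (h p \<ominus>\<^bsub>R\<^esub> g p) \<ominus>\<^bsub>R\<^esub> (f p \<ominus>\<^bsub>R\<^esub> g p)) \<in> REL"
      by (rule rel_minus[OF that(2) assms(3)])
    moreover have "(\<lambda>p. (h p \<ominus>\<^bsub>R\<^esub> g p) \<ominus>\<^bsub>R\<^esub> (f p \<ominus>\<^bsub>R\<^esub> g p)) = (\<lambda>p. h p \<ominus>\<^bsub>R\<^esub> f p)"
    proof
      fix p
      have "f p \<in> carrier R" "g p \<in> carrier R" "h p \<in> carrier R" using assms that FS_D by auto
      then show "(h p \<ominus>\<^bsub>R\<^esub> g p) \<ominus>\<^bsub>R\<^esub> (f p \<ominus>\<^bsub>R\<^esub> g p) = h p \<ominus>\<^bsub>R\<^esub> f p" by algebra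
    qed
    ultimately show ?thesis by simp
  qed
  show ?thesis unfolding tensor_class_def using 1 2 by auto
qed

lemma rep_cls: assumes "f \<in> FS" shows "rep (cls f) \<in> FS" "(\<lambda>p. rep (cls f) p \<ominus>\<^bsub>R\<^esub> f p) \<in> REL"
proof -
  have "rep (cls f) \<in> cls f" unfolding rep_def using cls_mem[OF assms] by (metis someI)
  then show "rep (cls f) \<in> FS" "(\<lambda>p. rep (cls f) p \<ominus>\<^bsub>R\<^esub> f p) \<in> REL" unfolding tensor_class_def by auto
qed

lemma cls_rep: assumes "f \<in> FS" shows "cls (rep (cls f)) = cls f"
  by (rule cls_eq[OF rep_cls(1)[OF assms] assms rep_cls(2)[OF assms]])

lemma carrier_T: "carrier T = cls ` FS"
  unfolding tensor_def by simp

lemma carrier_TE: assumes "X \<in> carrier T" obtains f where "f \<in> FS" "X = cls f"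
  using assms carrier_T by auto

lemma rep_FS: "X \<in> carrier T \<Longrightarrow> rep X \<in> FS"
  using rep_cls carrier_T by auto

lemma cls_rep': "X \<in> carrier T \<Longrightarrow> cls (rep X) = X"
  using cls_rep carrier_T by auto

lemma cls_closed: "f \<in> FS \<Longrightarrow> cls f \<in> carrier T"
  using carrier_T by auto

lemma T_add: assumes "f \<in> FS" "g \<in> FS" shows "cls f \<oplus>\<^bsub>T\<^esub> cls g = cls (\<lambda>p. f p \<oplus>\<^bsub>R\<^esub> g p)"
proof -
  have "cls f \<oplus>\<^bsub>T\<^esub> cls g = cls (\<lambda>p. rep (cls f) p \<oplus>\<^bsub>R\<^esub> rep (cls g) p)"
    unfolding tensor_def by simp
  also have "\<dots> = cls (\<lambda>p. f p \<oplus>\<^bsub>R\<^esub> g p)"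
  proof (rule cls_eq)
    show "(\<lambda>p. rep (cls f) p \<oplus>\<^bsub>R\<^esub> rep (cls g) p) \<in> FS" using rep_cls assms FS_add by auto
    show "(\<lambda>p. f p \<oplus>\<^bsub>R\<^esub> g p) \<in> FS" using assms FS_add by auto
    have "(\<lambda>p. (rep (cls f) p \<ominus>\<^bsub>R\<^esub> f p) \<oplus>\<^bsub>R\<^esub> (rep (cls g) p \<ominus>\<^bsub>R\<^esub> g p)) \<in> REL"
      using rep_cls assms by (intro tensor_rel.rel_add) auto
    moreover have "(\<lambda>p. (rep (cls f) p \<ominus>\<^bsub>R\<^esub> f p) \<oplus>\<^bsub>R\<^esub> (rep (cls g) p \<ominus>\<^bsub>R\<^esub> g p)) =
       (\<lambda>p. rep (cls f) p \<oplus>\<^bsub>R\<^esub> rep (cls g) p \<ominus>\<^bsub>R\<^esub> (f p \<oplus>\<^bsub>R\<^esub> g p))"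
    proof
      fix p
      have "f p \<in> carrier R" "g p \<in> carrier R" "rep (cls f) p \<in> carrier R" "rep (cls g) p \<in> carrier R"
        using assms rep_cls FS_D by auto
      then show "(rep (cls f) p \<ominus>\<^bsub>R\<^esub> f p) \<oplus>\<^bsub>R\<^esub> (rep (cls g) p \<ominus>\<^bsub>R\<^esub> g p) =
         rep (cls f) p \<oplus>\<^bsub>R\<^esub> rep (cls g) p \<ominus>\<^bsub>R\<^esub> (f p \<oplus>\<^bsub>R\<^esub> g p)" by algebra
    qed
    ultimately show "(\<lambda>p. rep (cls f) p \<oplus>\<^bsub>R\<^esub> rep (cls g) p \<ominus>\<^bsub>R\<^esub> (f p \<oplus>\<^bsub>R\<^esub> g p)) \<in> REL" by simp
  qed
  finally show ?thesis .
qed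

lemma T_smult: assumes "a \<in> carrier R" "f \<in> FS" shows "a \<odot>\<^bsub>T\<^esub> cls f = cls (\<lambda>p. a \<otimes>\<^bsub>R\<^esub> f p)"
proof -
  have "a \<odot>\<^bsub>T\<^esub> cls f = cls (\<lambda>p. a \<otimes>\<^bsub>R\<^esub> rep (cls f) p)"
    unfolding tensor_def by simp
  also have "\<dots> = cls (\<lambda>p. a \<otimes>\<^bsub>R\<^esub> f p)"
  proof (rule cls_eq)
    show "(\<lambda>p. a \<otimes>\<^bsub>R\<^esub> rep (cls f) p) \<in> FS" using rep_cls assms FS_smult by auto
    show "(\<lambda>p. a \<otimes>\<^bsub>R\<^esub> f p) \<in> FS" using assms FS_smult by auto
    have "(\<lambda>p. a \<otimes>\<^bsub>R\<^esub> (rep (cls f) p \<ominus>\<^bsub>R\<^esub> f p)) \<in> REL"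
      using rep_cls assms by (intro tensor_rel.rel_smult) auto
    moreover have "(\<lambda>p. a \<otimes>\<^bsub>R\<^esub> (rep (cls f) p \<ominus>\<^bsub>R\<^esub> f p)) =
       (\<lambda>p. a \<otimes>\<^bsub>R\<^esub> rep (cls f) p \<ominus>\<^bsub>R\<^esub> a \<otimes>\<^bsub>R\<^esub> f p)"
    proof
      fix p
      have "f p \<in> carrier R" "rep (cls f) p \<in> carrier R"
        using assms rep_cls FS_D by auto
      then show "a \<otimes>\<^bsub>R\<^esub> (rep (cls f) p \<ominus>\<^bsub>R\<^esub> f p) = a \<otimes>\<^bsub>R\<^esub> rep (cls f) p \<ominus>\<^bsub>R\<^esub> a \<otimes>\<^bsub>R\<^esub> f p"
        using assms(1) by algebra
    qed
    ultimately show "(\<lambda>p. a \<otimes>\<^bsub>R\<^esub> rep (cls f) p \<ominus>\<^bsub>R\<^esub> a \<otimes>\<^bsub>R\<^esub> f p) \<in> REL" by simp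
  qed
  finally show ?thesis .
qed

lemma T_zero: "\<zero>\<^bsub>T\<^esub> = cls (\<lambda>p. \<zero>\<^bsub>R\<^esub>)"
  unfolding tensor_def by simp

lemma cls_ext: "f \<in> FS \<Longrightarrow> (\<And>p. f p = g p) \<Longrightarrow> cls f = cls g"
  by (metis ext)

lemma T_module: "module R T"
proof (rule moduleI)
  show "cring R" by (rule R.is_cring)
  show "abelian_group T"
  proof (rule abelian_groupI)
    fix X Y assume "X \<in> carrier T" "Y \<in> carrier T"
    then obtain f g where fg: "f \<in> FS" "g \<in> FS" "X = cls f" "Y = cls g" by (metis carrier_TE)
    show "X \<oplus>\<^bsub>T\<^esub> Y \<in> carrier T" unfolding fg T_add[OF fg(1,2)]
      by (rule cls_closed[OF FS_add[OF fg(1,2)]])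
  next
    show "\<zero>\<^bsub>T\<^esub> \<in> carrier T" unfolding T_zero by (rule cls_closed[OF FS_zero])
  next
    fix X Y Z assume "X \<in> carrier T" "Y \<in> carrier T" "Z \<in> carrier T"
    then obtain f g h where fgh: "f \<in> FS" "g \<in> FS" "h \<in> FS" "X = cls f" "Y = cls g" "Z = cls h"
      by (metis carrier_TE)
    have "X \<oplus>\<^bsub>T\<^esub> Y \<oplus>\<^bsub>T\<^esub> Z = cls (\<lambda>p. (f p \<oplus>\<^bsub>R\<^esub> g p) \<oplus>\<^bsub>R\<^esub> h p)"
      unfolding fgh T_add[OF fgh(1,2)] T_add[OF FS_add[OF fgh(1,2)] fgh(3)] ..
    also have "\<dots> = cls (\<lambda>p. f p \<oplus>\<^bsub>R\<^esub> (g p \<oplus>\<^bsub>R\<^esub> h p))"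
      by (rule cls_ext, rule FS_add[OF FS_add[OF fgh(1,2)] fgh(3)],
          rule R.a_assoc, (rule FS_D, fact)+)
    also have "\<dots> = X \<oplus>\<^bsub>T\<^esub> (Y \<oplus>\<^bsub>T\<^esub> Z)"
      unfolding fgh T_add[OF fgh(2,3)] T_add[OF fgh(1) FS_add[OF fgh(2,3)]] ..
    finally show "X \<oplus>\<^bsub>T\<^esub> Y \<oplus>\<^bsub>T\<^esub> Z = X \<oplus>\<^bsub>T\<^esub> (Y \<oplus>\<^bsub>T\<^esub> Z)" .
  next
    fix X Y assume "X \<in> carrier T" "Y \<in> carrier T"
    then obtain f g where fg: "f \<in> FS" "g \<in> FS" "X = cls f" "Y = cls g" by (metis carrier_TE)
    show "X \<oplus>\<^bsub>T\<^esub> Y = Y \<oplus>\<^bsub>T\<^esub> X" unfolding fg T_add[OF fg(1,2)] T_add[OF fg(2,1)]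
      by (rule cls_ext, rule FS_add[OF fg(1,2)], rule R.a_comm, (rule FS_D, fact)+)
  next
    fix X assume "X \<in> carrier T"
    then obtain f where f: "f \<in> FS" "X = cls f" by (metis carrier_TE)
    show "\<zero>\<^bsub>T\<^esub> \<oplus>\<^bsub>T\<^esub> X = X" unfolding f T_zero T_add[OF FS_zero f(1)]
      by (rule cls_ext, rule FS_add[OF FS_zero f(1)], rule R.l_zero, rule FS_D, fact)
  next
    fix X assume "X \<in> carrier T"
    then obtain f where f: "f \<in> FS" "X = cls f"
      by (metis carrier_TE)
    have m: "(\<lambda>p. \<ominus>\<^bsub>R\<^esub> \<one>\<^bsub>R\<^esub> \<otimes>\<^bsub>R\<^esub> f p) \<in> FS" using f FS_smult by auto
    have "cls (\<lambda>p. \<ominus>\<^bsub>R\<^esub> \<one>\<^bsub>R\<^esub> \<otimes>\<^bsub>R\<^esub> f p) \<oplus>\<^bsub>T\<^esub> X = cls (\<lambda>p. \<ominus>\<^bsub>R\<^esub> \<one>\<^bsub>R\<^esub> \<otimes>\<^bsub>R\<^esub> f p \<oplus>\<^bsub>R\<^esub> f p)"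
      unfolding f T_add[OF m f(1)] ..
    also have "\<dots> = cls (\<lambda>p. \<zero>\<^bsub>R\<^esub>)"
    proof (rule cls_ext)
      show "(\<lambda>p. \<ominus>\<^bsub>R\<^esub> \<one>\<^bsub>R\<^esub> \<otimes>\<^bsub>R\<^esub> f p \<oplus>\<^bsub>R\<^esub> f p) \<in> FS" by (rule FS_add[OF m f(1)])
      fix p have "f p \<in> carrier R" using f FS_D by auto
      then show "\<ominus>\<^bsub>R\<^esub> \<one>\<^bsub>R\<^esub> \<otimes>\<^bsub>R\<^esub> f p \<oplus>\<^bsub>R\<^esub> f p = \<zero>\<^bsub>R\<^esub>" by algebra
    qed
    finally have "cls (\<lambda>p. \<ominus>\<^bsub>R\<^esub> \<one>\<^bsub>R\<^esub> \<otimes>\<^bsub>R\<^esub> f p) \<oplus>\<^bsub>T\<^esub> X = \<zero>\<^bsub>T\<^esub>" unfolding T_zero .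
    then show "\<exists>Y\<in>carrier T. Y \<oplus>\<^bsub>T\<^esub> X = \<zero>\<^bsub>T\<^esub>" using cls_closed[OF m] by blast
  qed
next
  fix a X assume a: "a \<in> carrier R" "X \<in> carrier T"
  then obtain f where f: "f \<in> FS" "X = cls f" by (metis carrier_TE)
  show "a \<odot>\<^bsub>T\<^esub> X \<in> carrier T" unfolding f T_smult[OF a(1) f(1)]
    by (rule cls_closed[OF FS_smult[OF a(1) f(1)]])
next
  fix a b X assume ab: "a \<in> carrier R" "b \<in> carrier R" "X \<in> carrier T"
  then obtain f where f: "f \<in> FS" "X = cls f" by (metis carrier_TE)
  show "(a \<oplus>\<^bsub>R\<^esub> b) \<odot>\<^bsub>T\<^esub> X = a \<odot>\<^bsub>T\<^esub> X \<oplus>\<^bsub>T\<^esub> b \<odot>\<^bsub>T\<^esub> X"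
    unfolding f T_smult[OF ab(1) f(1)] T_smult[OF ab(2) f(1)] T_smult[OF R.a_closed[OF ab(1,2)] f(1)]
      T_add[OF FS_smult[OF ab(1) f(1)] FS_smult[OF ab(2) f(1)]]
    by (rule cls_ext, rule FS_smult[OF R.a_closed[OF ab(1,2)] f(1)], rule R.l_distr, rule ab, rule ab, rule FS_D, fact)
next
  fix a X Y assume ab: "a \<in> carrier R" "X \<in> carrier T" "Y \<in> carrier T"
  then obtain f g where f: "f \<in> FS" "X = cls f" "g \<in> FS" "Y = cls g" by (metis carrier_TE)
  show "a \<odot>\<^bsub>T\<^esub> (X \<oplus>\<^bsub>T\<^esub> Y) = a \<odot>\<^bsub>T\<^esub> X \<oplus>\<^bsub>T\<^esub> a \<odot>\<^bsub>T\<^esub> Y"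
    unfolding f T_add[OF f(1,3)] T_smult[OF ab(1) FS_add[OF f(1,3)]] T_smult[OF ab(1) f(1)] T_smult[OF ab(1) f(3)]
      T_add[OF FS_smult[OF ab(1) f(1)] FS_smult[OF ab(1) f(3)]]
    by (rule cls_ext, rule FS_smult[OF ab(1) FS_add[OF f(1,3)]], rule R.r_distr, (rule FS_D, fact)+, rule ab)
next
  fix a b X assume ab: "a \<in> carrier R" "b \<in> carrier R" "X \<in> carrier T"
  then obtain f where f: "f \<in> FS" "X = cls f" by (metis carrier_TE)
  show "(a \<otimes>\<^bsub>R\<^esub> b) \<odot>\<^bsub>T\<^esub> X = a \<odot>\<^bsub>T\<^esub> (b \<odot>\<^bsub>T\<^esub> X)"
    unfolding f T_smult[OF ab(2) f(1)] T_smult[OF ab(1) FS_smult[OF ab(2) f(1)]] T_smult[OF R.m_closed[OF ab(1,2)] f(1)]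
    by (rule cls_ext, rule FS_smult[OF R.m_closed[OF ab(1,2)] f(1)], rule R.m_assoc, rule ab, rule ab, rule FS_D, fact)
next
  fix X assume "X \<in> carrier T"
  then obtain f where f: "f \<in> FS" "X = cls f" by (metis carrier_TE)
  show "\<one>\<^bsub>R\<^esub> \<odot>\<^bsub>T\<^esub> X = X"
    unfolding f T_smult[OF R.one_closed f(1)]
    by (rule cls_ext, rule FS_smult[OF R.one_closed f(1)], rule R.l_one, rule FS_D, fact)
qed

lemma delta_ext: "fs_delta R m n = (\<lambda>p. if p = (m, n) then \<one>\<^bsub>R\<^esub> else \<zero>\<^bsub>R\<^esub>)"
  unfolding fs_delta_def ..

lemma tens_closed: "m \<in> carrier M \<Longrightarrow> n \<in> carrier N \<Longrightarrow> tens R M N m n \<in> carrier T"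
  unfolding tens_def by (rule cls_closed[OF delta_FS])

lemma tens_add_l: assumes "m \<in> carrier M" "m' \<in> carrier M" "n \<in> carrier N"
  shows "tens R M N (m \<oplus>\<^bsub>M\<^esub> m') n = tens R M N m n \<oplus>\<^bsub>T\<^esub> tens R M N m' n"
proof -
  have d: "fs_delta R (m \<oplus>\<^bsub>M\<^esub> m') n \<in> FS" "fs_delta R m n \<in> FS" "fs_delta R m' n \<in> FS"
    using assms by (auto intro!: delta_FS)
  show ?thesis unfolding tens_def T_add[OF d(2,3)]
  proof (rule cls_eq[OF d(1) FS_add[OF d(2,3)]])
    have "(\<lambda>p. fs_delta R (m \<oplus>\<^bsub>M\<^esub> m') n p \<ominus>\<^bsub>R\<^esub> fs_delta R m n p \<ominus>\<^bsub>R\<^esub> fs_delta R m' n p) \<in> REL"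
      using assms by (rule tensor_rel.rel_add_l)
    moreover have "(\<lambda>p. fs_delta R (m \<oplus>\<^bsub>M\<^esub> m') n p \<ominus>\<^bsub>R\<^esub> fs_delta R m n p \<ominus>\<^bsub>R\<^esub> fs_delta R m' n p)
       = (\<lambda>p. fs_delta R (m \<oplus>\<^bsub>M\<^esub> m') n p \<ominus>\<^bsub>R\<^esub> (fs_delta R m n p \<oplus>\<^bsub>R\<^esub> fs_delta R m' n p))"
    proof
      fix p
      have "fs_delta R (m \<oplus>\<^bsub>M\<^esub> m') n p \<in> carrier R" "fs_delta R m n p \<in> carrier R" "fs_delta R m' n p \<in> carrier R"
        by (rule delta_closed)+
      then show "fs_delta R (m \<oplus>\<^bsub>M\<^esub> m') n p \<ominus>\<^bsub>R\<^esub> fs_delta R m n p \<ominus>\<^bsub>R\<^esub> fs_delta R m' n p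
          = fs_delta R (m \<oplus>\<^bsub>M\<^esub> m') n p \<ominus>\<^bsub>R\<^esub> (fs_delta R m n p \<oplus>\<^bsub>R\<^esub> fs_delta R m' n p)" by algebra
    qed
    ultimately show "(\<lambda>p. fs_delta R (m \<oplus>\<^bsub>M\<^esub> m') n p \<ominus>\<^bsub>R\<^esub> (fs_delta R m n p \<oplus>\<^bsub>R\<^esub> fs_delta R m' n p)) \<in> REL"
      by simp
  qed
qed

lemma tens_add_r: assumes "m \<in> carrier M" "n \<in> carrier N" "n' \<in> carrier N"
  shows "tens R M N m (n \<oplus>\<^bsub>N\<^esub> n') = tens R M N m n \<oplus>\<^bsub>T\<^esub> tens R M N m n'"
proof -
  have d: "fs_delta R m (n \<oplus>\<^bsub>N\<^esub> n') \<in> FS" "fs_delta R m n \<in> FS" "fs_delta R m n' \<in> FS"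
    using assms by (auto intro!: delta_FS)
  show ?thesis unfolding tens_def T_add[OF d(2,3)]
  proof (rule cls_eq[OF d(1) FS_add[OF d(2,3)]])
    have "(\<lambda>p. fs_delta R m (n \<oplus>\<^bsub>N\<^esub> n') p \<ominus>\<^bsub>R\<^esub> fs_delta R m n p \<ominus>\<^bsub>R\<^esub> fs_delta R m n' p) \<in> REL"
      using assms by (rule tensor_rel.rel_add_r)
    moreover have "(\<lambda>p. fs_delta R m (n \<oplus>\<^bsub>N\<^esub> n') p \<ominus>\<^bsub>R\<^esub> fs_delta R m n p \<ominus>\<^bsub>R\<^esub> fs_delta R m n' p)
       = (\<lambda>p. fs_delta R m (n \<oplus>\<^bsub>N\<^esub> n') p \<ominus>\<^bsub>R\<^esub> (fs_delta R m n p \<oplus>\<^bsub>R\<^esub> fs_delta R m n' p))"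
    proof
      fix p
      have "fs_delta R m (n \<oplus>\<^bsub>N\<^esub> n') p \<in> carrier R" "fs_delta R m n p \<in> carrier R" "fs_delta R m n' p \<in> carrier R"
        by (rule delta_closed)+
      then show "fs_delta R m (n \<oplus>\<^bsub>N\<^esub> n') p \<ominus>\<^bsub>R\<^esub> fs_delta R m n p \<ominus>\<^bsub>R\<^esub> fs_delta R m n' p
          = fs_delta R m (n \<oplus>\<^bsub>N\<^esub> n') p \<ominus>\<^bsub>R\<^esub> (fs_delta R m n p \<oplus>\<^bsub>R\<^esub> fs_delta R m n' p)" by algebra
    qed
    ultimately show "(\<lambda>p. fs_delta R m (n \<oplus>\<^bsub>N\<^esub> n') p \<ominus>\<^bsub>R\<^esub> (fs_delta R m n p \<oplus>\<^bsub>R\<^esub> fs_delta R m n' p)) \<in> REL"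
      by simp
  qed
qed

lemma tens_smult_l: assumes "a \<in> carrier R" "m \<in> carrier M" "n \<in> carrier N"
  shows "tens R M N (a \<odot>\<^bsub>M\<^esub> m) n = a \<odot>\<^bsub>T\<^esub> tens R M N m n"
proof -
  have d: "fs_delta R (a \<odot>\<^bsub>M\<^esub> m) n \<in> FS" "fs_delta R m n \<in> FS"
    using assms by (auto intro!: delta_FS)
  show ?thesis unfolding tens_def T_smult[OF assms(1) d(2)]
    by (rule cls_eq[OF d(1) FS_smult[OF assms(1) d(2)]], rule tensor_rel.rel_smult_l[OF assms])
qed

lemma tens_smult_r: assumes "a \<in> carrier R" "m \<in> carrier M" "n \<in> carrier N"
  shows "tens R M N m (a \<odot>\<^bsub>N\<^esub> n) = a \<odot>\<^bsub>T\<^esub> tens R M N m n"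
proof -
  have d: "fs_delta R m (a \<odot>\<^bsub>N\<^esub> n) \<in> FS" "fs_delta R m n \<in> FS"
    using assms by (auto intro!: delta_FS)
  show ?thesis unfolding tens_def T_smult[OF assms(1) d(2)]
    by (rule cls_eq[OF d(1) FS_smult[OF assms(1) d(2)]], rule tensor_rel.rel_smult_r[OF assms])
qed

lemma tens_bil: "bil R M N T (\<lambda>(a, b). tens R M N a b)"
  by (rule bilI) (auto simp: linear_map_def tens_closed tens_add_l tens_add_r tens_smult_l tens_smult_r)

end

definition lsum :: "'r ring \<Rightarrow> ('r, 'p) module \<Rightarrow> ('m \<times> 'n \<Rightarrow> 'p) \<Rightarrow> ('m \<times> 'n \<Rightarrow> 'r) \<Rightarrow> 'p" where
  "lsum R P \<phi> f = finsum P (\<lambda>q. f q \<odot>\<^bsub>P\<^esub> \<phi> q) (fsupp R f)"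

lemma tlift_lsum: "tlift R M N P \<phi> X = lsum R P \<phi> (rep X)"
  unfolding tlift_def lsum_def ..

lemma (in abelian_group) ag_cancel3: "x \<in> carrier G \<Longrightarrow> y \<in> carrier G \<Longrightarrow> (x \<oplus> y) \<ominus> x \<ominus> y = \<zero>"
proof -
  assume xy: "x \<in> carrier G" "y \<in> carrier G"
  then have "(x \<oplus> y) \<ominus> x \<ominus> y = (x \<oplus> y) \<oplus> (\<ominus> x \<oplus> \<ominus> y)" by (simp add: minus_eq a_assoc)
  also have "\<dots> = (x \<oplus> y) \<oplus> \<ominus> (x \<oplus> y)" using xy by (simp add: minus_add)
  also have "\<dots> = \<zero>" using xy by (simp add: r_neg)
  finally show ?thesis .
qed

lemma (in abelian_group) ag_cancel1: "x \<in> carrier G \<Longrightarrow> x \<ominus> x = \<zero>"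
  by (simp add: minus_eq r_neg)

locale t3 = t2 R M N + P: module R P for R :: "'r ring" and M :: "('r, 'm) module" and N :: "('r, 'n) module" and P :: "('r, 'p) module"
begin

lemma lsum_sup: assumes f: "f \<in> FS" and A: "finite A" "fsupp R f \<subseteq> A" "A \<subseteq> carrier M \<times> carrier N"
  and phi: "\<phi> \<in> carrier M \<times> carrier N \<rightarrow> carrier P"
  shows "lsum R P \<phi> f = (\<Oplus>\<^bsub>P\<^esub>q\<in>A. f q \<odot>\<^bsub>P\<^esub> \<phi> q)"
  unfolding lsum_def
proof (rule P.add.finprod_mono_neutral_cong_left)
  show "finite A" "fsupp R f \<subseteq> A" by (fact A)+
  show "\<And>i. i \<in> A - fsupp R f \<Longrightarrow> f i \<odot>\<^bsub>P\<^esub> \<phi> i = \<zero>\<^bsub>P\<^esub>"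
    using A phi unfolding fsupp_def by (auto simp: Pi_def)
  show "\<And>x. x \<in> fsupp R f \<Longrightarrow> f x \<odot>\<^bsub>P\<^esub> \<phi> x = f x \<odot>\<^bsub>P\<^esub> \<phi> x" by simp
  show "(\<lambda>q. f q \<odot>\<^bsub>P\<^esub> \<phi> q) \<in> A \<rightarrow> carrier P"
    using A phi FS_D[OF f] by (auto simp: Pi_def)
qed

lemma lsum_closed: assumes f: "f \<in> FS" and phi: "\<phi> \<in> carrier M \<times> carrier N \<rightarrow> carrier P"
  shows "lsum R P \<phi> f \<in> carrier P"
  unfolding lsum_def using FS_D[OF f] phi by (intro P.finsum_closed) (auto simp: Pi_def)

lemma lsum_add: assumes f: "f \<in> FS" "g \<in> FS" and phi: "\<phi> \<in> carrier M \<times> carrier N \<rightarrow> carrier P"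
  shows "lsum R P \<phi> (\<lambda>p. f p \<oplus>\<^bsub>R\<^esub> g p) = lsum R P \<phi> f \<oplus>\<^bsub>P\<^esub> lsum R P \<phi> g"
proof -
  let ?A = "fsupp R f \<union> fsupp R g"
  have A: "finite ?A" "?A \<subseteq> carrier M \<times> carrier N" using FS_D[OF f(1)] FS_D[OF f(2)] by auto
  have "lsum R P \<phi> (\<lambda>p. f p \<oplus>\<^bsub>R\<^esub> g p) = (\<Oplus>\<^bsub>P\<^esub>q\<in>?A. (f q \<oplus>\<^bsub>R\<^esub> g q) \<odot>\<^bsub>P\<^esub> \<phi> q)"
    by (rule lsum_sup[OF FS_add[OF f] A(1) fsupp_add[OF R.is_cring] A(2) phi])
  also have "\<dots> = (\<Oplus>\<^bsub>P\<^esub>q\<in>?A. f q \<odot>\<^bsub>P\<^esub> \<phi> q \<oplus>\<^bsub>P\<^esub> g q \<odot>\<^bsub>P\<^esub> \<phi> q)"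
    using A phi FS_D[OF f(1)] FS_D[OF f(2)]
    by (intro P.finsum_cong') (auto simp: Pi_def P.smult_l_distr)
  also have "\<dots> = (\<Oplus>\<^bsub>P\<^esub>q\<in>?A. f q \<odot>\<^bsub>P\<^esub> \<phi> q) \<oplus>\<^bsub>P\<^esub> (\<Oplus>\<^bsub>P\<^esub>q\<in>?A. g q \<odot>\<^bsub>P\<^esub> \<phi> q)"
    using A phi FS_D[OF f(1)] FS_D[OF f(2)]
    by (intro P.finsum_addf) (auto simp: Pi_def)
  also have "\<dots> = lsum R P \<phi> f \<oplus>\<^bsub>P\<^esub> lsum R P \<phi> g"
    using lsum_sup[OF f(1) A(1) _ A(2) phi] lsum_sup[OF f(2) A(1) _ A(2) phi] by auto
  finally show ?thesis .
qed

lemma lsum_smult: assumes a: "a \<in> carrier R" and f: "f \<in> FS" and phi: "\<phi> \<in> carrier M \<times> carrier N \<rightarrow> carrier P"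
  shows "lsum R P \<phi> (\<lambda>p. a \<otimes>\<^bsub>R\<^esub> f p) = a \<odot>\<^bsub>P\<^esub> lsum R P \<phi> f"
proof -
  let ?A = "fsupp R f"
  have A: "finite ?A" "?A \<subseteq> carrier M \<times> carrier N" using FS_D[OF f(1)] by auto
  have "lsum R P \<phi> (\<lambda>p. a \<otimes>\<^bsub>R\<^esub> f p) = (\<Oplus>\<^bsub>P\<^esub>q\<in>?A. (a \<otimes>\<^bsub>R\<^esub> f q) \<odot>\<^bsub>P\<^esub> \<phi> q)"
    by (rule lsum_sup[OF FS_smult[OF a f] A(1) fsupp_smult[OF R.is_cring a] A(2) phi])
  also have "\<dots> = (\<Oplus>\<^bsub>P\<^esub>q\<in>?A. a \<odot>\<^bsub>P\<^esub> (f q \<odot>\<^bsub>P\<^esub> \<phi> q))"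
    using A phi FS_D[OF f(1)] a
    by (intro P.finsum_cong') (auto simp: Pi_def P.smult_assoc1)
  also have "\<dots> = a \<odot>\<^bsub>P\<^esub> (\<Oplus>\<^bsub>P\<^esub>q\<in>?A. f q \<odot>\<^bsub>P\<^esub> \<phi> q)"
    using A phi FS_D[OF f(1)] a
    by (intro P.finsum_smult_ldistr[symmetric]) (auto simp: Pi_def)
  finally show ?thesis unfolding lsum_def .
qed

lemma lsum_zero: "lsum R P \<phi> (\<lambda>p. \<zero>\<^bsub>R\<^esub>) = \<zero>\<^bsub>P\<^esub>"
  unfolding lsum_def fsupp_def by simp

lemma lsum_minus: assumes f: "f \<in> FS" "g \<in> FS" and phi: "\<phi> \<in> carrier M \<times> carrier N \<rightarrow> carrier P"
  shows "lsum R P \<phi> (\<lambda>p. f p \<ominus>\<^bsub>R\<^esub> g p) = lsum R P \<phi> f \<ominus>\<^bsub>P\<^esub> lsum R P \<phi> g"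
proof -
  have "(\<lambda>p. f p \<ominus>\<^bsub>R\<^esub> g p) = (\<lambda>p. f p \<oplus>\<^bsub>R\<^esub> (\<ominus>\<^bsub>R\<^esub> \<one>\<^bsub>R\<^esub> \<otimes>\<^bsub>R\<^esub> g p))"
  proof
    fix p have "f p \<in> carrier R" "g p \<in> carrier R" using FS_D f by auto
    then show "f p \<ominus>\<^bsub>R\<^esub> g p = f p \<oplus>\<^bsub>R\<^esub> (\<ominus>\<^bsub>R\<^esub> \<one>\<^bsub>R\<^esub> \<otimes>\<^bsub>R\<^esub> g p)" by algebra
  qed
  then have "lsum R P \<phi> (\<lambda>p. f p \<ominus>\<^bsub>R\<^esub> g p) = lsum R P \<phi> f \<oplus>\<^bsub>P\<^esub> (\<ominus>\<^bsub>R\<^esub> \<one>\<^bsub>R\<^esub>) \<odot>\<^bsub>P\<^esub> lsum R P \<phi> g"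
    using lsum_add[OF f(1) FS_smult[OF _ f(2)] phi] lsum_smult[OF _ f(2) phi] by simp
  also have "\<dots> = lsum R P \<phi> f \<ominus>\<^bsub>P\<^esub> lsum R P \<phi> g"
    using lsum_closed[OF f(2) phi] by (simp add: P.smult_l_minus P.minus_eq)
  finally show ?thesis .
qed

lemma lsum_delta: assumes "m \<in> carrier M" "n \<in> carrier N" and phi: "\<phi> \<in> carrier M \<times> carrier N \<rightarrow> carrier P"
  shows "lsum R P \<phi> (fs_delta R m n) = \<phi> (m, n)"
proof -
  have "lsum R P \<phi> (fs_delta R m n) = (\<Oplus>\<^bsub>P\<^esub>q\<in>{(m,n)}. fs_delta R m n q \<odot>\<^bsub>P\<^esub> \<phi> q)"
    using assms by (intro lsum_sup delta_FS fsupp_delta) auto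
  also have "\<dots> = \<phi> (m, n)" using assms by (simp add: fs_delta_def Pi_def)
  finally show ?thesis .
qed

lemma lsum_rel: assumes phi: "bil R M N P \<phi>" and f: "f \<in> REL"
  shows "lsum R P \<phi> f = \<zero>\<^bsub>P\<^esub>"
proof -
  have phic: "\<phi> \<in> carrier M \<times> carrier N \<rightarrow> carrier P" using bil_closed[OF phi] by auto
  from f show ?thesis
  proof (induction rule: tensor_rel.induct)
    case rel_zero
    then show ?case by (rule lsum_zero)
  next
    case (rel_add f g)
    then show ?case using lsum_add[OF rel_FS rel_FS phic] by simp
  next
    case (rel_smult a f)
    then show ?case using lsum_smult[OF _ rel_FS phic] by simp
  next
    case (rel_add_l m m' n)
    have d: "fs_delta R (m \<oplus>\<^bsub>M\<^esub> m') n \<in> FS" "fs_delta R m n \<in> FS" "fs_delta R m' n \<in> FS"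
      using rel_add_l by (auto intro!: delta_FS)
    have "lsum R P \<phi> (\<lambda>p. fs_delta R (m \<oplus>\<^bsub>M\<^esub> m') n p \<ominus>\<^bsub>R\<^esub> fs_delta R m n p \<ominus>\<^bsub>R\<^esub> fs_delta R m' n p)
      = \<phi> (m \<oplus>\<^bsub>M\<^esub> m', n) \<ominus>\<^bsub>P\<^esub> \<phi> (m, n) \<ominus>\<^bsub>P\<^esub> \<phi> (m', n)"
      using lsum_minus[OF FS_minus[OF d(1,2)] d(3) phic] lsum_minus[OF d(1,2) phic] lsum_delta phic rel_add_l
      by simp
    also have "\<dots> = \<zero>\<^bsub>P\<^esub>"
      using lin_add[OF bil_l[OF phi rel_add_l(3)] rel_add_l(1,2)] bil_closed[OF phi] rel_add_l
      by (simp add: P.ag_cancel3)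
    finally show ?case .
  next
    case (rel_add_r m n n')
    have d: "fs_delta R m (n \<oplus>\<^bsub>N\<^esub> n') \<in> FS" "fs_delta R m n \<in> FS" "fs_delta R m n' \<in> FS"
      using rel_add_r by (auto intro!: delta_FS)
    have "lsum R P \<phi> (\<lambda>p. fs_delta R m (n \<oplus>\<^bsub>N\<^esub> n') p \<ominus>\<^bsub>R\<^esub> fs_delta R m n p \<ominus>\<^bsub>R\<^esub> fs_delta R m n' p)
      = \<phi> (m, n \<oplus>\<^bsub>N\<^esub> n') \<ominus>\<^bsub>P\<^esub> \<phi> (m, n) \<ominus>\<^bsub>P\<^esub> \<phi> (m, n')"
      using lsum_minus[OF FS_minus[OF d(1,2)] d(3) phic] lsum_minus[OF d(1,2) phic] lsum_delta phic rel_add_r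
      by simp
    also have "\<dots> = \<zero>\<^bsub>P\<^esub>"
      using lin_add[OF bil_r[OF phi rel_add_r(1)] rel_add_r(2,3)] bil_closed[OF phi] rel_add_r
      by (simp add: P.ag_cancel3)
    finally show ?case .
  next
    case (rel_smult_l a m n)
    have d: "fs_delta R (a \<odot>\<^bsub>M\<^esub> m) n \<in> FS" "fs_delta R m n \<in> FS"
      using rel_smult_l by (auto intro!: delta_FS)
    have "lsum R P \<phi> (\<lambda>p. fs_delta R (a \<odot>\<^bsub>M\<^esub> m) n p \<ominus>\<^bsub>R\<^esub> a \<otimes>\<^bsub>R\<^esub> fs_delta R m n p)
      = \<phi> (a \<odot>\<^bsub>M\<^esub> m, n) \<ominus>\<^bsub>P\<^esub> a \<odot>\<^bsub>P\<^esub> \<phi> (m, n)"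
      using lsum_minus[OF d(1) FS_smult[OF _ d(2)] phic] lsum_smult[OF _ d(2) phic] lsum_delta phic rel_smult_l
      by simp
    also have "\<dots> = \<zero>\<^bsub>P\<^esub>"
      using lin_smult[OF bil_l[OF phi rel_smult_l(3)] rel_smult_l(1,2)] bil_closed[OF phi] rel_smult_l
      by (simp add: P.ag_cancel1)
    finally show ?case .
  next
    case (rel_smult_r a m n)
    have d: "fs_delta R m (a \<odot>\<^bsub>N\<^esub> n) \<in> FS" "fs_delta R m n \<in> FS"
      using rel_smult_r by (auto intro!: delta_FS)
    have "lsum R P \<phi> (\<lambda>p. fs_delta R m (a \<odot>\<^bsub>N\<^esub> n) p \<ominus>\<^bsub>R\<^esub> a \<otimes>\<^bsub>R\<^esub> fs_delta R m n p)
      = \<phi> (m, a \<odot>\<^bsub>N\<^esub> n) \<ominus>\<^bsub>P\<^esub> a \<odot>\<^bsub>P\<^esub> \<phi> (m, n)"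
      using lsum_minus[OF d(1) FS_smult[OF _ d(2)] phic] lsum_smult[OF _ d(2) phic] lsum_delta phic rel_smult_r
      by simp
    also have "\<dots> = \<zero>\<^bsub>P\<^esub>"
      using lin_smult[OF bil_r[OF phi rel_smult_r(2)] rel_smult_r(1,3)] bil_closed[OF phi] rel_smult_r
      by (simp add: P.ag_cancel1)
    finally show ?case .
  qed
qed

lemma tlift_cls: assumes phi: "bil R M N P \<phi>" and f: "f \<in> FS"
  shows "tlift R M N P \<phi> (cls f) = lsum R P \<phi> f"
proof -
  have phic: "\<phi> \<in> carrier M \<times> carrier N \<rightarrow> carrier P" using bil_closed[OF phi] by auto
  let ?g = "rep (cls f)"
  have g: "?g \<in> FS" "(\<lambda>p. ?g p \<ominus>\<^bsub>R\<^esub> f p) \<in> REL" using rep_cls[OF f] by auto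
  have "?g = (\<lambda>p. (?g p \<ominus>\<^bsub>R\<^esub> f p) \<oplus>\<^bsub>R\<^esub> f p)"
  proof
    fix p have "f p \<in> carrier R" "?g p \<in> carrier R" using FS_D f g by auto
    then show "?g p = (?g p \<ominus>\<^bsub>R\<^esub> f p) \<oplus>\<^bsub>R\<^esub> f p" by algebra
  qed
  then have "lsum R P \<phi> ?g = lsum R P \<phi> (\<lambda>p. ?g p \<ominus>\<^bsub>R\<^esub> f p) \<oplus>\<^bsub>P\<^esub> lsum R P \<phi> f"
    using lsum_add[OF rel_FS[OF g(2)] f phic] by metis
  also have "\<dots> = lsum R P \<phi> f" using lsum_rel[OF phi g(2)] lsum_closed[OF f phic] by simp
  finally show ?thesis unfolding tlift_lsum .
qed

lemma tlift_tens: assumes phi: "bil R M N P \<phi>" and "m \<in> carrier M" "n \<in> carrier N"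
  shows "tlift R M N P \<phi> (tens R M N m n) = \<phi> (m, n)"
  unfolding tens_def using assms bil_closed[OF phi]
  by (simp add: tlift_cls delta_FS lsum_delta Pi_def)

lemma tlift_closed: assumes "X \<in> carrier T" and phi: "\<phi> \<in> carrier M \<times> carrier N \<rightarrow> carrier P"
  shows "tlift R M N P \<phi> X \<in> carrier P"
  unfolding tlift_lsum by (rule lsum_closed[OF rep_FS[OF assms(1)] phi])

lemma tlift_lin: assumes phi: "bil R M N P \<phi>"
  shows "linear_map R T P (tlift R M N P \<phi>)"
proof -
  have phic: "\<phi> \<in> carrier M \<times> carrier N \<rightarrow> carrier P" using bil_closed[OF phi] by auto
  show ?thesis unfolding linear_map_def
  proof (intro conjI ballI)
    show "tlift R M N P \<phi> \<in> carrier T \<rightarrow> carrier P" using tlift_closed[OF _ phic] by auto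
  next
    fix X Y assume "X \<in> carrier T" "Y \<in> carrier T"
    then obtain f g where fg: "f \<in> FS" "g \<in> FS" "X = cls f" "Y = cls g" by (metis carrier_TE)
    show "tlift R M N P \<phi> (X \<oplus>\<^bsub>T\<^esub> Y) = tlift R M N P \<phi> X \<oplus>\<^bsub>P\<^esub> tlift R M N P \<phi> Y"
      unfolding fg T_add[OF fg(1,2)] tlift_cls[OF phi FS_add[OF fg(1,2)]] tlift_cls[OF phi fg(1)]
        tlift_cls[OF phi fg(2)] by (rule lsum_add[OF fg(1,2) phic])
  next
    fix a X assume "a \<in> carrier R" "X \<in> carrier T"
    then obtain f where f: "f \<in> FS" "X = cls f" by (metis carrier_TE)
    show "tlift R M N P \<phi> (a \<odot>\<^bsub>T\<^esub> X) = a \<odot>\<^bsub>P\<^esub> tlift R M N P \<phi> X"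
      unfolding f T_smult[OF \<open>a \<in> carrier R\<close> f(1)] tlift_cls[OF phi FS_smult[OF \<open>a \<in> carrier R\<close> f(1)]]
        tlift_cls[OF phi f(1)] by (rule lsum_smult[OF \<open>a \<in> carrier R\<close> f(1) phic])
  qed
qed

lemma tlift_cong: assumes "X \<in> carrier T" "\<And>a b. a \<in> carrier M \<Longrightarrow> b \<in> carrier N \<Longrightarrow> \<phi> (a, b) = \<phi>' (a, b)"
   "\<phi>' \<in> carrier M \<times> carrier N \<rightarrow> carrier P"
  shows "tlift R M N P \<phi> X = tlift R M N P \<phi>' X"
proof -
  have "fsupp R (rep X) \<subseteq> carrier M \<times> carrier N" using FS_D rep_FS assms by auto
  then show ?thesis unfolding tlift_def using assms(2,3) FS_D[OF rep_FS[OF assms(1)]]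
    by (intro P.finsum_cong') (auto simp: Pi_def)
qed

end


context t3
begin

lemma tlift_addf: assumes "X \<in> carrier T" "\<phi>1 \<in> carrier M \<times> carrier N \<rightarrow> carrier P" "\<phi>2 \<in> carrier M \<times> carrier N \<rightarrow> carrier P"
  shows "tlift R M N P (\<lambda>q. \<phi>1 q \<oplus>\<^bsub>P\<^esub> \<phi>2 q) X = tlift R M N P \<phi>1 X \<oplus>\<^bsub>P\<^esub> tlift R M N P \<phi>2 X"
proof -
  have f: "rep X \<in> FS" by (rule rep_FS[OF assms(1)])
  have A: "fsupp R (rep X) \<subseteq> carrier M \<times> carrier N" "finite (fsupp R (rep X))" using FS_D[OF f] by auto
  show ?thesis unfolding tlift_def
  proof -
    have "(\<Oplus>\<^bsub>P\<^esub>q\<in>fsupp R (rep X). rep X q \<odot>\<^bsub>P\<^esub> (\<phi>1 q \<oplus>\<^bsub>P\<^esub> \<phi>2 q)) =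
          (\<Oplus>\<^bsub>P\<^esub>q\<in>fsupp R (rep X). rep X q \<odot>\<^bsub>P\<^esub> \<phi>1 q \<oplus>\<^bsub>P\<^esub> rep X q \<odot>\<^bsub>P\<^esub> \<phi>2 q)"
      using A assms FS_D[OF f] by (intro P.finsum_cong') (auto simp: Pi_def P.smult_r_distr)
    also have "\<dots> = (\<Oplus>\<^bsub>P\<^esub>q\<in>fsupp R (rep X). rep X q \<odot>\<^bsub>P\<^esub> \<phi>1 q) \<oplus>\<^bsub>P\<^esub> (\<Oplus>\<^bsub>P\<^esub>q\<in>fsupp R (rep X). rep X q \<odot>\<^bsub>P\<^esub> \<phi>2 q)"
      using A assms FS_D[OF f] by (intro P.finsum_addf) (auto simp: Pi_def)
    finally show "(\<Oplus>\<^bsub>P\<^esub>q\<in>fsupp R (rep X). rep X q \<odot>\<^bsub>P\<^esub> (\<phi>1 q \<oplus>\<^bsub>P\<^esub> \<phi>2 q)) =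
      (\<Oplus>\<^bsub>P\<^esub>q\<in>fsupp R (rep X). rep X q \<odot>\<^bsub>P\<^esub> \<phi>1 q) \<oplus>\<^bsub>P\<^esub> (\<Oplus>\<^bsub>P\<^esub>q\<in>fsupp R (rep X). rep X q \<odot>\<^bsub>P\<^esub> \<phi>2 q)" .
  qed
qed

lemma tlift_smultf: assumes "X \<in> carrier T" "\<phi> \<in> carrier M \<times> carrier N \<rightarrow> carrier P" "c \<in> carrier R"
  shows "tlift R M N P (\<lambda>q. c \<odot>\<^bsub>P\<^esub> \<phi> q) X = c \<odot>\<^bsub>P\<^esub> tlift R M N P \<phi> X"
proof -
  have f: "rep X \<in> FS" by (rule rep_FS[OF assms(1)])
  have A: "fsupp R (rep X) \<subseteq> carrier M \<times> carrier N" "finite (fsupp R (rep X))" using FS_D[OF f] by auto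
  show ?thesis unfolding tlift_def
  proof -
    have "(\<Oplus>\<^bsub>P\<^esub>q\<in>fsupp R (rep X). rep X q \<odot>\<^bsub>P\<^esub> (c \<odot>\<^bsub>P\<^esub> \<phi> q)) =
          (\<Oplus>\<^bsub>P\<^esub>q\<in>fsupp R (rep X). c \<odot>\<^bsub>P\<^esub> (rep X q \<odot>\<^bsub>P\<^esub> \<phi> q))"
      using A assms FS_D[OF f]
      by (intro P.finsum_cong') (auto simp: Pi_def P.smult_assoc1[symmetric] R.m_comm)
    also have "\<dots> = c \<odot>\<^bsub>P\<^esub> (\<Oplus>\<^bsub>P\<^esub>q\<in>fsupp R (rep X). rep X q \<odot>\<^bsub>P\<^esub> \<phi> q)"
      using A assms FS_D[OF f] by (intro P.finsum_smult_ldistr[symmetric]) (auto simp: Pi_def)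
    finally show "(\<Oplus>\<^bsub>P\<^esub>q\<in>fsupp R (rep X). rep X q \<odot>\<^bsub>P\<^esub> (c \<odot>\<^bsub>P\<^esub> \<phi> q)) =
      c \<odot>\<^bsub>P\<^esub> (\<Oplus>\<^bsub>P\<^esub>q\<in>fsupp R (rep X). rep X q \<odot>\<^bsub>P\<^esub> \<phi> q)" .
  qed
qed

lemma tlift_hom: assumes "module R Q" "linear_map R P Q h" "X \<in> carrier T" "\<phi> \<in> carrier M \<times> carrier N \<rightarrow> carrier P"
  shows "h (tlift R M N P \<phi> X) = tlift R M N Q (\<lambda>q. h (\<phi> q)) X"
proof -
  interpret Q: module R Q by fact
  have f: "rep X \<in> FS" by (rule rep_FS[OF assms(3)])
  have A: "fsupp R (rep X) \<subseteq> carrier M \<times> carrier N" "finite (fsupp R (rep X))" using FS_D[OF f] by auto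
  have "h (tlift R M N P \<phi> X) = (\<Oplus>\<^bsub>Q\<^esub>i\<in>fsupp R (rep X). h (rep X i \<odot>\<^bsub>P\<^esub> \<phi> i))"
    unfolding tlift_def
    using A assms(4) FS_D[OF f] by (intro lin_finsum[OF P.module_axioms assms(1,2) A(2)]) (auto simp: Pi_def)
  also have "\<dots> = tlift R M N Q (\<lambda>q. h (\<phi> q)) X"
    unfolding tlift_def
    using A assms(4) FS_D[OF f] lin_smult[OF assms(2)] lin_closed[OF assms(2)]
    by (intro Q.finsum_cong') (auto simp: Pi_def)
  finally show ?thesis .
qed

lemma tlift_param_lin: assumes "module R C" "X \<in> carrier T"
  "\<And>a b. a \<in> carrier M \<Longrightarrow> b \<in> carrier N \<Longrightarrow> linear_map R C P (\<lambda>c. \<phi> c (a, b))"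
  shows "linear_map R C P (\<lambda>c. tlift R M N P (\<phi> c) X)"
proof -
  interpret C: module R C by fact
  have cl: "\<phi> c \<in> carrier M \<times> carrier N \<rightarrow> carrier P" if "c \<in> carrier C" for c
    using lin_closed[OF assms(3) that] by auto
  show ?thesis unfolding linear_map_def
  proof (intro conjI ballI)
    show "(\<lambda>c. tlift R M N P (\<phi> c) X) \<in> carrier C \<rightarrow> carrier P" using tlift_closed[OF assms(2) cl] by auto
  next
    fix x y assume xy: "x \<in> carrier C" "y \<in> carrier C"
    have "tlift R M N P (\<phi> (x \<oplus>\<^bsub>C\<^esub> y)) X = tlift R M N P (\<lambda>q. \<phi> x q \<oplus>\<^bsub>P\<^esub> \<phi> y q) X"
      using xy cl by (intro tlift_cong[OF assms(2)]) (auto simp: lin_add[OF assms(3)] Pi_def)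
    also have "\<dots> = tlift R M N P (\<phi> x) X \<oplus>\<^bsub>P\<^esub> tlift R M N P (\<phi> y) X"
      by (rule tlift_addf[OF assms(2) cl cl], fact+)
    finally show "tlift R M N P (\<phi> (x \<oplus>\<^bsub>C\<^esub> y)) X = tlift R M N P (\<phi> x) X \<oplus>\<^bsub>P\<^esub> tlift R M N P (\<phi> y) X" .
  next
    fix a x assume ax: "a \<in> carrier R" "x \<in> carrier C"
    have "tlift R M N P (\<phi> (a \<odot>\<^bsub>C\<^esub> x)) X = tlift R M N P (\<lambda>q. a \<odot>\<^bsub>P\<^esub> \<phi> x q) X"
      using ax cl by (intro tlift_cong[OF assms(2)]) (auto simp: lin_smult[OF assms(3)] Pi_def)
    also have "\<dots> = a \<odot>\<^bsub>P\<^esub> tlift R M N P (\<phi> x) X"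
      by (rule tlift_smultf[OF assms(2) cl], fact+)
    finally show "tlift R M N P (\<phi> (a \<odot>\<^bsub>C\<^esub> x)) X = a \<odot>\<^bsub>P\<^esub> tlift R M N P (\<phi> x) X" .
  qed
qed

end

lemma t2I: "module R M \<Longrightarrow> module R N \<Longrightarrow> t2 R M N"
  unfolding t2_def using module.axioms(1) by blast

lemma t3I: "module R M \<Longrightarrow> module R N \<Longrightarrow> module R P \<Longrightarrow> t3 R M N P"
  unfolding t3_def using t2I by blast

context t2
begin

lemma sum_deltas: assumes "finite A" "A \<subseteq> carrier M \<times> carrier N" "\<And>p. g p \<in> carrier R"
  shows "(\<Oplus>\<^bsub>T\<^esub>q\<in>A. g q \<odot>\<^bsub>T\<^esub> cls (fs_delta R (fst q) (snd q))) = cls (\<lambda>p. if p \<in> A then g p else \<zero>\<^bsub>R\<^esub>)"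
  using assms(1,2)
proof (induction A rule: finite_induct)
  interpret TT: module R T by (rule T_module)
  case empty
  show ?case by (simp add: T_zero)
next
  interpret TT: module R T by (rule T_module)
  case (insert x A)
  have fsA: "(\<lambda>p. if p \<in> A then g p else \<zero>\<^bsub>R\<^esub>) \<in> FS"
    unfolding FS_iff fsupp_def using insert assms(3) by (auto intro: finite_subset)
  have dx: "fs_delta R (fst x) (snd x) \<in> FS" using insert by (intro delta_FS) auto
  have "(\<Oplus>\<^bsub>T\<^esub>q\<in>insert x A. g q \<odot>\<^bsub>T\<^esub> cls (fs_delta R (fst q) (snd q)))
      = g x \<odot>\<^bsub>T\<^esub> cls (fs_delta R (fst x) (snd x)) \<oplus>\<^bsub>T\<^esub> (\<Oplus>\<^bsub>T\<^esub>q\<in>A. g q \<odot>\<^bsub>T\<^esub> cls (fs_delta R (fst q) (snd q)))"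
    using insert assms(3) by (intro TT.finsum_insert) (auto simp: Pi_def intro!: cls_closed delta_FS)
  also have "\<dots> = cls (\<lambda>p. g x \<otimes>\<^bsub>R\<^esub> fs_delta R (fst x) (snd x) p \<oplus>\<^bsub>R\<^esub> (if p \<in> A then g p else \<zero>\<^bsub>R\<^esub>))"
    using insert by (simp add: T_smult[OF assms(3) dx] T_add[OF FS_smult[OF assms(3) dx] fsA])
  also have "\<dots> = cls (\<lambda>p. if p \<in> insert x A then g p else \<zero>\<^bsub>R\<^esub>)"
    by (rule cls_ext, rule FS_add[OF FS_smult[OF assms(3) dx] fsA])
       (use insert assms(3) in \<open>auto simp: fs_delta_def\<close>)
  finally show ?case .
qed

lemma tlift_tens_id: assumes "X \<in> carrier T" shows "tlift R M N T (\<lambda>(a, b). tens R M N a b) X = X"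
proof -
  let ?g = "rep X"
  have f: "?g \<in> FS" by (rule rep_FS[OF assms(1)])
  have "tlift R M N T (\<lambda>(a, b). tens R M N a b) X = (\<Oplus>\<^bsub>T\<^esub>q\<in>fsupp R ?g. ?g q \<odot>\<^bsub>T\<^esub> cls (fs_delta R (fst q) (snd q)))"
    unfolding tlift_def tens_def by (simp add: case_prod_beta)
  also have "\<dots> = cls (\<lambda>p. if p \<in> fsupp R ?g then ?g p else \<zero>\<^bsub>R\<^esub>)"
    using FS_D[OF f] by (intro sum_deltas) auto
  also have "\<dots> = cls ?g" by (rule arg_cong[where f = cls]) (auto simp: fsupp_def)
  also have "\<dots> = X" by (rule cls_rep'[OF assms])
  finally show ?thesis .
qed

lemma tlift_expand: assumes "module R Q" "linear_map R T Q h" "X \<in> carrier T"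
  shows "h X = tlift R M N Q (\<lambda>(a, b). h (tens R M N a b)) X"
proof -
  interpret t3 R M N T by (rule t3I, rule M.module_axioms, rule N.module_axioms, rule T_module)
  have "h X = h (tlift R M N T (\<lambda>(a, b). tens R M N a b) X)" using tlift_tens_id[OF assms(3)] by simp
  also have "\<dots> = tlift R M N Q (\<lambda>q. h ((\<lambda>(a, b). tens R M N a b) q)) X"
    by (rule tlift_hom[OF assms(1,2,3)]) (auto simp: tens_closed)
  also have "\<dots> = tlift R M N Q (\<lambda>(a, b). h (tens R M N a b)) X"
    by (simp add: split_def)
  finally show ?thesis .
qed

end

lemma T_module_g: "module R M \<Longrightarrow> module R N \<Longrightarrow> module R (tensor R M N)"
  by (rule t2.T_module[OF t2I])

lemma tens_closed_g: "module R M \<Longrightarrow> module R N \<Longrightarrow> a \<in> carrier M \<Longrightarrow> b \<in> carrier N \<Longrightarrow>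
   tens R M N a b \<in> carrier (tensor R M N)"
  by (rule t2.tens_closed[OF t2I])

lemma tens_bil_g: "module R M \<Longrightarrow> module R N \<Longrightarrow> bil R M N (tensor R M N) (\<lambda>(a, b). tens R M N a b)"
  by (rule t2.tens_bil[OF t2I])

lemma tens_lin_l: "module R M \<Longrightarrow> module R N \<Longrightarrow> b \<in> carrier N \<Longrightarrow> linear_map R M (tensor R M N) (\<lambda>a. tens R M N a b)"
  using bil_l[OF tens_bil_g[of R M N]] by simp

lemma tens_lin_r: "module R M \<Longrightarrow> module R N \<Longrightarrow> a \<in> carrier M \<Longrightarrow> linear_map R N (tensor R M N) (\<lambda>b. tens R M N a b)"
  using bil_r[OF tens_bil_g[of R M N]] by simp

lemma tlift_tens_g: "module R M \<Longrightarrow> module R N \<Longrightarrow> module R P \<Longrightarrow> bil R M N P \<phi> \<Longrightarrow>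
   a \<in> carrier M \<Longrightarrow> b \<in> carrier N \<Longrightarrow> tlift R M N P \<phi> (tens R M N a b) = \<phi> (a, b)"
  by (rule t3.tlift_tens[OF t3I])

lemma tlift_lin_g: "module R M \<Longrightarrow> module R N \<Longrightarrow> module R P \<Longrightarrow> bil R M N P \<phi> \<Longrightarrow>
   linear_map R (tensor R M N) P (tlift R M N P \<phi>)"
  by (rule t3.tlift_lin[OF t3I])

lemma tlift_closed_g: assumes "module R M" "module R N" "module R P" "X \<in> carrier (tensor R M N)"
   "\<And>a b. a \<in> carrier M \<Longrightarrow> b \<in> carrier N \<Longrightarrow> \<phi> (a, b) \<in> carrier P"
 shows "tlift R M N P \<phi> X \<in> carrier P"
proof -
  interpret t3 R M N P by (rule t3I; fact)
  show ?thesis by (rule tlift_closed) (use assms in auto)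
qed

lemma tlift_cong_g: assumes "module R M" "module R N" "module R P" "X \<in> carrier (tensor R M N)"
   "\<And>a b. a \<in> carrier M \<Longrightarrow> b \<in> carrier N \<Longrightarrow> \<phi> (a, b) = \<phi>' (a, b)"
   "\<And>a b. a \<in> carrier M \<Longrightarrow> b \<in> carrier N \<Longrightarrow> \<phi>' (a, b) \<in> carrier P"
 shows "tlift R M N P \<phi> X = tlift R M N P \<phi>' X"
proof -
  interpret t3 R M N P by (rule t3I; fact)
  show ?thesis by (rule tlift_cong) (use assms in auto)
qed

lemma tlift_addf_g: assumes "module R M" "module R N" "module R P" "X \<in> carrier (tensor R M N)"
   "\<And>a b. a \<in> carrier M \<Longrightarrow> b \<in> carrier N \<Longrightarrow> \<phi>1 (a, b) \<in> carrier P"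
   "\<And>a b. a \<in> carrier M \<Longrightarrow> b \<in> carrier N \<Longrightarrow> \<phi>2 (a, b) \<in> carrier P"
 shows "tlift R M N P (\<lambda>q. \<phi>1 q \<oplus>\<^bsub>P\<^esub> \<phi>2 q) X = tlift R M N P \<phi>1 X \<oplus>\<^bsub>P\<^esub> tlift R M N P \<phi>2 X"
proof -
  interpret t3 R M N P by (rule t3I; fact)
  show ?thesis by (rule tlift_addf) (use assms in auto)
qed

lemma tlift_smultf_g: assumes "module R M" "module R N" "module R P" "X \<in> carrier (tensor R M N)"
   "\<And>a b. a \<in> carrier M \<Longrightarrow> b \<in> carrier N \<Longrightarrow> \<phi> (a, b) \<in> carrier P" "c \<in> carrier R"
 shows "tlift R M N P (\<lambda>q. c \<odot>\<^bsub>P\<^esub> \<phi> q) X = c \<odot>\<^bsub>P\<^esub> tlift R M N P \<phi> X"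
proof -
  interpret t3 R M N P by (rule t3I; fact)
  show ?thesis by (rule tlift_smultf) (use assms in auto)
qed

lemma tlift_hom_g: assumes "module R M" "module R N" "module R P" "module R Q" "linear_map R P Q h"
   "X \<in> carrier (tensor R M N)"
   "\<And>a b. a \<in> carrier M \<Longrightarrow> b \<in> carrier N \<Longrightarrow> \<phi> (a, b) \<in> carrier P"
 shows "h (tlift R M N P \<phi> X) = tlift R M N Q (\<lambda>q. h (\<phi> q)) X"
proof -
  interpret t3 R M N P by (rule t3I; fact)
  show ?thesis by (rule tlift_hom) (use assms in auto)
qed

lemma tlift_param_lin_g: assumes "module R M" "module R N" "module R P" "module R C"
   "X \<in> carrier (tensor R M N)"
   "\<And>a b. a \<in> carrier M \<Longrightarrow> b \<in> carrier N \<Longrightarrow> linear_map R C P (\<lambda>c. \<phi> c (a, b))"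
 shows "linear_map R C P (\<lambda>c. tlift R M N P (\<phi> c) X)"
proof -
  interpret t3 R M N P by (rule t3I; fact)
  show ?thesis by (rule tlift_param_lin) (use assms in auto)
qed

lemma tlift_expand_g: "module R M \<Longrightarrow> module R N \<Longrightarrow> module R Q \<Longrightarrow> linear_map R (tensor R M N) Q h \<Longrightarrow>
   X \<in> carrier (tensor R M N) \<Longrightarrow> h X = tlift R M N Q (\<lambda>(a, b). h (tens R M N a b)) X"
  by (rule t2.tlift_expand[OF t2I])

lemma tlift_tens_id_g: "module R M \<Longrightarrow> module R N \<Longrightarrow> X \<in> carrier (tensor R M N) \<Longrightarrow>
   tlift R M N (tensor R M N) (\<lambda>(a, b). tens R M N a b) X = X"
  by (rule t2.tlift_tens_id[OF t2I])

lemma lin_ext_g: assumes "module R M" "module R N" "module R Q"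
  "linear_map R (tensor R M N) Q h1" "linear_map R (tensor R M N) Q h2"
  "\<And>a b. a \<in> carrier M \<Longrightarrow> b \<in> carrier N \<Longrightarrow> h1 (tens R M N a b) = h2 (tens R M N a b)"
  "X \<in> carrier (tensor R M N)"
  shows "h1 X = h2 X"
proof -
  have "h1 X = tlift R M N Q (\<lambda>(a, b). h1 (tens R M N a b)) X" by (rule tlift_expand_g; fact)
  also have "\<dots> = tlift R M N Q (\<lambda>(a, b). h2 (tens R M N a b)) X"
    using assms by (intro tlift_cong_g) (auto intro!: lin_closed[OF assms(5)] tens_closed_g)
  also have "\<dots> = h2 X" by (rule tlift_expand_g[symmetric]; fact)
  finally show ?thesis .
qed

lemma ring_module: assumes "cring R" shows "module R (ring_as_module R)"
proof -
  interpret R: cring R by fact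
  show ?thesis
  proof (rule moduleI)
    show "abelian_group (ring_as_module R)"
      by (rule abelian_groupI) (auto simp: ring_as_module_def R.a_ac R.l_neg intro: R.a_inv_closed)
  qed (auto simp: ring_as_module_def assms R.l_distr R.r_distr R.m_assoc)
qed


lemma tspan_sub: assumes "module R M" "module R N" "S \<subseteq> carrier M \<times> carrier N"
  shows "x \<in> tspan R M N S \<Longrightarrow> x \<in> carrier (tensor R M N)"
proof (induction rule: tspan.induct)
  interpret T: module R "tensor R M N" by (rule T_module_g; fact)
  case tspan_zero show ?case by simp
next
  interpret T: module R "tensor R M N" by (rule T_module_g; fact)
  case (tspan_gen a b) then show ?case using assms by (auto intro: tens_closed_g)
next
  interpret T: module R "tensor R M N" by (rule T_module_g; fact)
  case (tspan_add x y) then show ?case by simp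
next
  interpret T: module R "tensor R M N" by (rule T_module_g; fact)
  case (tspan_smult r x) then show ?case by simp
qed

lemma tmap_bil: assumes "module R M" "module R N" "module R M'" "module R N'"
  "linear_map R M M' f" "linear_map R N N' g"
  shows "bil R M N (tensor R M' N') (\<lambda>(m, n). tens R M' N' (f m) (g n))"
proof (rule bilI)
  fix b assume "b \<in> carrier N"
  then show "linear_map R M (tensor R M' N') (\<lambda>a. case (a, b) of (m, n) \<Rightarrow> tens R M' N' (f m) (g n))"
    using lin_comp[OF assms(5) tens_lin_l[OF assms(3,4) lin_closed[OF assms(6)]]] by simp
next
  fix a assume "a \<in> carrier M"
  then show "linear_map R N (tensor R M' N') (\<lambda>b. case (a, b) of (m, n) \<Rightarrow> tens R M' N' (f m) (g n))"
    using lin_comp[OF assms(6) tens_lin_r[OF assms(3,4) lin_closed[OF assms(5)]]] by simp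
qed

lemma tmap_tens: assumes "module R M" "module R N" "module R M'" "module R N'"
  "linear_map R M M' f" "linear_map R N N' g" "a \<in> carrier M" "b \<in> carrier N"
  shows "tmap R M N M' N' f g (tens R M N a b) = tens R M' N' (f a) (g b)"
  unfolding tmap_def using tlift_tens_g[OF assms(1,2) T_module_g[OF assms(3,4)] tmap_bil[OF assms(1-6)] assms(7,8)]
  by simp

lemma tmap_lin: assumes "module R M" "module R N" "module R M'" "module R N'"
  "linear_map R M M' f" "linear_map R N N' g"
  shows "linear_map R (tensor R M N) (tensor R M' N') (tmap R M N M' N' f g)"
  unfolding tmap_def by (rule tlift_lin_g[OF assms(1,2) T_module_g[OF assms(3,4)] tmap_bil[OF assms]])

definition lin2 :: "'r ring \<Rightarrow> ('r,'m) module \<Rightarrow> ('r,'n) module \<Rightarrow> ('r,'p) module \<Rightarrow> ('m \<Rightarrow> 'n \<Rightarrow> 'p) \<Rightarrow> bool" where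
  "lin2 R M N P h \<longleftrightarrow> (\<forall>b\<in>carrier N. linear_map R M P (\<lambda>a. h a b)) \<and> (\<forall>a\<in>carrier M. linear_map R N P (h a))"

lemma lin2_bil: "lin2 R M N P h \<Longrightarrow> bil R M N P (\<lambda>(a, b). h a b)"
  unfolding lin2_def bil_def by simp

lemma lin2I: "(\<And>b. b \<in> carrier N \<Longrightarrow> linear_map R M P (\<lambda>a. h a b)) \<Longrightarrow> (\<And>a. a \<in> carrier M \<Longrightarrow> linear_map R N P (h a))
  \<Longrightarrow> lin2 R M N P h"
  unfolding lin2_def by simp

lemma lin2_l: "lin2 R M N P h \<Longrightarrow> b \<in> carrier N \<Longrightarrow> linear_map R M P (\<lambda>a. h a b)"
  unfolding lin2_def by simp
lemma lin2_r: "lin2 R M N P h \<Longrightarrow> a \<in> carrier M \<Longrightarrow> linear_map R N P (h a)"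
  unfolding lin2_def by simp
lemma lin2_closed: "lin2 R M N P h \<Longrightarrow> a \<in> carrier M \<Longrightarrow> b \<in> carrier N \<Longrightarrow> h a b \<in> carrier P"
  unfolding lin2_def using lin_closed by metis

locale setting =
  fixes R :: "'r ring" and U :: "('r, 'u) module"
    and eps :: "'u \<Rightarrow> 'r" and psi :: "'u \<Rightarrow> ('u \<times> 'u \<Rightarrow> 'r) set"
    and sigma :: "('u \<times> 'u \<Rightarrow> 'r) set \<Rightarrow> 'u" and eta :: "'r \<Rightarrow> 'u"
    and F :: "nat \<Rightarrow> 'u set"
  assumes cr: "cring R"
    and mon: "coalg_ab_monoid R U eps psi sigma eta"
    and gf: "good_filtration R U eps psi F"
    and gb: "good_basepoint R eps F eta"
begin

abbreviation "T \<equiv> tensor R U U"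
abbreviation "RR \<equiv> ring_as_module R"
abbreviation "tns \<equiv> tens R U U"

lemma coalg: "coalgebra R U eps psi" using mon unfolding coalg_ab_monoid_def by simp

lemma U_mod: "module R U" using coalg unfolding coalgebra_def by simp
lemma T_mod: "module R T" by (rule T_module_g[OF U_mod U_mod])
lemma RR_mod: "module R RR" by (rule ring_module[OF cr])
lemma TT_mod: "module R (tensor R T T)" by (rule T_module_g[OF T_mod T_mod])

lemma eps_lin: "linear_map R U RR eps" using coalg unfolding coalgebra_def by simp
lemma psi_lin: "linear_map R U T psi" using coalg unfolding coalgebra_def by simp
lemma counit_l: "c \<in> carrier U \<Longrightarrow> tlift R U U U (\<lambda>(a, b). eps a \<odot>\<^bsub>U\<^esub> b) (psi c) = c"
  using coalg unfolding coalgebra_def by simp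
lemma counit_r: "c \<in> carrier U \<Longrightarrow> tlift R U U U (\<lambda>(a, b). eps b \<odot>\<^bsub>U\<^esub> a) (psi c) = c"
  using coalg unfolding coalgebra_def by simp
lemma coassoc: "c \<in> carrier U \<Longrightarrow> tassoc R U U U (tmap R U U T U psi (\<lambda>x. x) (psi c))
                     = tmap R U U U T (\<lambda>x. x) psi (psi c)"
  using coalg unfolding coalgebra_def by simp
lemma cocomm: "c \<in> carrier U \<Longrightarrow> tswap R U U (psi c) = psi c"
  using coalg unfolding coalgebra_def by simp

lemma sigma_map: "coalg_map R T (tensor_counit R U U eps eps) (tensor_coprod R U U psi psi) U eps psi sigma"
  using mon unfolding coalg_ab_monoid_def by simp
lemma sigma_lin: "linear_map R T U sigma" using sigma_map unfolding coalg_map_def by simp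
lemma sigma_eps: "x \<in> carrier T \<Longrightarrow> eps (sigma x) = tensor_counit R U U eps eps x"
  using sigma_map unfolding coalg_map_def by simp
lemma sigma_psi: "x \<in> carrier T \<Longrightarrow> psi (sigma x) = tmap R T T U U sigma sigma (tensor_coprod R U U psi psi x)"
  using sigma_map unfolding coalg_map_def by simp

lemma eta_map: "coalg_map R RR (\<lambda>r. r) (ring_coprod R) U eps psi eta"
  using mon unfolding coalg_ab_monoid_def by simp
lemma eta_lin: "linear_map R RR U eta" using eta_map unfolding coalg_map_def by simp
lemma eta_eps: "r \<in> carrier R \<Longrightarrow> eps (eta r) = r"
  using eta_map unfolding coalg_map_def by (simp add: ring_as_module_def)
lemma eta_psi: "r \<in> carrier R \<Longrightarrow> psi (eta r) = tmap R RR RR U U eta eta (ring_coprod R r)"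
  using eta_map unfolding coalg_map_def by (simp add: ring_as_module_def)

lemma unit_l: "r \<in> carrier R \<Longrightarrow> u \<in> carrier U \<Longrightarrow> sigma (tns (eta r) u) = r \<odot>\<^bsub>U\<^esub> u"
  using mon unfolding coalg_ab_monoid_def by simp
lemma unit_r: "r \<in> carrier R \<Longrightarrow> u \<in> carrier U \<Longrightarrow> sigma (tns u (eta r)) = r \<odot>\<^bsub>U\<^esub> u"
  using mon unfolding coalg_ab_monoid_def by simp
lemma sig_comm: "a \<in> carrier U \<Longrightarrow> b \<in> carrier U \<Longrightarrow> sigma (tns a b) = sigma (tns b a)"
  using mon unfolding coalg_ab_monoid_def by simp

lemma eps_closed: "u \<in> carrier U \<Longrightarrow> eps u \<in> carrier R"
  using lin_closed[OF eps_lin] by (simp add: ring_as_module_def)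
lemma eta_closed: "r \<in> carrier R \<Longrightarrow> eta r \<in> carrier U"
  using lin_closed[OF eta_lin] by (simp add: ring_as_module_def)
lemma psi_closed: "u \<in> carrier U \<Longrightarrow> psi u \<in> carrier T"
  using lin_closed[OF psi_lin] by simp
lemma sigma_closed: "x \<in> carrier T \<Longrightarrow> sigma x \<in> carrier U"
  using lin_closed[OF sigma_lin] by simp
lemma tns_closed: "a \<in> carrier U \<Longrightarrow> b \<in> carrier U \<Longrightarrow> tns a b \<in> carrier T"
  by (rule tens_closed_g[OF U_mod U_mod])

lemma eta_smult: "r \<in> carrier R \<Longrightarrow> eta r = r \<odot>\<^bsub>U\<^esub> eta \<one>\<^bsub>R\<^esub>"
proof -
  assume r: "r \<in> carrier R"
  interpret R: cring R by (rule cr)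
  have "eta r = eta (r \<odot>\<^bsub>RR\<^esub> \<one>\<^bsub>R\<^esub>)" using r by (simp add: ring_as_module_def)
  also have "\<dots> = r \<odot>\<^bsub>U\<^esub> eta \<one>\<^bsub>R\<^esub>" using lin_smult[OF eta_lin r] by (simp add: ring_as_module_def)
  finally show ?thesis .
qed

lemma eps_add: "u \<in> carrier U \<Longrightarrow> v \<in> carrier U \<Longrightarrow> eps (u \<oplus>\<^bsub>U\<^esub> v) = eps u \<oplus>\<^bsub>R\<^esub> eps v"
  using lin_add[OF eps_lin] by (simp add: ring_as_module_def)
lemma eps_smult: "r \<in> carrier R \<Longrightarrow> u \<in> carrier U \<Longrightarrow> eps (r \<odot>\<^bsub>U\<^esub> u) = r \<otimes>\<^bsub>R\<^esub> eps u"
  using lin_smult[OF eps_lin] by (simp add: ring_as_module_def)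

section \<open>Filtration\<close>

lemma F_sub: "submodule (F s) R U" using gf unfolding good_filtration_def by simp
lemma F_carrier: "F s \<subseteq> carrier U"
  using F_sub[of s] unfolding submodule_def subgroup_def by simp
lemma F_Suc: "F s \<subseteq> F (Suc s)" using gf unfolding good_filtration_def by simp
lemma F_mono: "s \<le> t \<Longrightarrow> F s \<subseteq> F t"
  by (induction t rule: dec_induct) (use F_Suc in auto)
lemma F_bij: "bij_betw eps (F 0) (carrier R)" using gf unfolding good_filtration_def by simp
lemma F_exh: "u \<in> carrier U \<Longrightarrow> \<exists>s. u \<in> F s" using gf unfolding good_filtration_def by auto
lemma F_psi: assumes "u \<in> F s" shows "psi u \<in> tspan R U U {(a, b) | a b t v. t + v = s \<and> a \<in> F t \<and> b \<in> F v}"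
proof -
  have "psi ` F s \<subseteq> tspan R U U {(a, b) | a b t v. t + v = s \<and> a \<in> F t \<and> b \<in> F v}"
    using gf unfolding good_filtration_def by blast
  then show ?thesis using assms by blast
qed

lemma F_add: "u \<in> F s \<Longrightarrow> v \<in> F s \<Longrightarrow> u \<oplus>\<^bsub>U\<^esub> v \<in> F s"
  using F_sub[of s] unfolding submodule_def subgroup_def by simp
lemma F_smult: "r \<in> carrier R \<Longrightarrow> u \<in> F s \<Longrightarrow> r \<odot>\<^bsub>U\<^esub> u \<in> F s"
  using F_sub[of s] unfolding submodule_def submodule_axioms_def by simp
lemma F_zero: "\<zero>\<^bsub>U\<^esub> \<in> F s"
  using F_sub[of s] unfolding submodule_def subgroup_def by simp

lemma eta_F0: "r \<in> carrier R \<Longrightarrow> eta r \<in> F 0" using gb unfolding good_basepoint_def by simp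

lemma F0_eta: assumes "u \<in> F 0" shows "u = eta (eps u)"
proof -
  have u: "u \<in> carrier U" using assms F_carrier by auto
  have "eta (eps u) \<in> F 0" by (rule eta_F0[OF eps_closed[OF u]])
  moreover have "eps (eta (eps u)) = eps u" by (rule eta_eps[OF eps_closed[OF u]])
  ultimately show ?thesis using F_bij assms unfolding bij_betw_def inj_on_def by metis
qed

lemma deg_sub: "{(a, b) | a b t v. t + v = s \<and> a \<in> F t \<and> b \<in> F v} \<subseteq> carrier U \<times> carrier U"
  using F_carrier by blast

lemma psi_F_T: "x \<in> tspan R U U {(a, b) | a b t v. t + v = s \<and> a \<in> F t \<and> b \<in> F v} \<Longrightarrow> x \<in> carrier T"
  by (rule tspan_sub[OF U_mod U_mod deg_sub])

end


definition lin3 :: "'r ring \<Rightarrow> ('r,'u) module \<Rightarrow> ('r,'p) module \<Rightarrow> ('u \<Rightarrow> 'u \<Rightarrow> 'u \<Rightarrow> 'p) \<Rightarrow> bool" where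
  "lin3 R U P G \<longleftrightarrow> (\<forall>b\<in>carrier U. \<forall>c\<in>carrier U. linear_map R U P (\<lambda>a. G a b c)) \<and>
     (\<forall>a\<in>carrier U. \<forall>c\<in>carrier U. linear_map R U P (\<lambda>b. G a b c)) \<and>
     (\<forall>a\<in>carrier U. \<forall>b\<in>carrier U. linear_map R U P (\<lambda>c. G a b c))"

lemma lin3_1: "lin3 R U P G \<Longrightarrow> b \<in> carrier U \<Longrightarrow> c \<in> carrier U \<Longrightarrow> linear_map R U P (\<lambda>a. G a b c)"
  unfolding lin3_def by blast
lemma lin3_2: "lin3 R U P G \<Longrightarrow> a \<in> carrier U \<Longrightarrow> c \<in> carrier U \<Longrightarrow> linear_map R U P (\<lambda>b. G a b c)"
  unfolding lin3_def by blast
lemma lin3_3: "lin3 R U P G \<Longrightarrow> a \<in> carrier U \<Longrightarrow> b \<in> carrier U \<Longrightarrow> linear_map R U P (\<lambda>c. G a b c)"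
  unfolding lin3_def by blast
lemma lin3_closed: "lin3 R U P G \<Longrightarrow> a \<in> carrier U \<Longrightarrow> b \<in> carrier U \<Longrightarrow> c \<in> carrier U \<Longrightarrow> G a b c \<in> carrier P"
  using lin3_3 lin_closed by metis

context setting
begin

definition sw :: "('r, 'p) module \<Rightarrow> ('u \<Rightarrow> 'u \<Rightarrow> 'p) \<Rightarrow> 'u \<Rightarrow> 'p" where
  "sw P h u = tlift R U U P (\<lambda>(a, b). h a b) (psi u)"

lemma sw_closed: assumes "module R P" "u \<in> carrier U" "\<And>a b. a \<in> carrier U \<Longrightarrow> b \<in> carrier U \<Longrightarrow> h a b \<in> carrier P"
  shows "sw P h u \<in> carrier P"
  unfolding sw_def using assms by (intro tlift_closed_g[OF U_mod U_mod assms(1) psi_closed]) auto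

lemma sw_lin: assumes "module R P" "lin2 R U U P h" shows "linear_map R U P (sw P h)"
  unfolding sw_def by (rule lin_comp[OF psi_lin tlift_lin_g[OF U_mod U_mod assms(1) lin2_bil[OF assms(2)]]])

lemma sw_cong: assumes "module R P" "u \<in> carrier U" "\<And>a b. a \<in> carrier U \<Longrightarrow> b \<in> carrier U \<Longrightarrow> h a b = h' a b"
  "\<And>a b. a \<in> carrier U \<Longrightarrow> b \<in> carrier U \<Longrightarrow> h' a b \<in> carrier P"
  shows "sw P h u = sw P h' u"
  unfolding sw_def using assms by (intro tlift_cong_g[OF U_mod U_mod assms(1) psi_closed]) auto

lemma sw_hom: assumes "module R P" "module R Q" "linear_map R P Q k" "u \<in> carrier U"
  "\<And>a b. a \<in> carrier U \<Longrightarrow> b \<in> carrier U \<Longrightarrow> h a b \<in> carrier P"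
  shows "k (sw P h u) = sw Q (\<lambda>a b. k (h a b)) u"
  unfolding sw_def using assms
  by (subst tlift_hom_g[OF U_mod U_mod assms(1,2,3) psi_closed]) (auto simp: split_def)

lemma sw_add: assumes "module R P" "u \<in> carrier U" "\<And>a b. a \<in> carrier U \<Longrightarrow> b \<in> carrier U \<Longrightarrow> h1 a b \<in> carrier P"
  "\<And>a b. a \<in> carrier U \<Longrightarrow> b \<in> carrier U \<Longrightarrow> h2 a b \<in> carrier P"
  shows "sw P (\<lambda>a b. h1 a b \<oplus>\<^bsub>P\<^esub> h2 a b) u = sw P h1 u \<oplus>\<^bsub>P\<^esub> sw P h2 u"
  unfolding sw_def using assms
  by (subst tlift_addf_g[OF U_mod U_mod assms(1) psi_closed, symmetric]) (auto simp: split_def)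

lemma sw_smult: assumes "module R P" "u \<in> carrier U" "\<And>a b. a \<in> carrier U \<Longrightarrow> b \<in> carrier U \<Longrightarrow> h a b \<in> carrier P"
  "c \<in> carrier R"
  shows "sw P (\<lambda>a b. c \<odot>\<^bsub>P\<^esub> h a b) u = c \<odot>\<^bsub>P\<^esub> sw P h u"
  unfolding sw_def using assms
  by (subst tlift_smultf_g[OF U_mod U_mod assms(1) psi_closed, symmetric]) (auto simp: split_def)

lemma sw_param_lin: assumes "module R P" "module R C" "u \<in> carrier U"
  "\<And>a b. a \<in> carrier U \<Longrightarrow> b \<in> carrier U \<Longrightarrow> linear_map R C P (\<lambda>c. h c a b)"
  shows "linear_map R C P (\<lambda>c. sw P (h c) u)"
  unfolding sw_def using assms
  by (intro tlift_param_lin_g[OF U_mod U_mod assms(1,2) psi_closed]) auto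

lemma sw_counit_l: "u \<in> carrier U \<Longrightarrow> sw U (\<lambda>a b. eps a \<odot>\<^bsub>U\<^esub> b) u = u"
  unfolding sw_def using counit_l by simp
lemma sw_counit_r: "u \<in> carrier U \<Longrightarrow> sw U (\<lambda>a b. eps b \<odot>\<^bsub>U\<^esub> a) u = u"
  unfolding sw_def using counit_r by simp

section \<open>Cocommutativity\<close>

lemma swap_bil: "bil R U U T (\<lambda>(a, b). tns b a)"
  by (rule bilI) (auto intro: tens_lin_l[OF U_mod U_mod] tens_lin_r[OF U_mod U_mod])

lemma tswap_tens: "a \<in> carrier U \<Longrightarrow> b \<in> carrier U \<Longrightarrow> tswap R U U (tns a b) = tns b a"
  unfolding tswap_def using tlift_tens_g[OF U_mod U_mod T_mod swap_bil] by simp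

lemma tswap_lin: "linear_map R T T (tswap R U U)"
  unfolding tswap_def by (rule tlift_lin_g[OF U_mod U_mod T_mod swap_bil])

lemma sw_cocomm: assumes "module R P" "lin2 R U U P h" "u \<in> carrier U"
  shows "sw P h u = sw P (\<lambda>a b. h b a) u"
proof -
  let ?k = "tlift R U U P (\<lambda>(a, b). h a b)"
  have kl: "linear_map R T P ?k" by (rule tlift_lin_g[OF U_mod U_mod assms(1) lin2_bil[OF assms(2)]])
  have "sw P h u = ?k (tswap R U U (psi u))" unfolding sw_def cocomm[OF assms(3)] ..
  also have "\<dots> = tlift R U U P (\<lambda>(a, b). ?k (tswap R U U (tns a b))) (psi u)"
    by (rule tlift_expand_g[OF U_mod U_mod assms(1) lin_comp[OF tswap_lin kl] psi_closed[OF assms(3)]])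
  also have "\<dots> = tlift R U U P (\<lambda>(a, b). h b a) (psi u)"
    using assms lin2_closed[OF assms(2)]
    by (intro tlift_cong_g[OF U_mod U_mod assms(1) psi_closed])
       (auto simp: tswap_tens tlift_tens_g[OF U_mod U_mod assms(1) lin2_bil[OF assms(2)]])
  finally show ?thesis unfolding sw_def .
qed

section \<open>Coassociativity\<close>

abbreviation "UT \<equiv> tensor R U T"
abbreviation "TU \<equiv> tensor R T U"
lemma UT_mod: "module R UT" by (rule T_module_g[OF U_mod T_mod])
lemma TU_mod: "module R TU" by (rule T_module_g[OF T_mod U_mod])

lemma assoc_inner_bil: "c \<in> carrier U \<Longrightarrow> bil R U U UT (\<lambda>(a, b). tens R U T a (tns b c))"
  by (rule bilI) (auto intro!: tens_lin_l[OF U_mod T_mod] tns_closed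
      lin_comp[OF tens_lin_l[OF U_mod U_mod] tens_lin_r[OF U_mod T_mod]])

lemma assoc_bil: "bil R T U UT (\<lambda>(X, c). tlift R U U UT (\<lambda>(a, b). tens R U T a (tns b c)) X)"
proof (rule bilI)
  fix c assume c: "c \<in> carrier U"
  show "linear_map R T UT (\<lambda>X. case (X, c) of (X, c) \<Rightarrow> tlift R U U UT (\<lambda>(a, b). tens R U T a (tns b c)) X)"
    using tlift_lin_g[OF U_mod U_mod UT_mod assoc_inner_bil[OF c]] by simp
next
  fix X assume X: "X \<in> carrier T"
  have "linear_map R U UT (\<lambda>c. tlift R U U UT ((\<lambda>c. \<lambda>(a, b). tens R U T a (tns b c)) c) X)"
    by (rule tlift_param_lin_g[OF U_mod U_mod UT_mod U_mod X])
       (auto intro!: lin_comp[OF tens_lin_r[OF U_mod U_mod] tens_lin_r[OF U_mod T_mod]])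
  then show "linear_map R U UT (\<lambda>c. case (X, c) of (X, c) \<Rightarrow> tlift R U U UT (\<lambda>(a, b). tens R U T a (tns b c)) X)"
    by simp
qed

lemma tassoc_tens: "Y \<in> carrier T \<Longrightarrow> c \<in> carrier U \<Longrightarrow>
  tassoc R U U U (tens R T U Y c) = tlift R U U UT (\<lambda>(a, b). tens R U T a (tns b c)) Y"
  unfolding tassoc_def using tlift_tens_g[OF T_mod U_mod UT_mod assoc_bil] by simp

lemma tassoc_lin: "linear_map R TU UT (tassoc R U U U)"
  unfolding tassoc_def by (rule tlift_lin_g[OF T_mod U_mod UT_mod assoc_bil])

lemma sw_coassoc: assumes P: "module R P" and G: "lin3 R U P G" and u: "u \<in> carrier U"
  shows "sw P (\<lambda>x c. sw P (\<lambda>a b. G a b c) x) u = sw P (\<lambda>a y. sw P (\<lambda>b c. G a b c) y) u"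
proof -
  have Gc: "\<And>a b c. a \<in> carrier U \<Longrightarrow> b \<in> carrier U \<Longrightarrow> c \<in> carrier U \<Longrightarrow> G a b c \<in> carrier P"
    using lin3_closed[OF G] by blast
  have bil_in: "bil R U U P (\<lambda>(b, c). G a b c)" if "a \<in> carrier U" for a
    by (rule bilI) (use that G in \<open>auto intro: lin3_2 lin3_3\<close>)
  have bil_in2: "bil R U U P (\<lambda>(a, b). G a b c)" if "c \<in> carrier U" for c
    by (rule bilI) (use that G in \<open>auto intro: lin3_1 lin3_2\<close>)
  let ?phi = "\<lambda>(a, Y). tlift R U U P (\<lambda>(b, c). G a b c) Y"
  have bphi: "bil R U T P ?phi"
  proof (rule bilI)
    fix Y assume Y: "Y \<in> carrier T"
    have "linear_map R U P (\<lambda>a. tlift R U U P ((\<lambda>a. \<lambda>(b, c). G a b c) a) Y)"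
      by (rule tlift_param_lin_g[OF U_mod U_mod P U_mod Y]) (use G in \<open>auto intro: lin3_1\<close>)
    then show "linear_map R U P (\<lambda>a. ?phi (a, Y))" by simp
  next
    fix a assume a: "a \<in> carrier U"
    show "linear_map R T P (\<lambda>Y. ?phi (a, Y))"
      using tlift_lin_g[OF U_mod U_mod P bil_in[OF a]] by simp
  qed
  let ?Phi = "tlift R U T P ?phi"
  have Phil: "linear_map R UT P ?Phi" by (rule tlift_lin_g[OF U_mod T_mod P bphi])
  have pidl: "linear_map R T TU (tmap R U U T U psi (\<lambda>x. x))"
    by (rule tmap_lin[OF U_mod U_mod T_mod U_mod psi_lin lin_id[OF U_mod]])
  have idpl: "linear_map R T UT (tmap R U U U T (\<lambda>x. x) psi)"
    by (rule tmap_lin[OF U_mod U_mod U_mod T_mod lin_id[OF U_mod] psi_lin])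
  have "?Phi (tmap R U U U T (\<lambda>x. x) psi (psi u))
      = tlift R U U P (\<lambda>(a, y). ?Phi (tmap R U U U T (\<lambda>x. x) psi (tns a y))) (psi u)"
    by (rule tlift_expand_g[OF U_mod U_mod P lin_comp[OF idpl Phil] psi_closed[OF u]])
  also have "\<dots> = tlift R U U P (\<lambda>(a, y). tlift R U U P (\<lambda>(b, c). G a b c) (psi y)) (psi u)"
    using Gc
    by (intro tlift_cong_g[OF U_mod U_mod P psi_closed[OF u]])
       (auto simp: tmap_tens[OF U_mod U_mod U_mod T_mod lin_id[OF U_mod] psi_lin]
          tlift_tens_g[OF U_mod T_mod P bphi] psi_closed intro!: tlift_closed_g[OF U_mod U_mod P])
  finally have R: "?Phi (tmap R U U U T (\<lambda>x. x) psi (psi u)) = sw P (\<lambda>a y. sw P (\<lambda>b c. G a b c) y) u"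
    unfolding sw_def by simp
  have "?Phi (tassoc R U U U (tmap R U U T U psi (\<lambda>x. x) (psi u)))
      = tlift R U U P (\<lambda>(x, c). ?Phi (tassoc R U U U (tmap R U U T U psi (\<lambda>x. x) (tns x c)))) (psi u)"
    by (rule tlift_expand_g[OF U_mod U_mod P lin_comp[OF pidl lin_comp[OF tassoc_lin Phil]] psi_closed[OF u]])
  also have "\<dots> = tlift R U U P (\<lambda>(x, c). ?Phi (tlift R U U UT (\<lambda>(a, b). tens R U T a (tns b c)) (psi x))) (psi u)"
    using Gc
    by (intro tlift_cong_g[OF U_mod U_mod P psi_closed[OF u]])
       (auto simp: tmap_tens[OF U_mod U_mod T_mod U_mod psi_lin lin_id[OF U_mod]] tassoc_tens psi_closed
         intro!: lin_closed[OF Phil] tlift_closed_g[OF U_mod U_mod UT_mod] tens_closed_g[OF U_mod T_mod] tns_closed)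
  also have "\<dots> = tlift R U U P (\<lambda>(x, c). tlift R U U P (\<lambda>(a, b). G a b c) (psi x)) (psi u)"
  proof (rule tlift_cong_g[OF U_mod U_mod P psi_closed[OF u]])
    fix x c assume xc: "x \<in> carrier U" "c \<in> carrier U"
    have "?Phi (tlift R U U UT (\<lambda>(a, b). tens R U T a (tns b c)) (psi x))
       = tlift R U U P (\<lambda>q. ?Phi ((\<lambda>(a, b). tens R U T a (tns b c)) q)) (psi x)"
      using xc by (intro tlift_hom_g[OF U_mod U_mod UT_mod P Phil psi_closed])
        (auto intro!: tens_closed_g[OF U_mod T_mod] tns_closed)
    also have "\<dots> = tlift R U U P (\<lambda>(a, b). G a b c) (psi x)"
      using xc Gc
      by (intro tlift_cong_g[OF U_mod U_mod P psi_closed])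
         (auto simp: tlift_tens_g[OF U_mod T_mod P bphi] tns_closed tlift_tens_g[OF U_mod U_mod P bil_in])
    finally show "(\<lambda>(x, c). ?Phi (tlift R U U UT (\<lambda>(a, b). tens R U T a (tns b c)) (psi x))) (x, c) =
         (\<lambda>(x, c). tlift R U U P (\<lambda>(a, b). G a b c) (psi x)) (x, c)" by simp
  next
    fix x c assume xc: "x \<in> carrier U" "c \<in> carrier U"
    show "(\<lambda>(x, c). tlift R U U P (\<lambda>(a, b). G a b c) (psi x)) (x, c) \<in> carrier P"
      using xc Gc by (auto intro!: tlift_closed_g[OF U_mod U_mod P psi_closed])
  qed
  finally have L: "?Phi (tassoc R U U U (tmap R U U T U psi (\<lambda>x. x) (psi u))) = sw P (\<lambda>x c. sw P (\<lambda>a b. G a b c) x) u"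
    unfolding sw_def by simp
  show ?thesis using L R coassoc[OF u] by simp
qed

end


lemma tspan_eq: assumes "module R M" "module R N" "module R Q"
  "linear_map R (tensor R M N) Q h1" "linear_map R (tensor R M N) Q h2" "S \<subseteq> carrier M \<times> carrier N"
  "\<And>a b. (a, b) \<in> S \<Longrightarrow> h1 (tens R M N a b) = h2 (tens R M N a b)"
  shows "x \<in> tspan R M N S \<Longrightarrow> h1 x = h2 x"
proof (induction rule: tspan.induct)
  case tspan_zero
  show ?case using lin_zero[OF T_module_g[OF assms(1,2)] assms(3,4)] lin_zero[OF T_module_g[OF assms(1,2)] assms(3,5)]
    by simp
next
  case (tspan_gen a b)
  then show ?case by (rule assms(7))
next
  case (tspan_add x y)
  have "x \<in> carrier (tensor R M N)" "y \<in> carrier (tensor R M N)"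
    using tspan_add tspan_sub[OF assms(1,2,6)] by auto
  then show ?case using tspan_add lin_add[OF assms(4)] lin_add[OF assms(5)] by simp
next
  case (tspan_smult r x)
  have "x \<in> carrier (tensor R M N)"
    using tspan_smult tspan_sub[OF assms(1,2,6)] by auto
  then show ?case using tspan_smult lin_smult[OF assms(4)] lin_smult[OF assms(5)] by simp
qed

lemma tspan_zero_lin: assumes "module R M" "module R N" "module R Q"
  "linear_map R (tensor R M N) Q h" "S \<subseteq> carrier M \<times> carrier N"
  "\<And>a b. (a, b) \<in> S \<Longrightarrow> h (tens R M N a b) = \<zero>\<^bsub>Q\<^esub>"
  shows "x \<in> tspan R M N S \<Longrightarrow> h x = \<zero>\<^bsub>Q\<^esub>"
  using tspan_eq[OF assms(1-4) lin_const0[OF T_module_g[OF assms(1,2)] assms(3)] assms(5)] assms(6) by metis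

lemma (in abelian_group) ag_tele: "x \<in> carrier G \<Longrightarrow> y \<in> carrier G \<Longrightarrow> z \<in> carrier G \<Longrightarrow>
  (x \<ominus> y) \<oplus> (y \<ominus> z) = x \<ominus> z"
proof -
  assume c: "x \<in> carrier G" "y \<in> carrier G" "z \<in> carrier G"
  have "(x \<ominus> y) \<oplus> (y \<ominus> z) = x \<oplus> ((\<ominus> y \<oplus> y) \<oplus> \<ominus> z)"
    using c by (simp add: minus_eq a_assoc)
  also have "\<dots> = x \<ominus> z" using c by (simp add: l_neg minus_eq)
  finally show ?thesis .
qed

context setting
begin

lemma sw_minus: assumes "module R P" "u \<in> carrier U" "\<And>a b. a \<in> carrier U \<Longrightarrow> b \<in> carrier U \<Longrightarrow> h1 a b \<in> carrier P"
  "\<And>a b. a \<in> carrier U \<Longrightarrow> b \<in> carrier U \<Longrightarrow> h2 a b \<in> carrier P"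
  shows "sw P (\<lambda>a b. h1 a b \<ominus>\<^bsub>P\<^esub> h2 a b) u = sw P h1 u \<ominus>\<^bsub>P\<^esub> sw P h2 u"
proof -
  interpret P: module R P by fact
  have "sw P (\<lambda>a b. h1 a b \<ominus>\<^bsub>P\<^esub> h2 a b) u = sw P (\<lambda>a b. h1 a b \<oplus>\<^bsub>P\<^esub> (\<ominus>\<^bsub>R\<^esub> \<one>\<^bsub>R\<^esub>) \<odot>\<^bsub>P\<^esub> h2 a b) u"
    using assms by (intro sw_cong) (auto simp: P.smult_l_minus P.minus_eq)
  also have "\<dots> = sw P h1 u \<oplus>\<^bsub>P\<^esub> (\<ominus>\<^bsub>R\<^esub> \<one>\<^bsub>R\<^esub>) \<odot>\<^bsub>P\<^esub> sw P h2 u"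
    using assms by (simp add: sw_add sw_smult)
  also have "\<dots> = sw P h1 u \<ominus>\<^bsub>P\<^esub> sw P h2 u"
  proof -
    have c: "sw P h2 u \<in> carrier P" by (rule sw_closed[OF assms(1,2)]) (rule assms(4))
    show ?thesis using c by (simp add: P.smult_l_minus P.minus_eq)
  qed
  finally show ?thesis .
qed

lemma sw_zero: assumes "module R P" "u \<in> carrier U"
  shows "sw P (\<lambda>a b. \<zero>\<^bsub>P\<^esub>) u = \<zero>\<^bsub>P\<^esub>"
proof -
  interpret P: module R P by fact
  have "sw P (\<lambda>a b. \<zero>\<^bsub>P\<^esub>) u = sw P (\<lambda>a b. \<zero>\<^bsub>R\<^esub> \<odot>\<^bsub>P\<^esub> \<zero>\<^bsub>P\<^esub>) u"
    using assms by (intro sw_cong) auto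
  also have "\<dots> = \<zero>\<^bsub>P\<^esub>" using sw_smult[OF assms(1,2), of "\<lambda>a b. \<zero>\<^bsub>P\<^esub>" "\<zero>\<^bsub>R\<^esub>"]
      sw_closed[OF assms(1,2), of "\<lambda>a b. \<zero>\<^bsub>P\<^esub>"] by simp
  finally show ?thesis .
qed

section \<open>Convolution\<close>

definition conv :: "('u \<Rightarrow> 'u) \<Rightarrow> ('u \<Rightarrow> 'u) \<Rightarrow> 'u \<Rightarrow> 'u" where
  "conv f g u = sigma (tmap R U U U U f g (psi u))"

definition e :: "'u \<Rightarrow> 'u" where "e u = eta (eps u)"
definition gg :: "'u \<Rightarrow> 'u" where "gg u = e u \<ominus>\<^bsub>U\<^esub> u"

primrec gp :: "nat \<Rightarrow> 'u \<Rightarrow> 'u" where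
  "gp 0 = e"
| "gp (Suc n) = conv gg (gp n)"

primrec SN :: "nat \<Rightarrow> 'u \<Rightarrow> 'u" where
  "SN 0 = e"
| "SN (Suc n) = (\<lambda>x. SN n x \<oplus>\<^bsub>U\<^esub> gp (Suc n) x)"

definition S :: "'u \<Rightarrow> 'u" where "S u = SN (SOME s. u \<in> F s) u"

lemma sig_tns_lin_l: "b \<in> carrier U \<Longrightarrow> linear_map R U U (\<lambda>a. sigma (tns a b))"
  by (rule lin_comp[OF tens_lin_l[OF U_mod U_mod] sigma_lin])
lemma sig_tns_lin_r: "a \<in> carrier U \<Longrightarrow> linear_map R U U (\<lambda>b. sigma (tns a b))"
  by (rule lin_comp[OF tens_lin_r[OF U_mod U_mod] sigma_lin])

lemma sig_tns_closed: "a \<in> carrier U \<Longrightarrow> b \<in> carrier U \<Longrightarrow> sigma (tns a b) \<in> carrier U"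
  by (simp add: sigma_closed tns_closed)

lemma conv_sw: assumes "linear_map R U U f" "linear_map R U U g" "u \<in> carrier U"
  shows "conv f g u = sw U (\<lambda>a b. sigma (tns (f a) (g b))) u"
  unfolding conv_def tmap_def sw_def
  using assms lin_closed[OF assms(1)] lin_closed[OF assms(2)]
  by (subst tlift_hom_g[OF U_mod U_mod T_mod U_mod sigma_lin psi_closed])
     (auto simp: split_def tns_closed)

lemma conv_lin: assumes "linear_map R U U f" "linear_map R U U g"
  shows "linear_map R U U (conv f g)"
  unfolding conv_def
  by (rule lin_comp[OF psi_lin lin_comp[OF tmap_lin[OF U_mod U_mod U_mod U_mod assms] sigma_lin]])

lemma e_lin: "linear_map R U U e"
  unfolding e_def by (rule lin_comp[OF eps_lin eta_lin])

lemma e_closed: "u \<in> carrier U \<Longrightarrow> e u \<in> carrier U"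
  using lin_closed[OF e_lin] by simp

lemma gg_lin: "linear_map R U U gg"
  unfolding gg_def by (rule lin_minusf[OF U_mod U_mod e_lin lin_id[OF U_mod]])

lemma gp_lin: "linear_map R U U (gp n)"
  by (induction n) (simp_all add: e_lin conv_lin gg_lin)

lemma SN_lin: "linear_map R U U (SN n)"
proof (induction n)
  case 0 show ?case by (simp add: e_lin)
next
  case (Suc n)
  show ?case using lin_plus[OF U_mod U_mod Suc.IH gp_lin[of "Suc n"]] by simp
qed

lemma conv_cong2: assumes "linear_map R U U f" "linear_map R U U g" "linear_map R U U g'" "u \<in> carrier U"
  "\<And>x. x \<in> carrier U \<Longrightarrow> g x = g' x"
  shows "conv f g u = conv f g' u"
  unfolding conv_sw[OF assms(1,2,4)] conv_sw[OF assms(1,3,4)] using assms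
  by (intro sw_cong[OF U_mod]) (auto intro!: sig_tns_closed lin_closed[OF assms(1)] lin_closed[OF assms(3)])

lemma conv_cong1: assumes "linear_map R U U f" "linear_map R U U f'" "linear_map R U U g" "u \<in> carrier U"
  "\<And>x. x \<in> carrier U \<Longrightarrow> f x = f' x"
  shows "conv f g u = conv f' g u"
  unfolding conv_sw[OF assms(1,3,4)] conv_sw[OF assms(2,3,4)] using assms
  by (intro sw_cong[OF U_mod]) (auto intro!: sig_tns_closed lin_closed[OF assms(2)] lin_closed[OF assms(3)])

lemma conv_e_l: assumes "linear_map R U U h" "u \<in> carrier U"
  shows "conv e h u = h u"
proof -
  have "conv e h u = sw U (\<lambda>a b. sigma (tns (eta (eps a)) (h b))) u"
    using conv_sw[OF e_lin assms] unfolding e_def .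
  also have "\<dots> = sw U (\<lambda>a b. h (eps a \<odot>\<^bsub>U\<^esub> b)) u"
  proof (rule sw_cong[OF U_mod assms(2)])
    fix a b assume ab: "a \<in> carrier U" "b \<in> carrier U"
    show "sigma (tns (eta (eps a)) (h b)) = h (eps a \<odot>\<^bsub>U\<^esub> b)"
      using unit_l[OF eps_closed[OF ab(1)] lin_closed[OF assms(1) ab(2)]]
        lin_smult[OF assms(1) eps_closed[OF ab(1)] ab(2)] by simp
    show "h (eps a \<odot>\<^bsub>U\<^esub> b) \<in> carrier U"
      using ab by (intro lin_closed[OF assms(1)] module.smult_closed[OF U_mod] eps_closed)
  qed
  also have "\<dots> = h (sw U (\<lambda>a b. eps a \<odot>\<^bsub>U\<^esub> b) u)"
    using assms by (intro sw_hom[symmetric, OF U_mod U_mod]) (auto intro: module.smult_closed[OF U_mod] eps_closed)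
  also have "\<dots> = h u" using sw_counit_l[OF assms(2)] by simp
  finally show ?thesis .
qed

lemma conv_minus1: assumes "linear_map R U U f1" "linear_map R U U f2" "linear_map R U U h" "u \<in> carrier U"
  shows "conv (\<lambda>x. f1 x \<ominus>\<^bsub>U\<^esub> f2 x) h u = conv f1 h u \<ominus>\<^bsub>U\<^esub> conv f2 h u"
proof -
  have l: "linear_map R U U (\<lambda>x. f1 x \<ominus>\<^bsub>U\<^esub> f2 x)" by (rule lin_minusf[OF U_mod U_mod assms(1,2)])
  have "conv (\<lambda>x. f1 x \<ominus>\<^bsub>U\<^esub> f2 x) h u = sw U (\<lambda>a b. sigma (tns (f1 a \<ominus>\<^bsub>U\<^esub> f2 a) (h b))) u"
    by (rule conv_sw[OF l assms(3,4)])
  also have "\<dots> = sw U (\<lambda>a b. sigma (tns (f1 a) (h b)) \<ominus>\<^bsub>U\<^esub> sigma (tns (f2 a) (h b))) u"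
    using assms lin_closed[OF assms(1)] lin_closed[OF assms(2)] lin_closed[OF assms(3)]
    by (intro sw_cong[OF U_mod])
       (auto simp: lin_minus[OF U_mod U_mod sig_tns_lin_l] intro!: module.smult_closed[OF U_mod]
         abelian_group.minus_closed[OF module.axioms(2)[OF U_mod]] sig_tns_closed)
  also have "\<dots> = conv f1 h u \<ominus>\<^bsub>U\<^esub> conv f2 h u"
    using assms lin_closed[OF assms(1)] lin_closed[OF assms(2)] lin_closed[OF assms(3)]
    by (simp add: sw_minus[OF U_mod] conv_sw sig_tns_closed)
  finally show ?thesis .
qed

lemma conv_add2: assumes "linear_map R U U f" "linear_map R U U h1" "linear_map R U U h2" "u \<in> carrier U"
  shows "conv f (\<lambda>x. h1 x \<oplus>\<^bsub>U\<^esub> h2 x) u = conv f h1 u \<oplus>\<^bsub>U\<^esub> conv f h2 u"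
proof -
  have l: "linear_map R U U (\<lambda>x. h1 x \<oplus>\<^bsub>U\<^esub> h2 x)" by (rule lin_plus[OF U_mod U_mod assms(2,3)])
  have "conv f (\<lambda>x. h1 x \<oplus>\<^bsub>U\<^esub> h2 x) u = sw U (\<lambda>a b. sigma (tns (f a) (h1 b \<oplus>\<^bsub>U\<^esub> h2 b))) u"
    by (rule conv_sw[OF assms(1) l assms(4)])
  also have "\<dots> = sw U (\<lambda>a b. sigma (tns (f a) (h1 b)) \<oplus>\<^bsub>U\<^esub> sigma (tns (f a) (h2 b))) u"
    using assms lin_closed[OF assms(1)] lin_closed[OF assms(2)] lin_closed[OF assms(3)]
    by (intro sw_cong[OF U_mod])
       (auto simp: lin_add[OF sig_tns_lin_r] intro!: sig_tns_closed
         abelian_monoid.a_closed[OF abelian_group.axioms(1)[OF module.axioms(2)[OF U_mod]]])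
  also have "\<dots> = conv f h1 u \<oplus>\<^bsub>U\<^esub> conv f h2 u"
    using assms lin_closed[OF assms(1)] lin_closed[OF assms(2)] lin_closed[OF assms(3)]
    by (simp add: sw_add[OF U_mod] conv_sw sig_tns_closed)
  finally show ?thesis .
qed

lemma conv_id: assumes "linear_map R U U h" "u \<in> carrier U"
  shows "conv (\<lambda>x. x) h u = h u \<ominus>\<^bsub>U\<^esub> conv gg h u"
proof -
  interpret U: module R U by (rule U_mod)
  have "conv (\<lambda>x. x) h u = conv (\<lambda>x. e x \<ominus>\<^bsub>U\<^esub> gg x) h u"
    using assms e_closed
    by (intro conv_cong1[OF lin_id[OF U_mod] lin_minusf[OF U_mod U_mod e_lin gg_lin]])
       (auto simp: gg_def U.minus_eq U.minus_add U.a_assoc[symmetric] U.r_neg U.minus_minus)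
  also have "\<dots> = h u \<ominus>\<^bsub>U\<^esub> conv gg h u"
    by (simp add: conv_minus1[OF e_lin gg_lin assms] conv_e_l[OF assms])
  finally show ?thesis .
qed

lemma conv_SN: assumes "u \<in> carrier U" shows "conv (\<lambda>x. x) (SN N) u = e u \<ominus>\<^bsub>U\<^esub> gp (Suc N) u"
proof (induction N)
  case 0
  show ?case using conv_id[OF e_lin assms] by simp
next
  interpret U: module R U by (rule U_mod)
  case (Suc N)
  have c: "e u \<in> carrier U" "gp (Suc N) u \<in> carrier U" "gp (Suc (Suc N)) u \<in> carrier U"
    using e_closed assms lin_closed[OF gp_lin] by blast+
  have "conv (\<lambda>x. x) (SN (Suc N)) u = conv (\<lambda>x. x) (SN N) u \<oplus>\<^bsub>U\<^esub> conv (\<lambda>x. x) (gp (Suc N)) u"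
    unfolding SN.simps(2) by (rule conv_add2[OF lin_id[OF U_mod] SN_lin gp_lin assms])
  also have "\<dots> = (e u \<ominus>\<^bsub>U\<^esub> gp (Suc N) u) \<oplus>\<^bsub>U\<^esub> (gp (Suc N) u \<ominus>\<^bsub>U\<^esub> gp (Suc (Suc N)) u)"
    using Suc conv_id[OF gp_lin[of "Suc N"] assms] gp.simps(2)[of "Suc N"] by (simp del: gp.simps)
  also have "\<dots> = e u \<ominus>\<^bsub>U\<^esub> gp (Suc (Suc N)) u"
    using c by (rule U.ag_tele)
  finally show ?case .
qed

end


context setting
begin

lemma tm_tens: "linear_map R U U f \<Longrightarrow> linear_map R U U g \<Longrightarrow> a \<in> carrier U \<Longrightarrow> b \<in> carrier U \<Longrightarrow>
   tmap R U U U U f g (tns a b) = tns (f a) (g b)"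
  by (rule tmap_tens[OF U_mod U_mod U_mod U_mod])

lemma tm_lin: "linear_map R U U f \<Longrightarrow> linear_map R U U g \<Longrightarrow> linear_map R T T (tmap R U U U U f g)"
  by (rule tmap_lin[OF U_mod U_mod U_mod U_mod])

lemma tns_zero_l: "b \<in> carrier U \<Longrightarrow> tns \<zero>\<^bsub>U\<^esub> b = \<zero>\<^bsub>T\<^esub>"
  by (rule lin_zero[OF U_mod T_mod tens_lin_l[OF U_mod U_mod]])
lemma tns_zero_r: "a \<in> carrier U \<Longrightarrow> tns a \<zero>\<^bsub>U\<^esub> = \<zero>\<^bsub>T\<^esub>"
  by (rule lin_zero[OF U_mod T_mod tens_lin_r[OF U_mod U_mod]])

lemma gg_F0: assumes "a \<in> F 0" shows "gg a = \<zero>\<^bsub>U\<^esub>"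
proof -
  interpret U: module R U by (rule U_mod)
  have a: "a \<in> carrier U" using assms F_carrier by auto
  have "e a = a" unfolding e_def using F0_eta[OF assms] by simp
  then show ?thesis unfolding gg_def using a by (simp add: U.minus_eq U.r_neg)
qed

lemma gp_vanish: "u \<in> F s \<Longrightarrow> s < n \<Longrightarrow> gp n u = \<zero>\<^bsub>U\<^esub>"
proof (induction n arbitrary: s u)
  case 0
  then show ?case by simp
next
  case (Suc m)
  have u: "u \<in> carrier U" using Suc F_carrier by auto
  have "tmap R U U U U gg (gp m) (psi u) = \<zero>\<^bsub>T\<^esub>"
  proof (rule tspan_zero_lin[OF U_mod U_mod T_mod tm_lin[OF gg_lin gp_lin] deg_sub _ F_psi[OF Suc.prems(1)]])
    fix a b assume "(a, b) \<in> {(a, b) |a b t v. t + v = s \<and> a \<in> F t \<and> b \<in> F v}"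
    then obtain t v where tv: "t + v = s" "a \<in> F t" "b \<in> F v" by blast
    have ab: "a \<in> carrier U" "b \<in> carrier U" using tv F_carrier by auto
    show "tmap R U U U U gg (gp m) (tns a b) = \<zero>\<^bsub>T\<^esub>"
    proof (cases "t = 0")
      case True
      then show ?thesis using tv ab gg_F0 lin_closed[OF gp_lin]
        by (simp add: tm_tens[OF gg_lin gp_lin] tns_zero_l)
    next
      case False
      then have "v < m" using tv Suc.prems by auto
      then have "gp m b = \<zero>\<^bsub>U\<^esub>" using Suc.IH tv by blast
      then show ?thesis using ab lin_closed[OF gg_lin]
        by (simp add: tm_tens[OF gg_lin gp_lin] tns_zero_r)
    qed
  qed
  then show ?case unfolding gp.simps conv_def using lin_zero[OF T_mod U_mod sigma_lin] by simp
qed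

lemma SN_stable: assumes "u \<in> F s" "s \<le> M" shows "SN M u = SN s u"
  using assms(2)
proof (induction M rule: dec_induct)
  case base
  then show ?case by simp
next
  interpret U: module R U by (rule U_mod)
  case (step k)
  have u: "u \<in> carrier U" using assms F_carrier by auto
  have "gp (Suc k) u = \<zero>\<^bsub>U\<^esub>" by (rule gp_vanish[OF assms(1)]) (use step(1) in simp)
  then show ?case using step lin_closed[OF SN_lin u] by (simp del: gp.simps)
qed

lemma S_eq: assumes "u \<in> F s" "s \<le> M" shows "S u = SN M u"
proof -
  let ?s0 = "SOME s. u \<in> F s"
  have s0: "u \<in> F ?s0" using assms(1) by (rule someI)
  have "S u = SN ?s0 u" unfolding S_def ..
  also have "\<dots> = SN (max ?s0 M) u" using SN_stable[OF s0, of "max ?s0 M"] by simp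
  also have "\<dots> = SN s u" using SN_stable[OF assms(1), of "max ?s0 M"] assms(2) by simp
  also have "\<dots> = SN M u" using SN_stable[OF assms] by simp
  finally show ?thesis .
qed

lemma S_lin: "linear_map R U U S"
  unfolding linear_map_def
proof (intro conjI ballI)
  interpret U: module R U by (rule U_mod)
  show "S \<in> carrier U \<rightarrow> carrier U"
  proof
    fix u assume u: "u \<in> carrier U"
    then obtain s where "u \<in> F s" using F_exh by blast
    then show "S u \<in> carrier U" using S_eq[of u s s] lin_closed[OF SN_lin u] by simp
  qed
next
  fix u v assume uv: "u \<in> carrier U" "v \<in> carrier U"
  then obtain s t where st: "u \<in> F s" "v \<in> F t" using F_exh by blast
  let ?M = "max s t"
  have M: "u \<in> F ?M" "v \<in> F ?M" using st F_mono[of s ?M] F_mono[of t ?M] by auto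
  have "u \<oplus>\<^bsub>U\<^esub> v \<in> F ?M" using M F_add by blast
  then show "S (u \<oplus>\<^bsub>U\<^esub> v) = S u \<oplus>\<^bsub>U\<^esub> S v"
    using S_eq[OF M(1) order_refl] S_eq[OF M(2) order_refl] S_eq[of "u \<oplus>\<^bsub>U\<^esub> v" ?M ?M] lin_add[OF SN_lin uv]
    by simp
next
  fix r u assume ru: "r \<in> carrier R" "u \<in> carrier U"
  then obtain s where s: "u \<in> F s" using F_exh by blast
  have "r \<odot>\<^bsub>U\<^esub> u \<in> F s" using F_smult[OF ru(1) s] .
  then show "S (r \<odot>\<^bsub>U\<^esub> u) = r \<odot>\<^bsub>U\<^esub> S u"
    using S_eq[OF s order_refl] S_eq[of "r \<odot>\<^bsub>U\<^esub> u" s s] lin_smult[OF SN_lin ru] by simp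
qed

lemma right_inv: assumes u: "u \<in> carrier U" shows "conv (\<lambda>x. x) S u = e u"
proof -
  interpret U: module R U by (rule U_mod)
  obtain s where s: "u \<in> F s" using F_exh[OF u] by blast
  have "tmap R U U U U (\<lambda>x. x) S (psi u) = tmap R U U U U (\<lambda>x. x) (SN s) (psi u)"
  proof (rule tspan_eq[OF U_mod U_mod T_mod tm_lin[OF lin_id[OF U_mod] S_lin] tm_lin[OF lin_id[OF U_mod] SN_lin]
        deg_sub _ F_psi[OF s]])
    fix a b assume "(a, b) \<in> {(a, b) |a b t v. t + v = s \<and> a \<in> F t \<and> b \<in> F v}"
    then obtain t v where tv: "t + v = s" "a \<in> F t" "b \<in> F v" by blast
    have ab: "a \<in> carrier U" "b \<in> carrier U" using tv F_carrier by auto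
    have "S b = SN s b" using S_eq[OF tv(3)] tv by simp
    then show "tmap R U U U U (\<lambda>x. x) S (tns a b) = tmap R U U U U (\<lambda>x. x) (SN s) (tns a b)"
      using ab by (simp add: tm_tens[OF lin_id[OF U_mod] S_lin] tm_tens[OF lin_id[OF U_mod] SN_lin])
  qed
  then have "conv (\<lambda>x. x) S u = conv (\<lambda>x. x) (SN s) u" unfolding conv_def by simp
  also have "\<dots> = e u \<ominus>\<^bsub>U\<^esub> gp (Suc s) u" by (rule conv_SN[OF u])
  also have "\<dots> = e u" using gp_vanish[OF s, of "Suc s"] e_closed[OF u] by (simp add: U.minus_eq del: gp.simps)
  finally show ?thesis .
qed

lemma conv_comm: assumes "linear_map R U U f" "linear_map R U U g" "u \<in> carrier U"
  shows "conv f g u = conv g f u"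
proof -
  have l2: "lin2 R U U U (\<lambda>a b. sigma (tns (f a) (g b)))"
  proof (rule lin2I)
    fix b assume b: "b \<in> carrier U"
    show "linear_map R U U (\<lambda>a. sigma (tns (f a) (g b)))"
      by (rule lin_comp[OF assms(1) sig_tns_lin_l[OF lin_closed[OF assms(2) b]]])
  next
    fix a assume a: "a \<in> carrier U"
    show "linear_map R U U (\<lambda>b. sigma (tns (f a) (g b)))"
      by (rule lin_comp[OF assms(2) sig_tns_lin_r[OF lin_closed[OF assms(1) a]]])
  qed
  have "conv f g u = sw U (\<lambda>a b. sigma (tns (f a) (g b))) u" by (rule conv_sw[OF assms])
  also have "\<dots> = sw U (\<lambda>a b. sigma (tns (f b) (g a))) u" by (rule sw_cocomm[OF U_mod l2 assms(3)])
  also have "\<dots> = sw U (\<lambda>a b. sigma (tns (g a) (f b))) u"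
    using assms lin_closed[OF assms(1)] lin_closed[OF assms(2)]
    by (intro sw_cong[OF U_mod]) (auto simp: sig_comm intro!: sig_tns_closed)
  also have "\<dots> = conv g f u" by (rule conv_sw[symmetric, OF assms(2,1,3)])
  finally show ?thesis .
qed

lemma left_inv: "u \<in> carrier U \<Longrightarrow> conv S (\<lambda>x. x) u = e u"
  using conv_comm[OF S_lin lin_id[OF U_mod]] right_inv by simp

lemma counit_bil: "bil R U U RR (\<lambda>(u, v). eps u \<otimes>\<^bsub>R\<^esub> eps v)"
proof -
  interpret R: cring R by (rule cr)
  show ?thesis
    by (rule bilI) (auto simp: linear_map_def ring_as_module_def eps_closed eps_add eps_smult
        R.l_distr R.r_distr R.m_assoc R.m_lcomm)
qed

lemma eps_sig_tns: "x \<in> carrier U \<Longrightarrow> y \<in> carrier U \<Longrightarrow> eps (sigma (tns x y)) = eps x \<otimes>\<^bsub>R\<^esub> eps y"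
  using sigma_eps[OF tns_closed] tlift_tens_g[OF U_mod U_mod RR_mod counit_bil]
  unfolding tensor_counit_def by simp

lemma eps_conv: assumes "linear_map R U U f" "linear_map R U U h" "u \<in> carrier U"
  shows "eps (conv f h u) = sw RR (\<lambda>a b. eps (f a) \<otimes>\<^bsub>R\<^esub> eps (h b)) u"
proof -
  interpret R: cring R by (rule cr)
  have "eps (conv f h u) = sw RR (\<lambda>a b. eps (sigma (tns (f a) (h b)))) u"
    unfolding conv_sw[OF assms]
    using assms lin_closed[OF assms(1)] lin_closed[OF assms(2)]
    by (intro sw_hom[OF U_mod RR_mod eps_lin]) (auto intro!: sig_tns_closed)
  also have "\<dots> = sw RR (\<lambda>a b. eps (f a) \<otimes>\<^bsub>R\<^esub> eps (h b)) u"
    using assms lin_closed[OF assms(1)] lin_closed[OF assms(2)]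
    by (intro sw_cong[OF RR_mod]) (auto simp: eps_sig_tns ring_as_module_def
        intro!: R.m_closed eps_closed)
  finally show ?thesis .
qed

lemma eps_gg: assumes "a \<in> carrier U" shows "eps (gg a) = \<zero>\<^bsub>R\<^esub>"
proof -
  interpret R: cring R by (rule cr)
  interpret U: module R U by (rule U_mod)
  have "eps (gg a) \<oplus>\<^bsub>R\<^esub> eps a = eps (gg a \<oplus>\<^bsub>U\<^esub> a)"
    using assms lin_closed[OF gg_lin] by (simp add: eps_add)
  also have "gg a \<oplus>\<^bsub>U\<^esub> a = e a" unfolding gg_def using assms e_closed
    by (simp add: U.minus_eq U.a_assoc U.l_neg)
  also have "eps (e a) = eps a" unfolding e_def by (rule eta_eps[OF eps_closed[OF assms]])
  finally have "eps (gg a) \<oplus>\<^bsub>R\<^esub> eps a = eps a" .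
  then show ?thesis using assms lin_closed[OF gg_lin] eps_closed
    by (metis R.add.r_cancel_one' R.l_zero R.zero_closed R.add.m_comm)
qed

lemma eps_gp_Suc: assumes "u \<in> carrier U" shows "eps (gp (Suc m) u) = \<zero>\<^bsub>R\<^esub>"
proof -
  interpret R: cring R by (rule cr)
  have "eps (gp (Suc m) u) = sw RR (\<lambda>a b. eps (gg a) \<otimes>\<^bsub>R\<^esub> eps (gp m b)) u"
    using eps_conv[OF gg_lin gp_lin assms] by simp
  also have "\<dots> = sw RR (\<lambda>a b. \<zero>\<^bsub>RR\<^esub>) u"
    using assms lin_closed[OF gp_lin]
    by (intro sw_cong[OF RR_mod]) (auto simp: eps_gg eps_closed ring_as_module_def)
  also have "\<dots> = \<zero>\<^bsub>RR\<^esub>" by (rule sw_zero[OF RR_mod assms])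
  finally show ?thesis by (simp add: ring_as_module_def)
qed

lemma eps_SN: assumes "u \<in> carrier U" shows "eps (SN N u) = eps u"
proof (induction N)
  case 0
  then show ?case unfolding SN.simps e_def using eta_eps eps_closed assms by simp
next
  interpret R: cring R by (rule cr)
  case (Suc N)
  have "eps (SN (Suc N) u) = eps (SN N u) \<oplus>\<^bsub>R\<^esub> eps (gp (Suc N) u)"
    unfolding SN.simps using assms lin_closed[OF SN_lin] lin_closed[OF gp_lin] by (simp add: eps_add del: gp.simps)
  then show ?case using Suc eps_gp_Suc[OF assms] eps_closed[OF assms] by (simp del: gp.simps)
qed

lemma eps_S: assumes "u \<in> carrier U" shows "eps (S u) = eps u"
proof -
  obtain s where "u \<in> F s" using F_exh[OF assms] by blast
  then show ?thesis using S_eq[of u s s] eps_SN[OF assms] by simp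
qed

end


lemma (in abelian_group) ag_eq_minus0: "x \<in> carrier G \<Longrightarrow> y \<in> carrier G \<Longrightarrow> x \<ominus> y = \<zero> \<Longrightarrow> x = y"
proof -
  assume c: "x \<in> carrier G" "y \<in> carrier G" "x \<ominus> y = \<zero>"
  have "x = x \<oplus> (\<ominus> y \<oplus> y)" using c by (simp add: l_neg)
  also have "\<dots> = (x \<ominus> y) \<oplus> y" using c(1,2) by (simp add: minus_eq a_assoc)
  also have "\<dots> = y" using c by simp
  finally show ?thesis .
qed

lemma (in module) smult_lcomm: "a \<in> carrier R \<Longrightarrow> b \<in> carrier R \<Longrightarrow> x \<in> carrier M \<Longrightarrow>
  a \<odot>\<^bsub>M\<^esub> (b \<odot>\<^bsub>M\<^esub> x) = b \<odot>\<^bsub>M\<^esub> (a \<odot>\<^bsub>M\<^esub> x)"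
  by (metis smult_assoc1 m_comm)

context setting
begin

abbreviation "TT \<equiv> tensor R T T"
abbreviation "tns2 \<equiv> tens R T T"

lemma tns2_closed: "X \<in> carrier T \<Longrightarrow> Y \<in> carrier T \<Longrightarrow> tns2 X Y \<in> carrier TT"
  by (rule tens_closed_g[OF T_mod T_mod])

lemma mid_in_bil: assumes "a \<in> carrier U" "a' \<in> carrier U"
  shows "bil R U U TT (\<lambda>(b, b'). tns2 (tns a b) (tns a' b'))"
proof (rule bilI)
  fix b' assume "b' \<in> carrier U"
  then show "linear_map R U TT (\<lambda>b. case (b, b') of (b, b') \<Rightarrow> tns2 (tns a b) (tns a' b'))"
    using lin_comp[OF tens_lin_r[OF U_mod U_mod assms(1)] tens_lin_l[OF T_mod T_mod tns_closed[OF assms(2)]]] by simp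
next
  fix b assume "b \<in> carrier U"
  then show "linear_map R U TT (\<lambda>b'. case (b, b') of (b, b') \<Rightarrow> tns2 (tns a b) (tns a' b'))"
    using lin_comp[OF tens_lin_r[OF U_mod U_mod assms(2)] tens_lin_r[OF T_mod T_mod tns_closed[OF assms(1)]]] by simp
qed

lemma mid_mid_bil: assumes "Y \<in> carrier T"
  shows "bil R U U TT (\<lambda>(a, a'). tlift R U U TT (\<lambda>(b, b'). tns2 (tns a b) (tns a' b')) Y)"
proof (rule bilI)
  fix a' assume a': "a' \<in> carrier U"
  have "linear_map R U TT (\<lambda>a. tlift R U U TT ((\<lambda>a. \<lambda>(b, b'). tns2 (tns a b) (tns a' b')) a) Y)"
    by (rule tlift_param_lin_g[OF U_mod U_mod TT_mod U_mod assms])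
       (use a' in \<open>auto intro!: lin_comp[OF tens_lin_l[OF U_mod U_mod] tens_lin_l[OF T_mod T_mod]] tns_closed\<close>)
  then show "linear_map R U TT (\<lambda>a. case (a, a') of (a, a') \<Rightarrow> tlift R U U TT (\<lambda>(b, b'). tns2 (tns a b) (tns a' b')) Y)"
    by simp
next
  fix a assume a: "a \<in> carrier U"
  have "linear_map R U TT (\<lambda>a'. tlift R U U TT ((\<lambda>a'. \<lambda>(b, b'). tns2 (tns a b) (tns a' b')) a') Y)"
    by (rule tlift_param_lin_g[OF U_mod U_mod TT_mod U_mod assms])
       (use a in \<open>auto intro!: lin_comp[OF tens_lin_l[OF U_mod U_mod] tens_lin_r[OF T_mod T_mod]] tns_closed\<close>)
  then show "linear_map R U TT (\<lambda>a'. case (a, a') of (a, a') \<Rightarrow> tlift R U U TT (\<lambda>(b, b'). tns2 (tns a b) (tns a' b')) Y)"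
    by simp
qed

lemma mid_bil: "bil R T T TT (\<lambda>(X, Y). tlift R U U TT (\<lambda>(a, a'). tlift R U U TT (\<lambda>(b, b'). tns2 (tns a b) (tns a' b')) Y) X)"
proof (rule bilI)
  fix Y assume Y: "Y \<in> carrier T"
  show "linear_map R T TT (\<lambda>X. case (X, Y) of (X, Y) \<Rightarrow> tlift R U U TT (\<lambda>(a, a'). tlift R U U TT (\<lambda>(b, b'). tns2 (tns a b) (tns a' b')) Y) X)"
    using tlift_lin_g[OF U_mod U_mod TT_mod mid_mid_bil[OF Y]] by simp
next
  fix X assume X: "X \<in> carrier T"
  have "linear_map R T TT (\<lambda>Y. tlift R U U TT ((\<lambda>Y. \<lambda>(a, a'). tlift R U U TT (\<lambda>(b, b'). tns2 (tns a b) (tns a' b')) Y) Y) X)"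
    by (rule tlift_param_lin_g[OF U_mod U_mod TT_mod T_mod X])
       (auto intro!: tlift_lin_g[OF U_mod U_mod TT_mod mid_in_bil])
  then show "linear_map R T TT (\<lambda>Y. case (X, Y) of (X, Y) \<Rightarrow> tlift R U U TT (\<lambda>(a, a'). tlift R U U TT (\<lambda>(b, b'). tns2 (tns a b) (tns a' b')) Y) X)"
    by simp
qed

lemma tmiddle_eq: "tmiddle R U U = tlift R T T TT (\<lambda>(X, Y). tlift R U U TT (\<lambda>(a, a'). tlift R U U TT (\<lambda>(b, b'). tns2 (tns a b) (tns a' b')) Y) X)"
  unfolding tmiddle_def Let_def ..

lemma tmiddle_lin: "linear_map R TT TT (tmiddle R U U)"
  unfolding tmiddle_eq by (rule tlift_lin_g[OF T_mod T_mod TT_mod mid_bil])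

lemma tmiddle_tens: assumes "a1 \<in> carrier U" "a2 \<in> carrier U" "b1 \<in> carrier U" "b2 \<in> carrier U"
  shows "tmiddle R U U (tns2 (tns a1 a2) (tns b1 b2)) = tns2 (tns a1 b1) (tns a2 b2)"
  unfolding tmiddle_eq
  using assms tlift_tens_g[OF T_mod T_mod TT_mod mid_bil tns_closed tns_closed]
    tlift_tens_g[OF U_mod U_mod TT_mod mid_mid_bil[OF tns_closed]]
    tlift_tens_g[OF U_mod U_mod TT_mod mid_in_bil]
  by simp

definition m2 :: "('u \<times> 'u \<Rightarrow> 'r) set \<Rightarrow> ('u \<times> 'u \<Rightarrow> 'r) set \<Rightarrow> ('u \<times> 'u \<Rightarrow> 'r) set" where
  "m2 Y Z = tmap R T T U U sigma sigma (tmiddle R U U (tns2 Y Z))"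

lemma mm_lin: "linear_map R TT T (\<lambda>x. tmap R T T U U sigma sigma (tmiddle R U U x))"
  by (rule lin_comp[OF tmiddle_lin tmap_lin[OF T_mod T_mod U_mod U_mod sigma_lin sigma_lin]])

lemma m2_lin_l: "Z \<in> carrier T \<Longrightarrow> linear_map R T T (\<lambda>Y. m2 Y Z)"
  unfolding m2_def by (rule lin_comp[OF tens_lin_l[OF T_mod T_mod] mm_lin])

lemma m2_lin_r: "Y \<in> carrier T \<Longrightarrow> linear_map R T T (\<lambda>Z. m2 Y Z)"
  unfolding m2_def by (rule lin_comp[OF tens_lin_r[OF T_mod T_mod] mm_lin])

lemma m2_closed: "Y \<in> carrier T \<Longrightarrow> Z \<in> carrier T \<Longrightarrow> m2 Y Z \<in> carrier T"
  using lin_closed[OF m2_lin_l] by blast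

lemma m2_tens: assumes "a1 \<in> carrier U" "a2 \<in> carrier U" "b1 \<in> carrier U" "b2 \<in> carrier U"
  shows "m2 (tns a1 a2) (tns b1 b2) = tns (sigma (tns a1 b1)) (sigma (tns a2 b2))"
  unfolding m2_def tmiddle_tens[OF assms]
  by (rule tmap_tens[OF T_mod T_mod U_mod U_mod sigma_lin sigma_lin]) (use assms in \<open>auto intro: tns_closed\<close>)

lemma psi_sigma: assumes "a \<in> carrier U" "b \<in> carrier U"
  shows "psi (sigma (tns a b)) = m2 (psi a) (psi b)"
  unfolding sigma_psi[OF tns_closed[OF assms]] tensor_coprod_def m2_def
  using tmap_tens[OF U_mod U_mod T_mod T_mod psi_lin psi_lin assms] by simp

abbreviation "II \<equiv> tns (eta \<one>\<^bsub>R\<^esub>) (eta \<one>\<^bsub>R\<^esub>)"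

lemma one_RR: "\<one>\<^bsub>R\<^esub> \<in> carrier RR"
  using cring.axioms(1)[OF cr] by (simp add: ring_as_module_def ring.ring_simprules(6))

lemma II_closed: "II \<in> carrier T"
  using eta_closed one_RR by (simp add: tns_closed ring_as_module_def)

lemma psi_eta: assumes "r \<in> carrier R" shows "psi (eta r) = r \<odot>\<^bsub>T\<^esub> II"
proof -
  have RR2: "module R (tensor R RR RR)" by (rule T_module_g[OF RR_mod RR_mod])
  have tl: "linear_map R (tensor R RR RR) T (tmap R RR RR U U eta eta)"
    by (rule tmap_lin[OF RR_mod RR_mod U_mod U_mod eta_lin eta_lin])
  have "psi (eta r) = tmap R RR RR U U eta eta (r \<odot>\<^bsub>tensor R RR RR\<^esub> tens R RR RR \<one>\<^bsub>R\<^esub> \<one>\<^bsub>R\<^esub>)"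
    using eta_psi[OF assms] unfolding ring_coprod_def .
  also have "\<dots> = r \<odot>\<^bsub>T\<^esub> tmap R RR RR U U eta eta (tens R RR RR \<one>\<^bsub>R\<^esub> \<one>\<^bsub>R\<^esub>)"
    by (rule lin_smult[OF tl assms tens_closed_g[OF RR_mod RR_mod one_RR one_RR]])
  also have "\<dots> = r \<odot>\<^bsub>T\<^esub> II"
    using tmap_tens[OF RR_mod RR_mod U_mod U_mod eta_lin eta_lin one_RR one_RR] by simp
  finally show ?thesis .
qed

lemma m2_unit: assumes "Y \<in> carrier T" shows "m2 Y II = Y"
proof (rule lin_ext_g[OF U_mod U_mod T_mod m2_lin_l[OF II_closed] lin_id[OF T_mod] _ assms])
  fix a b assume ab: "a \<in> carrier U" "b \<in> carrier U"
  have o: "\<one>\<^bsub>R\<^esub> \<in> carrier R" using one_RR by (simp add: ring_as_module_def)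
  show "m2 (tns a b) II = tns a b"
    using m2_tens[OF ab eta_closed[OF o] eta_closed[OF o]] unit_r[OF o ab(1)] unit_r[OF o ab(2)] ab
      module.smult_one[OF U_mod] by simp
qed

lemma epsa_bil: "bil R U U U (\<lambda>(a, b). eps b \<odot>\<^bsub>U\<^esub> a)"
proof -
  interpret U: module R U by (rule U_mod)
  interpret R: cring R by (rule cr)
  show ?thesis
    by (rule bilI) (auto simp: linear_map_def eps_closed eps_add eps_smult U.smult_l_distr
        U.smult_r_distr U.smult_lcomm U.smult_assoc1)
qed

lemma uniq: assumes X: "linear_map R U T X" and X': "linear_map R U T X'"
  and st: "\<And>u. u \<in> carrier U \<Longrightarrow> sw T (\<lambda>a b. m2 (X a) (psi b)) u = sw T (\<lambda>a b. m2 (X' a) (psi b)) u"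
  and u: "u \<in> carrier U"
  shows "X u = X' u"
proof -
  interpret TM: module R T by (rule T_mod)
  interpret U: module R U by (rule U_mod)
  define D where "D = (\<lambda>a. X a \<ominus>\<^bsub>T\<^esub> X' a)"
  have Dl: "linear_map R U T D" unfolding D_def by (rule lin_minusf[OF U_mod T_mod X X'])
  have starD: "sw T (\<lambda>a b. m2 (D a) (psi b)) u = \<zero>\<^bsub>T\<^esub>" if u: "u \<in> carrier U" for u
  proof -
    have "sw T (\<lambda>a b. m2 (D a) (psi b)) u = sw T (\<lambda>a b. m2 (X a) (psi b) \<ominus>\<^bsub>T\<^esub> m2 (X' a) (psi b)) u"
      using u lin_closed[OF X] lin_closed[OF X'] psi_closed
      by (intro sw_cong[OF T_mod]) (auto simp: D_def lin_minus[OF T_mod T_mod m2_lin_l] m2_closed)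
    also have "\<dots> = \<zero>\<^bsub>T\<^esub>"
      using u lin_closed[OF X] lin_closed[OF X'] psi_closed st[OF u]
      by (simp add: sw_minus[OF T_mod] m2_closed sw_closed[OF T_mod] TM.ag_cancel1)
    finally show ?thesis .
  qed
  let ?c = "tlift R U U U (\<lambda>(a, b). eps b \<odot>\<^bsub>U\<^esub> a)"
  have cl: "linear_map R T U ?c" by (rule tlift_lin_g[OF U_mod U_mod U_mod epsa_bil])
  have kbil: "bil R U U T (\<lambda>(a, b). m2 (D a) (psi b))"
  proof (rule bilI)
    fix b assume "b \<in> carrier U"
    then show "linear_map R U T (\<lambda>a. case (a, b) of (a, b) \<Rightarrow> m2 (D a) (psi b))"
      using lin_comp[OF Dl m2_lin_l[OF psi_closed]] by simp
  next
    fix a assume "a \<in> carrier U"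
    then show "linear_map R U T (\<lambda>b. case (a, b) of (a, b) \<Rightarrow> m2 (D a) (psi b))"
      using lin_comp[OF psi_lin m2_lin_r[OF lin_closed[OF Dl]]] by simp
  qed
  let ?k = "tlift R U U T (\<lambda>(a, b). m2 (D a) (psi b))"
  have kl: "linear_map R T T ?k" by (rule tlift_lin_g[OF U_mod U_mod T_mod kbil])
  have main: "\<forall>v\<in>F s. D v = \<zero>\<^bsub>T\<^esub>" for s
  proof (induction s rule: less_induct)
    case (less s)
    show ?case
    proof
      fix v assume v: "v \<in> F s"
      have vU: "v \<in> carrier U" using v F_carrier by auto
      have "?k (psi v) = D (?c (psi v))"
      proof (rule tspan_eq[OF U_mod U_mod T_mod kl lin_comp[OF cl Dl] deg_sub _ F_psi[OF v]])
        fix a b assume "(a, b) \<in> {(a, b) |a b t v. t + v = s \<and> a \<in> F t \<and> b \<in> F v}"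
        then obtain t w where tw: "t + w = s" "a \<in> F t" "b \<in> F w" by blast
        have ab: "a \<in> carrier U" "b \<in> carrier U" using tw F_carrier by auto
        have k1: "?k (tns a b) = m2 (D a) (psi b)"
          using tlift_tens_g[OF U_mod U_mod T_mod kbil ab] by simp
        have c1: "?c (tns a b) = eps b \<odot>\<^bsub>U\<^esub> a"
          using tlift_tens_g[OF U_mod U_mod U_mod epsa_bil ab] by simp
        show "?k (tns a b) = D (?c (tns a b))"
        proof (cases "t < s")
          case True
          then have "D a = \<zero>\<^bsub>T\<^esub>" using less tw by blast
          then show ?thesis unfolding k1 c1
            using lin_zero[OF T_mod T_mod m2_lin_l[OF psi_closed[OF ab(2)]]] lin_smult[OF Dl eps_closed[OF ab(2)] ab(1)]
              eps_closed[OF ab(2)] by simp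
        next
          case False
          then have "w = 0" using tw by simp
          then have b: "b = eta (eps b)" using F0_eta tw by simp
          have "m2 (D a) (psi b) = m2 (D a) (eps b \<odot>\<^bsub>T\<^esub> II)"
            using psi_eta[OF eps_closed[OF ab(2)]] b by simp
          also have "\<dots> = eps b \<odot>\<^bsub>T\<^esub> m2 (D a) II"
            by (rule lin_smult[OF m2_lin_r[OF lin_closed[OF Dl ab(1)]] eps_closed[OF ab(2)] II_closed])
          also have "\<dots> = eps b \<odot>\<^bsub>T\<^esub> D a" using m2_unit[OF lin_closed[OF Dl ab(1)]] by simp
          also have "\<dots> = D (eps b \<odot>\<^bsub>U\<^esub> a)" using lin_smult[OF Dl eps_closed[OF ab(2)] ab(1)] by simp
          finally show ?thesis unfolding k1 c1 .
        qed
      qed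
      moreover have "?c (psi v) = v" using counit_r[OF vU] .
      moreover have "?k (psi v) = sw T (\<lambda>a b. m2 (D a) (psi b)) v" unfolding sw_def ..
      ultimately show "D v = \<zero>\<^bsub>T\<^esub>" using starD[OF vU] by simp
    qed
  qed
  obtain s where "u \<in> F s" using F_exh[OF u] by blast
  then have "D u = \<zero>\<^bsub>T\<^esub>" using main by blast
  then show ?thesis unfolding D_def using lin_closed[OF X u] lin_closed[OF X' u] by (rule TM.ag_eq_minus0[rotated 2])
qed

end


definition lin4 :: "'r ring \<Rightarrow> ('r,'u) module \<Rightarrow> ('r,'p) module \<Rightarrow> ('u \<Rightarrow> 'u \<Rightarrow> 'u \<Rightarrow> 'u \<Rightarrow> 'p) \<Rightarrow> bool" where
  "lin4 R U P F \<longleftrightarrow>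
     (\<forall>b\<in>carrier U. \<forall>c\<in>carrier U. \<forall>d\<in>carrier U. linear_map R U P (\<lambda>a. F a b c d)) \<and>
     (\<forall>a\<in>carrier U. \<forall>c\<in>carrier U. \<forall>d\<in>carrier U. linear_map R U P (\<lambda>b. F a b c d)) \<and>
     (\<forall>a\<in>carrier U. \<forall>b\<in>carrier U. \<forall>d\<in>carrier U. linear_map R U P (\<lambda>c. F a b c d)) \<and>
     (\<forall>a\<in>carrier U. \<forall>b\<in>carrier U. \<forall>c\<in>carrier U. linear_map R U P (\<lambda>d. F a b c d))"

lemma lin4_D:
  assumes "lin4 R U P F"
  shows "\<And>b c d. b\<in>carrier U \<Longrightarrow> c\<in>carrier U \<Longrightarrow> d\<in>carrier U \<Longrightarrow> linear_map R U P (\<lambda>a. F a b c d)"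
    "\<And>a c d. a\<in>carrier U \<Longrightarrow> c\<in>carrier U \<Longrightarrow> d\<in>carrier U \<Longrightarrow> linear_map R U P (\<lambda>b. F a b c d)"
    "\<And>a b d. a\<in>carrier U \<Longrightarrow> b\<in>carrier U \<Longrightarrow> d\<in>carrier U \<Longrightarrow> linear_map R U P (\<lambda>c. F a b c d)"
    "\<And>a b c. a\<in>carrier U \<Longrightarrow> b\<in>carrier U \<Longrightarrow> c\<in>carrier U \<Longrightarrow> linear_map R U P (\<lambda>d. F a b c d)"
  using assms unfolding lin4_def by simp_all

lemma lin4_closed: "lin4 R U P F \<Longrightarrow> a\<in>carrier U \<Longrightarrow> b\<in>carrier U \<Longrightarrow> c\<in>carrier U \<Longrightarrow> d\<in>carrier U \<Longrightarrow>
   F a b c d \<in> carrier P"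
  by (rule lin_closed[OF lin4_D(4)])

context setting
begin

lemma sw_mid: assumes P: "module R P" and Fm: "lin4 R U P Fm" and u: "u \<in> carrier U"
  shows "sw P (\<lambda>a b. sw P (\<lambda>a1 a2. sw P (\<lambda>b1 b2. Fm a1 a2 b1 b2) b) a) u
       = sw P (\<lambda>a b. sw P (\<lambda>a1 a2. sw P (\<lambda>b1 b2. Fm a1 b1 a2 b2) b) a) u"
proof -
  note Fc = lin4_closed[OF Fm]
  note FD = lin4_D[OF Fm]
  have swc: "\<And>h x. x \<in> carrier U \<Longrightarrow> (\<And>a b. a \<in> carrier U \<Longrightarrow> b \<in> carrier U \<Longrightarrow> h a b \<in> carrier P) \<Longrightarrow> sw P h x \<in> carrier P"
    by (rule sw_closed[OF P])
  have G1: "lin3 R U P (\<lambda>x y z. sw P (\<lambda>b1 b2. Fm x y b1 b2) z)"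
    unfolding lin3_def
  proof (intro conjI ballI)
    fix b c assume "b \<in> carrier U" "c \<in> carrier U"
    then show "linear_map R U P (\<lambda>a. sw P (\<lambda>b1 b2. Fm a b b1 b2) c)"
      by (intro sw_param_lin[OF P U_mod]) (auto intro: FD)
  next
    fix a c assume "a \<in> carrier U" "c \<in> carrier U"
    then show "linear_map R U P (\<lambda>b. sw P (\<lambda>b1 b2. Fm a b b1 b2) c)"
      by (intro sw_param_lin[OF P U_mod]) (auto intro: FD)
  next
    fix a b assume "a \<in> carrier U" "b \<in> carrier U"
    then show "linear_map R U P (\<lambda>c. sw P (\<lambda>b1 b2. Fm a b b1 b2) c)"
      by (intro sw_lin[OF P] lin2I) (auto intro: FD)
  qed
  have s1: "sw P (\<lambda>a b. sw P (\<lambda>a1 a2. sw P (\<lambda>b1 b2. Fm a1 a2 b1 b2) b) a) u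
       = sw P (\<lambda>a y. sw P (\<lambda>b c. sw P (\<lambda>b1 b2. Fm a b b1 b2) c) y) u"
    using sw_coassoc[OF P G1 u] .
  have s24: "sw P (\<lambda>b c. sw P (\<lambda>b1 b2. Fm a b b1 b2) c) y = sw P (\<lambda>p y'. sw P (\<lambda>q r. Fm a q p r) y') y"
    if ay: "a \<in> carrier U" "y \<in> carrier U" for a y
  proof -
    have G2: "lin3 R U P (\<lambda>p q r. Fm a p q r)"
      unfolding lin3_def using ay by (auto intro: FD)
    have G3: "lin3 R U P (\<lambda>p q r. Fm a q p r)"
      unfolding lin3_def using ay by (auto intro: FD)
    have "sw P (\<lambda>b c. sw P (\<lambda>b1 b2. Fm a b b1 b2) c) y = sw P (\<lambda>x c. sw P (\<lambda>p q. Fm a p q c) x) y"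
      using sw_coassoc[OF P G2 ay(2)] by simp
    also have "\<dots> = sw P (\<lambda>x c. sw P (\<lambda>p q. Fm a q p c) x) y"
    proof (rule sw_cong[OF P ay(2)])
      fix x c assume xc: "x \<in> carrier U" "c \<in> carrier U"
      have l2: "lin2 R U U P (\<lambda>p q. Fm a p q c)" using ay xc by (intro lin2I) (auto intro: FD)
      show "sw P (\<lambda>p q. Fm a p q c) x = sw P (\<lambda>p q. Fm a q p c) x"
        by (rule sw_cocomm[OF P l2 xc(1)])
      show "sw P (\<lambda>p q. Fm a q p c) x \<in> carrier P" using xc ay by (intro swc) (auto intro: Fc)
    qed
    also have "\<dots> = sw P (\<lambda>p y'. sw P (\<lambda>q r. Fm a q p r) y') y"
      using sw_coassoc[OF P G3 ay(2)] by simp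
    finally show ?thesis .
  qed
  have s2: "sw P (\<lambda>a y. sw P (\<lambda>b c. sw P (\<lambda>b1 b2. Fm a b b1 b2) c) y) u
      = sw P (\<lambda>a y. sw P (\<lambda>p y'. sw P (\<lambda>q r. Fm a q p r) y') y) u"
  proof (rule sw_cong[OF P u])
    fix a y assume ay: "a \<in> carrier U" "y \<in> carrier U"
    show "sw P (\<lambda>b c. sw P (\<lambda>b1 b2. Fm a b b1 b2) c) y = sw P (\<lambda>p y'. sw P (\<lambda>q r. Fm a q p r) y') y"
      by (rule s24[OF ay])
    have "sw P (\<lambda>q r. Fm a q p r) y' \<in> carrier P" if "p \<in> carrier U" "y' \<in> carrier U" for p y'
      by (rule swc[OF that(2)]) (rule Fc, use ay that in auto)
    then show "sw P (\<lambda>p y'. sw P (\<lambda>q r. Fm a q p r) y') y \<in> carrier P"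
      by (intro swc[OF ay(2)])
  qed
  have G4: "lin3 R U P (\<lambda>x y z. sw P (\<lambda>q r. Fm x q y r) z)"
    unfolding lin3_def
  proof (intro conjI ballI)
    fix b c assume "b \<in> carrier U" "c \<in> carrier U"
    then show "linear_map R U P (\<lambda>a. sw P (\<lambda>q r. Fm a q b r) c)"
      by (intro sw_param_lin[OF P U_mod]) (auto intro: FD)
  next
    fix a c assume "a \<in> carrier U" "c \<in> carrier U"
    then show "linear_map R U P (\<lambda>b. sw P (\<lambda>q r. Fm a q b r) c)"
      by (intro sw_param_lin[OF P U_mod]) (auto intro: FD)
  next
    fix a b assume "a \<in> carrier U" "b \<in> carrier U"
    then show "linear_map R U P (\<lambda>c. sw P (\<lambda>q r. Fm a q b r) c)"
      by (intro sw_lin[OF P] lin2I) (auto intro: FD)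
  qed
  have s5: "sw P (\<lambda>x c. sw P (\<lambda>a p. sw P (\<lambda>q r. Fm a q p r) c) x) u
      = sw P (\<lambda>a y. sw P (\<lambda>p c. sw P (\<lambda>q r. Fm a q p r) c) y) u"
    using sw_coassoc[OF P G4 u] .
  show ?thesis using s1 s2 s5 by simp
qed

lemma star_psiS: assumes u: "u \<in> carrier U"
  shows "sw T (\<lambda>a b. m2 (psi (S a)) (psi b)) u = eps u \<odot>\<^bsub>T\<^esub> II"
proof -
  have "sw T (\<lambda>a b. m2 (psi (S a)) (psi b)) u = sw T (\<lambda>a b. psi (sigma (tns (S a) b))) u"
  proof (rule sw_cong[OF T_mod u])
    fix a b assume ab: "a \<in> carrier U" "b \<in> carrier U"
    have Sa: "S a \<in> carrier U" using lin_closed[OF S_lin ab(1)] .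
    show "m2 (psi (S a)) (psi b) = psi (sigma (tns (S a) b))" using psi_sigma[OF Sa ab(2)] by simp
    show "psi (sigma (tns (S a) b)) \<in> carrier T" by (rule psi_closed[OF sig_tns_closed[OF Sa ab(2)]])
  qed
  also have "\<dots> = psi (sw U (\<lambda>a b. sigma (tns (S a) b)) u)"
    by (rule sw_hom[symmetric, OF U_mod T_mod psi_lin u], rule sig_tns_closed[OF lin_closed[OF S_lin]])
  also have "\<dots> = psi (conv S (\<lambda>x. x) u)" using conv_sw[OF S_lin lin_id[OF U_mod] u] by simp
  also have "\<dots> = psi (eta (eps u))" using left_inv[OF u] unfolding e_def by simp
  also have "\<dots> = eps u \<odot>\<^bsub>T\<^esub> II" by (rule psi_eta[OF eps_closed[OF u]])
  finally show ?thesis .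
qed

definition Fq :: "'u \<Rightarrow> 'u \<Rightarrow> 'u \<Rightarrow> 'u \<Rightarrow> ('u \<times> 'u \<Rightarrow> 'r) set" where
  "Fq x y z w = tns (sigma (tns (S x) z)) (sigma (tns (S y) w))"

lemma Fq_lin4: "lin4 R U T Fq"
  unfolding lin4_def Fq_def
proof (intro conjI ballI)
  have Sc: "\<And>x. x \<in> carrier U \<Longrightarrow> S x \<in> carrier U" using lin_closed[OF S_lin] .
  fix b c d assume "b \<in> carrier U" "c \<in> carrier U" "d \<in> carrier U"
  then show "linear_map R U T (\<lambda>a. tns (sigma (tns (S a) c)) (sigma (tns (S b) d)))"
    by (intro lin_comp[OF lin_comp[OF S_lin sig_tns_lin_l] tens_lin_l[OF U_mod U_mod]] sig_tns_closed Sc)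
next
  have Sc: "\<And>x. x \<in> carrier U \<Longrightarrow> S x \<in> carrier U" using lin_closed[OF S_lin] .
  fix a c d assume "a \<in> carrier U" "c \<in> carrier U" "d \<in> carrier U"
  then show "linear_map R U T (\<lambda>b. tns (sigma (tns (S a) c)) (sigma (tns (S b) d)))"
    by (intro lin_comp[OF lin_comp[OF S_lin sig_tns_lin_l] tens_lin_r[OF U_mod U_mod]] sig_tns_closed Sc)
next
  have Sc: "\<And>x. x \<in> carrier U \<Longrightarrow> S x \<in> carrier U" using lin_closed[OF S_lin] .
  fix a b d assume "a \<in> carrier U" "b \<in> carrier U" "d \<in> carrier U"
  then show "linear_map R U T (\<lambda>c. tns (sigma (tns (S a) c)) (sigma (tns (S b) d)))"
    by (intro lin_comp[OF sig_tns_lin_r tens_lin_l[OF U_mod U_mod]] sig_tns_closed Sc)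
next
  have Sc: "\<And>x. x \<in> carrier U \<Longrightarrow> S x \<in> carrier U" using lin_closed[OF S_lin] .
  fix a b c assume "a \<in> carrier U" "b \<in> carrier U" "c \<in> carrier U"
  then show "linear_map R U T (\<lambda>d. tns (sigma (tns (S a) c)) (sigma (tns (S b) d)))"
    by (intro lin_comp[OF sig_tns_lin_r tens_lin_r[OF U_mod U_mod]] sig_tns_closed Sc)
qed

lemma m2_SS: assumes ab: "a \<in> carrier U" "b \<in> carrier U"
  shows "m2 (tmap R U U U U S S (psi a)) (psi b) = sw T (\<lambda>a1 a2. sw T (\<lambda>b1 b2. Fq a1 a2 b1 b2) b) a"
proof -
  have l: "linear_map R T T (\<lambda>Y. m2 (tmap R U U U U S S Y) (psi b))"
    by (rule lin_comp[OF tm_lin[OF S_lin S_lin] m2_lin_l[OF psi_closed[OF ab(2)]]])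
  have inner: "m2 (tns (S x) (S y)) (psi b) = sw T (\<lambda>b1 b2. Fq x y b1 b2) b"
    if xy: "x \<in> carrier U" "y \<in> carrier U" for x y
  proof -
    have Sxy: "S x \<in> carrier U" "S y \<in> carrier U" using xy lin_closed[OF S_lin] by auto
    have "m2 (tns (S x) (S y)) (psi b) = tlift R U U T (\<lambda>(b1, b2). m2 (tns (S x) (S y)) (tns b1 b2)) (psi b)"
      by (rule tlift_expand_g[OF U_mod U_mod T_mod m2_lin_r[OF tns_closed[OF Sxy]] psi_closed[OF ab(2)]])
    also have "\<dots> = tlift R U U T (\<lambda>(b1, b2). Fq x y b1 b2) (psi b)"
      using xy ab Sxy by (intro tlift_cong_g[OF U_mod U_mod T_mod psi_closed])
        (auto simp: m2_tens Fq_def intro!: tns_closed sig_tns_closed)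
    finally show ?thesis unfolding sw_def .
  qed
  have "m2 (tmap R U U U U S S (psi a)) (psi b)
      = tlift R U U T (\<lambda>(a1, a2). m2 (tmap R U U U U S S (tns a1 a2)) (psi b)) (psi a)"
    by (rule tlift_expand_g[OF U_mod U_mod T_mod l psi_closed[OF ab(1)]])
  also have "\<dots> = tlift R U U T (\<lambda>(a1, a2). sw T (\<lambda>b1 b2. Fq a1 a2 b1 b2) b) (psi a)"
  proof (rule tlift_cong_g[OF U_mod U_mod T_mod psi_closed[OF ab(1)]])
    fix x y assume xy: "x \<in> carrier U" "y \<in> carrier U"
    show "(\<lambda>(a1, a2). m2 (tmap R U U U U S S (tns a1 a2)) (psi b)) (x, y) = (\<lambda>(a1, a2). sw T (\<lambda>b1 b2. Fq a1 a2 b1 b2) b) (x, y)"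
      using tm_tens[OF S_lin S_lin xy] inner[OF xy] by simp
    show "(\<lambda>(a1, a2). sw T (\<lambda>b1 b2. Fq a1 a2 b1 b2) b) (x, y) \<in> carrier T"
      using sw_closed[OF T_mod ab(2), of "Fq x y"] lin4_closed[OF Fq_lin4 xy] by simp
  qed
  finally show ?thesis unfolding sw_def .
qed

end


context setting
begin

lemma kII_lin: "linear_map R RR T (\<lambda>r. r \<odot>\<^bsub>T\<^esub> II)"
proof -
  interpret TM: module R T by (rule T_mod)
  show ?thesis unfolding linear_map_def
  proof (intro conjI ballI)
    show "(\<lambda>r. r \<odot>\<^bsub>T\<^esub> II) \<in> carrier RR \<rightarrow> carrier T"
      using II_closed by (auto simp: ring_as_module_def)
  next
    fix x y assume "x \<in> carrier RR" "y \<in> carrier RR"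
    then have "x \<in> carrier R" "y \<in> carrier R" by (simp_all add: ring_as_module_def)
    then show "(x \<oplus>\<^bsub>RR\<^esub> y) \<odot>\<^bsub>T\<^esub> II = x \<odot>\<^bsub>T\<^esub> II \<oplus>\<^bsub>T\<^esub> y \<odot>\<^bsub>T\<^esub> II"
      using TM.smult_l_distr[OF _ _ II_closed] by (simp add: ring_as_module_def)
  next
    fix a x assume "a \<in> carrier R" "x \<in> carrier RR"
    then have "a \<in> carrier R" "x \<in> carrier R" by (simp_all add: ring_as_module_def)
    then show "(a \<odot>\<^bsub>RR\<^esub> x) \<odot>\<^bsub>T\<^esub> II = a \<odot>\<^bsub>T\<^esub> (x \<odot>\<^bsub>T\<^esub> II)"
      using TM.smult_assoc1[OF _ _ II_closed] by (simp add: ring_as_module_def)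
  qed
qed

lemma tns_e_e: assumes "a \<in> carrier U" "b \<in> carrier U"
  shows "tns (e a) (e b) = (eps a \<otimes>\<^bsub>R\<^esub> eps b) \<odot>\<^bsub>T\<^esub> II"
proof -
  interpret TM: module R T by (rule T_mod)
  have o: "\<one>\<^bsub>R\<^esub> \<in> carrier R" using one_RR by (simp add: ring_as_module_def)
  have ea: "eps a \<in> carrier R" "eps b \<in> carrier R" using assms eps_closed by auto
  have e1: "eta \<one>\<^bsub>R\<^esub> \<in> carrier U" by (rule eta_closed[OF o])
  have eb: "eps b \<odot>\<^bsub>U\<^esub> eta \<one>\<^bsub>R\<^esub> \<in> carrier U" by (rule module.smult_closed[OF U_mod ea(2) e1])
  have "tns (e a) (e b) = tns (eps a \<odot>\<^bsub>U\<^esub> eta \<one>\<^bsub>R\<^esub>) (eps b \<odot>\<^bsub>U\<^esub> eta \<one>\<^bsub>R\<^esub>)"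
    unfolding e_def using eta_smult[OF ea(1)] eta_smult[OF ea(2)] by simp
  also have "\<dots> = eps a \<odot>\<^bsub>T\<^esub> tns (eta \<one>\<^bsub>R\<^esub>) (eps b \<odot>\<^bsub>U\<^esub> eta \<one>\<^bsub>R\<^esub>)"
    using lin_smult[OF tens_lin_l[OF U_mod U_mod eb] ea(1) e1] by simp
  also have "tns (eta \<one>\<^bsub>R\<^esub>) (eps b \<odot>\<^bsub>U\<^esub> eta \<one>\<^bsub>R\<^esub>) = eps b \<odot>\<^bsub>T\<^esub> II"
    using lin_smult[OF tens_lin_r[OF U_mod U_mod e1] ea(2) e1] by simp
  also have "eps a \<odot>\<^bsub>T\<^esub> (eps b \<odot>\<^bsub>T\<^esub> II) = (eps a \<otimes>\<^bsub>R\<^esub> eps b) \<odot>\<^bsub>T\<^esub> II"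
    using TM.smult_assoc1[OF ea II_closed] by simp
  finally show ?thesis .
qed

lemma star_SS: assumes u: "u \<in> carrier U"
  shows "sw T (\<lambda>a b. m2 (tmap R U U U U S S (psi a)) (psi b)) u = eps u \<odot>\<^bsub>T\<^esub> II"
proof -
  interpret R: cring R by (rule cr)
  have Sc: "\<And>x. x \<in> carrier U \<Longrightarrow> S x \<in> carrier U" using lin_closed[OF S_lin] .
  have swc: "\<And>h x. x \<in> carrier U \<Longrightarrow> (\<And>a b. a \<in> carrier U \<Longrightarrow> b \<in> carrier U \<Longrightarrow> h a b \<in> carrier T) \<Longrightarrow> sw T h x \<in> carrier T"
    by (rule sw_closed[OF T_mod])
  have "sw T (\<lambda>a b. m2 (tmap R U U U U S S (psi a)) (psi b)) u
      = sw T (\<lambda>a b. sw T (\<lambda>a1 a2. sw T (\<lambda>b1 b2. Fq a1 a2 b1 b2) b) a) u"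
  proof (rule sw_cong[OF T_mod u])
    fix a b assume ab: "a \<in> carrier U" "b \<in> carrier U"
    show "m2 (tmap R U U U U S S (psi a)) (psi b) = sw T (\<lambda>a1 a2. sw T (\<lambda>b1 b2. Fq a1 a2 b1 b2) b) a"
      by (rule m2_SS[OF ab])
    have "sw T (\<lambda>b1 b2. Fq a1 a2 b1 b2) b \<in> carrier T" if "a1 \<in> carrier U" "a2 \<in> carrier U" for a1 a2
      by (rule swc[OF ab(2)], rule lin4_closed[OF Fq_lin4]) (use that in auto)
    then show "sw T (\<lambda>a1 a2. sw T (\<lambda>b1 b2. Fq a1 a2 b1 b2) b) a \<in> carrier T"
      by (intro swc[OF ab(1)])
  qed
  also have "\<dots> = sw T (\<lambda>a b. sw T (\<lambda>a1 a2. sw T (\<lambda>b1 b2. Fq a1 b1 a2 b2) b) a) u"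
    by (rule sw_mid[OF T_mod Fq_lin4 u])
  also have "\<dots> = sw T (\<lambda>a b. tns (e a) (e b)) u"
  proof (rule sw_cong[OF T_mod u])
    fix a b assume ab: "a \<in> carrier U" "b \<in> carrier U"
    show "tns (e a) (e b) \<in> carrier T" using ab e_closed tns_closed by auto
    have inner: "sw T (\<lambda>b1 b2. Fq a1 b1 a2 b2) b = tns (sigma (tns (S a1) a2)) (e b)"
      if aa: "a1 \<in> carrier U" "a2 \<in> carrier U" for a1 a2
    proof -
      have A: "sigma (tns (S a1) a2) \<in> carrier U" using aa Sc sig_tns_closed by auto
      have "sw T (\<lambda>b1 b2. Fq a1 b1 a2 b2) b = sw T (\<lambda>b1 b2. tns (sigma (tns (S a1) a2)) (sigma (tns (S b1) b2))) b"
        unfolding Fq_def ..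
      also have "\<dots> = tns (sigma (tns (S a1) a2)) (sw U (\<lambda>b1 b2. sigma (tns (S b1) b2)) b)"
        by (rule sw_hom[symmetric, OF U_mod T_mod tens_lin_r[OF U_mod U_mod A] ab(2)])
           (rule sig_tns_closed[OF Sc])
      also have "\<dots> = tns (sigma (tns (S a1) a2)) (e b)"
        using conv_sw[OF S_lin lin_id[OF U_mod] ab(2)] left_inv[OF ab(2)] by simp
      finally show ?thesis .
    qed
    have "sw T (\<lambda>a1 a2. sw T (\<lambda>b1 b2. Fq a1 b1 a2 b2) b) a = sw T (\<lambda>a1 a2. tns (sigma (tns (S a1) a2)) (e b)) a"
    proof (rule sw_cong[OF T_mod ab(1)])
      fix a1 a2 assume aa: "a1 \<in> carrier U" "a2 \<in> carrier U"
      show "sw T (\<lambda>b1 b2. Fq a1 b1 a2 b2) b = tns (sigma (tns (S a1) a2)) (e b)" by (rule inner[OF aa])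
      show "tns (sigma (tns (S a1) a2)) (e b) \<in> carrier T"
        by (rule tns_closed[OF sig_tns_closed[OF Sc[OF aa(1)] aa(2)] e_closed[OF ab(2)]])
    qed
    also have "\<dots> = tns (sw U (\<lambda>a1 a2. sigma (tns (S a1) a2)) a) (e b)"
      by (rule sw_hom[symmetric, OF U_mod T_mod tens_lin_l[OF U_mod U_mod e_closed[OF ab(2)]] ab(1)])
         (rule sig_tns_closed[OF Sc])
    also have "\<dots> = tns (e a) (e b)"
      using conv_sw[OF S_lin lin_id[OF U_mod] ab(1)] left_inv[OF ab(1)] by simp
    finally show "sw T (\<lambda>a1 a2. sw T (\<lambda>b1 b2. Fq a1 b1 a2 b2) b) a = tns (e a) (e b)" .
  qed
  also have "\<dots> = sw T (\<lambda>a b. (eps a \<otimes>\<^bsub>R\<^esub> eps b) \<odot>\<^bsub>T\<^esub> II) u"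
  proof (rule sw_cong[OF T_mod u])
    fix a b assume ab: "a \<in> carrier U" "b \<in> carrier U"
    show "tns (e a) (e b) = (eps a \<otimes>\<^bsub>R\<^esub> eps b) \<odot>\<^bsub>T\<^esub> II" by (rule tns_e_e[OF ab])
    show "(eps a \<otimes>\<^bsub>R\<^esub> eps b) \<odot>\<^bsub>T\<^esub> II \<in> carrier T"
      by (rule module.smult_closed[OF T_mod R.m_closed[OF eps_closed[OF ab(1)] eps_closed[OF ab(2)]] II_closed])
  qed
  also have "\<dots> = (sw RR (\<lambda>a b. eps a \<otimes>\<^bsub>R\<^esub> eps b) u) \<odot>\<^bsub>T\<^esub> II"
    by (rule sw_hom[symmetric, OF RR_mod T_mod kII_lin u])
       (simp add: ring_as_module_def R.m_closed[OF eps_closed eps_closed])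
  also have "sw RR (\<lambda>a b. eps a \<otimes>\<^bsub>R\<^esub> eps b) u = sw RR (\<lambda>a b. eps (eps a \<odot>\<^bsub>U\<^esub> b)) u"
  proof (rule sw_cong[OF RR_mod u])
    fix a b assume ab: "a \<in> carrier U" "b \<in> carrier U"
    show "eps a \<otimes>\<^bsub>R\<^esub> eps b = eps (eps a \<odot>\<^bsub>U\<^esub> b)" by (rule eps_smult[OF eps_closed[OF ab(1)] ab(2), symmetric])
    show "eps (eps a \<odot>\<^bsub>U\<^esub> b) \<in> carrier RR"
      using eps_closed[OF module.smult_closed[OF U_mod eps_closed[OF ab(1)] ab(2)]] by (simp add: ring_as_module_def)
  qed
  also have "\<dots> = eps (sw U (\<lambda>a b. eps a \<odot>\<^bsub>U\<^esub> b) u)"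
    by (rule sw_hom[symmetric, OF U_mod RR_mod eps_lin u]) (rule module.smult_closed[OF U_mod eps_closed])
  also have "\<dots> = eps u" using sw_counit_l[OF u] by simp
  finally show ?thesis .
qed

lemma psi_S: assumes u: "u \<in> carrier U" shows "psi (S u) = tmap R U U U U S S (psi u)"
  using uniq[OF lin_comp[OF S_lin psi_lin] lin_comp[OF psi_lin tm_lin[OF S_lin S_lin]] _ u]
    star_psiS star_SS by simp

theorem group: "coalg_ab_group R U eps psi sigma eta"
  unfolding coalg_ab_group_def
proof (intro conjI exI[of _ S])
  show "coalg_ab_monoid R U eps psi sigma eta" by (rule mon)
  show "coalg_map R U eps psi U eps psi S"
    unfolding coalg_map_def using S_lin eps_S psi_S by blast
  show "\<forall>u\<in>carrier U. sigma (tmap R U U U U (\<lambda>x. x) S (psi u)) = eta (eps u)"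
    using right_inv unfolding conv_def e_def by blast
  show "\<forall>u\<in>carrier U. sigma (tmap R U U U U S (\<lambda>x. x) (psi u)) = eta (eps u)"
    using left_inv unfolding conv_def e_def by blast
qed

end

theorem proposition6p12:
  fixes R :: "'r ring" and U :: "('r, 'u) module"
    and eps :: "'u \<Rightarrow> 'r" and psi :: "'u \<Rightarrow> ('u \<times> 'u \<Rightarrow> 'r) set"
    and sigma :: "('u \<times> 'u \<Rightarrow> 'r) set \<Rightarrow> 'u" and eta :: "'r \<Rightarrow> 'u"
    and F :: "nat \<Rightarrow> 'u set"
  assumes "cring R"
    and "coalg_ab_monoid R U eps psi sigma eta"
    and "good_filtration R U eps psi F"
    and "good_basepoint R eps F eta"
    and "\<forall>s t. sigma ` tspan R U U {(a, b). a \<in> F s \<and> b \<in> F t} \<subseteq> F (s + t)"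
  shows "coalg_ab_group R U eps psi sigma eta"
proof -
  interpret setting R U eps psi sigma eta F
    by (rule setting.intro) (fact assms)+
  show ?thesis by (rule group)
qed

end
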